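(* Let $G$ be a triangular graph and run the procedure described in the context on $G$, starting with two vertices of the outer triangle as the distinguished vertices $v_1,v_2$ (clockwise consecutive, with the edge $v_1v_2$ given some orientation). Let $L$ be the constructed orientation restricted to the interior edges of $G$ (an internal $3$-orientation) and let $(T_r,T_g,T_b)$ be the realizer of $G$ corresponding to $L$. Then the set of edges that received strength $2$ is exactly one of the sets $T_r$, $T_g$, $T_b$ (with orientations ignored).
   Context: A triangular graph is a plane graph with at least 3 vertices all of whose faces, including the outer one, are triangles; interior vertices/edges are those not on the outer triangle. An internal 3-orientation is an orientation of the interior edges in which every interior vertex has in-degree exactly 3. A realizer of $G$ is a triple $(T_r,T_g,T_b)$ of sets of oriented edges which, ignoring orientations, partition the interior edges of $G$, such that every interior vertex $v$ has in-degree exactly one in each of $T_r,T_g,T_b$, and the counterclockwise order of edges around $v$ is: incoming edge of $T_r$, outgoing edges of $T_b$, incoming edge of $T_g$, outgoing edges of $T_r$, incoming edge of $T_b$, outgoing edges of $T_g$. Every internal 3-orientation is the orientation induced by exactly one realizer (its corresponding realizer). A near triangulation is a 2-connected plane graph whose outer face is bounded by a cycle (the outer cycle) and whose inner faces are triangles. The procedure: its input is a near triangulation $H$ with distinguished vertices $v_1,v_2$, $v_2$ immediately following $v_1$ clockwise on the outer cycle; edge $v_1v_2$ is already oriented, other edges are not. It orients every edge and gives it strength 1 or 2. (Recursive step) If the outer cycle has a chord $v_av_b$, it splits the outer cycle into cycles $C_1$ (containing $v_1,v_2$) and $C_2$; let $H_1,H_2$ be the subgraphs formed by $C_1,C_2$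 with their interiors. Run the procedure first on $H_1$ with distinguished vertices $v_1,v_2$, then on $H_2$ with the chord endpoints as distinguished vertices, ordered so that the second immediately follows the first clockwise on the outer cycle of $H_2$. (Orienting step) If the outer cycle has no chord, let $v_3$ be the vertex immediately following $v_2$ clockwise on the outer cycle. Edges of the current graph incident to $v_3$ lying on the outer cycle are oriented towards $v_3$ with strength 1; all other edges of the current graph incident to $v_3$ are oriented away from $v_3$ with strength 2. Then $v_3$ is deleted, and if vertices other than $v_1,v_2$ remain, the procedure is called recursively on the remaining graph with the same $v_1,v_2$. *)

theory Defs
  imports Main
begin

text \<open>A plane graph is given by a finite vertex set V, a symmetric irreflexive
  adjacency relation E, and a rotation system rot: for each vertex v,
  rot v u is the neighbour of v that follows u in COUNTERCLOCKWISE order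
  around v.  The face to the right of the dart (u,v) continues with the dart
  (v, rot v u); inner faces are traversed clockwise, the outer face
  counterclockwise.\<close>

definition nbrs :: "('v \<Rightarrow> 'v \<Rightarrow> bool) \<Rightarrow> 'v \<Rightarrow> 'v set" where
  "nbrs E v = {u. E v u}"

definition deg :: "('v \<Rightarrow> 'v \<Rightarrow> bool) \<Rightarrow> 'v \<Rightarrow> nat" where
  "deg E v = card (nbrs E v)"

definition ccw_list :: "('v \<Rightarrow> 'v \<Rightarrow> bool) \<Rightarrow> ('v \<Rightarrow> 'v \<Rightarrow> 'v) \<Rightarrow> 'v \<Rightarrow> 'v \<Rightarrow> 'v list" where
  "ccw_list E rot v u = map (\<lambda>i. (rot v ^^ i) u) [0..<deg E v]"

definition undirected_edges :: "('v \<Rightarrow> 'v \<Rightarrow> bool) \<Rightarrow> 'v set set" where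
  "undirected_edges E = {{u, v} | u v. E u v}"

definition rotation_system :: "'v set \<Rightarrow> ('v \<Rightarrow> 'v \<Rightarrow> bool) \<Rightarrow> ('v \<Rightarrow> 'v \<Rightarrow> 'v) \<Rightarrow> bool" where
  "rotation_system V E rot \<longleftrightarrow>
     (\<forall>v\<in>V. bij_betw (rot v) (nbrs E v) (nbrs E v) \<and>
             (\<forall>u\<in>nbrs E v. nbrs E v = range (\<lambda>i. (rot v ^^ i) u)))"

text \<open>Triangular graph: a simple connected graph on at least 3 vertices with a
  rotation system all of whose faces are triangles and which satisfies
  Euler's formula for the sphere (for triangulated surfaces: |E| = 3|V| - 6).
  Such rotation systems are exactly the plane triangulations (up to the
  choice of the outer face, which is fixed separately).\<close>
definition triangular_graph :: "'v set \<Rightarrow> ('v \<Rightarrow> 'v \<Rightarrow> bool) \<Rightarrow> ('v \<Rightarrow> 'v \<Rightarrow> 'v) \<Rightarrow> bool" where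
  "triangular_graph V E rot \<longleftrightarrow>
     finite V \<and> card V \<ge> 3 \<and>
     (\<forall>u v. E u v \<longrightarrow> u \<in> V \<and> v \<in> V) \<and>
     (\<forall>u v. E u v \<longrightarrow> E v u) \<and> (\<forall>u. \<not> E u u) \<and>
     (\<forall>u\<in>V. \<forall>v\<in>V. E\<^sup>*\<^sup>* u v) \<and>
     rotation_system V E rot \<and>
     (\<forall>u v. E u v \<longrightarrow> (let w = rot v u in rot w v = u \<and> rot u w = v)) \<and>
     card (undirected_edges E) = 3 * card V - 6"

text \<open>(o1,o2,o3) is the outer face, with o1, o2, o3 in CLOCKWISE order along the
  outer cycle (i.e. the right face of the dart (o1,o3) is the outer face).\<close>
definition outer_face_cw :: "('v \<Rightarrow> 'v \<Rightarrow> bool) \<Rightarrow> ('v \<Rightarrow> 'v \<Rightarrow> 'v) \<Rightarrow> 'v \<Rightarrow> 'v \<Rightarrow> 'v \<Rightarrow> bool" where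
  "outer_face_cw E rot o1 o2 o3 \<longleftrightarrow>
     E o1 o2 \<and> E o2 o3 \<and> E o3 o1 \<and>
     rot o3 o1 = o2 \<and> rot o2 o3 = o1 \<and> rot o1 o2 = o3"

definition interior_edge :: "('v \<Rightarrow> 'v \<Rightarrow> bool) \<Rightarrow> 'v \<Rightarrow> 'v \<Rightarrow> 'v \<Rightarrow> 'v \<Rightarrow> 'v \<Rightarrow> bool" where
  "interior_edge E o1 o2 o3 u v \<longleftrightarrow> E u v \<and> \<not> {u, v} \<subseteq> {o1, o2, o3}"

definition realizer ::
  "'v set \<Rightarrow> ('v \<Rightarrow> 'v \<Rightarrow> bool) \<Rightarrow> ('v \<Rightarrow> 'v \<Rightarrow> 'v) \<Rightarrow> 'v \<Rightarrow> 'v \<Rightarrow> 'v \<Rightarrow>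
   ('v \<times> 'v) set \<Rightarrow> ('v \<times> 'v) set \<Rightarrow> ('v \<times> 'v) set \<Rightarrow> bool" where
  "realizer V E rot o1 o2 o3 Tr Tg Tb \<longleftrightarrow>
     (\<forall>(u, v) \<in> Tr \<union> Tg \<union> Tb. interior_edge E o1 o2 o3 u v) \<and>
     (\<forall>u v. interior_edge E o1 o2 o3 u v \<longrightarrow>
        length (filter id [(u,v) \<in> Tr, (v,u) \<in> Tr, (u,v) \<in> Tg, (v,u) \<in> Tg,
                           (u,v) \<in> Tb, (v,u) \<in> Tb]) = 1) \<and>
     (\<forall>v \<in> V - {o1, o2, o3}.
        card {u. (u, v) \<in> Tr} = 1 \<and> card {u. (u, v) \<in> Tg} = 1 \<and> card {u. (u, v) \<in> Tb} = 1 \<and>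
        (\<exists>r g b Bs Rs Gs.
           (r, v) \<in> Tr \<and> (g, v) \<in> Tg \<and> (b, v) \<in> Tb \<and>
           (\<forall>x \<in> set Bs. (v, x) \<in> Tb) \<and> (\<forall>x \<in> set Rs. (v, x) \<in> Tr) \<and>
           (\<forall>x \<in> set Gs. (v, x) \<in> Tg) \<and>
           ccw_list E rot v r = r # Bs @ g # Rs @ b # Gs))"

text \<open>The current near triangulation H is represented by its vertex set S (it is
  the subgraph of G induced by S) together with its outer cycle C, listed in
  CLOCKWISE order starting with the distinguished vertices v1, v2.
  The result R is a set of triples (x, y, k): the edge xy is oriented from x
  to y and has strength k.  R covers all edges of H except v1v2 (which is
  already oriented when the procedure is called).\<close>

definition has_chord :: "('v \<Rightarrow> 'v \<Rightarrow> bool) \<Rightarrow> 'v list \<Rightarrow> bool" where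
  "has_chord E C \<longleftrightarrow>
     (\<exists>i j. Suc i < j \<and> j < length C \<and> \<not> (i = 0 \<and> j = length C - 1) \<and> E (C ! i) (C ! j))"

definition next_after_v3 :: "'v list \<Rightarrow> 'v" where
  "next_after_v3 C = (if drop 3 C = [] then C ! 0 else C ! 3)"

definition orient_labels :: "('v \<Rightarrow> 'v \<Rightarrow> bool) \<Rightarrow> 'v set \<Rightarrow> 'v list \<Rightarrow> ('v \<times> 'v \<times> nat) set" where
  "orient_labels E S C =
     {(u, C ! 2, 1) | u. u \<in> S \<and> E (C ! 2) u \<and> (u = C ! 1 \<or> u = next_after_v3 C)} \<union>
     {(C ! 2, u, 2) | u. u \<in> S \<and> E (C ! 2) u \<and> u \<noteq> C ! 1 \<and> u \<noteq> next_after_v3 C}"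

text \<open>Outer cycle after deleting v3 = C!2: the path v2 v3 c replaced by v2, the
  inner neighbours of v3 (counterclockwise around v3 from v2), c.\<close>
definition cycle_after_delete :: "('v \<Rightarrow> 'v \<Rightarrow> bool) \<Rightarrow> ('v \<Rightarrow> 'v \<Rightarrow> 'v) \<Rightarrow> 'v list \<Rightarrow> 'v list" where
  "cycle_after_delete E rot C =
     C ! 0 # C ! 1 #
     takeWhile (\<lambda>w. w \<noteq> next_after_v3 C) (tl (ccw_list E rot (C ! 2) (C ! 1))) @ drop 3 C"

inductive proc :: "('v \<Rightarrow> 'v \<Rightarrow> bool) \<Rightarrow> ('v \<Rightarrow> 'v \<Rightarrow> 'v) \<Rightarrow> 'v set \<Rightarrow> 'v list \<Rightarrow> ('v \<times> 'v \<times> nat) set \<Rightarrow> bool"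
  for E rot where
  split:
  "\<lbrakk> Suc i < j; j < length C; \<not> (i = 0 \<and> j = length C - 1); E (C ! i) (C ! j);
     C1 = (if i = 0 then take (Suc j) C else take (Suc i) C @ drop j C);
     C2 = (if i = 0 then C ! 0 # drop j C else C ! j # take (j - i) (drop i C));
     S1 \<union> S2 = S; S1 \<inter> S2 = {C ! i, C ! j}; set C1 \<subseteq> S1; set C2 \<subseteq> S2;
     \<forall>x \<in> S1 - {C ! i, C ! j}. \<forall>y \<in> S2 - {C ! i, C ! j}. \<not> E x y;
     proc E rot S1 C1 R1; proc E rot S2 C2 R2 \<rbrakk>
   \<Longrightarrow> proc E rot S C (R1 \<union> R2)"
| orient_stop:
  "\<lbrakk> length C \<ge> 3; \<not> has_chord E C; S - {C ! 2} = {C ! 0, C ! 1} \<rbrakk>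
   \<Longrightarrow> proc E rot S C (orient_labels E S C)"
| orient_rec:
  "\<lbrakk> length C \<ge> 3; \<not> has_chord E C; S - {C ! 2} \<noteq> {C ! 0, C ! 1};
     proc E rot (S - {C ! 2}) (cycle_after_delete E rot C) R' \<rbrakk>
   \<Longrightarrow> proc E rot S C (orient_labels E S C \<union> R')"

end

theory Submission
  imports Defs
begin


lemma orbit_facts:
  assumes fin: "finite N" and bij: "bij_betw f N N" and a: "a \<in> N"
    and orb: "N = range (\<lambda>i. (f ^^ i) a)"
  shows "inj_on (\<lambda>i. (f ^^ i) a) {0..<card N}" and "(f ^^ card N) a = a"
proof -
  have inN: "(f ^^ i) a \<in> N" for i
    by (induction i) (use a bij in \<open>auto simp: bij_betw_def\<close>)
  have injf: "inj_on f N" using bij by (auto simp: bij_betw_def)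
  have bji: "bij_betw (f ^^ i) N N" for i
  proof (induction i)
    case 0 thus ?case by (simp add: bij_betw_id[unfolded id_def])
  next
    case (Suc i)
    have "f ^^ Suc i = (f ^^ i) \<circ> f" by (rule funpow_Suc_right)
    thus ?case using bij_betw_trans[OF bij Suc] by metis
  qed
  have injfi: "inj_on (f ^^ i) N" for i using bji[of i] by (simp add: bij_betw_def)
  have per: "(f ^^ (j - i)) a = a" if "i \<le> j" "(f ^^ i) a = (f ^^ j) a" for i j
  proof -
    have "(f ^^ i) ((f ^^ (j - i)) a) = (f ^^ i) a"
      using that by (metis funpow_add le_add_diff_inverse o_apply)
    thus ?thesis using injfi[of i] inN[of "j-i"] a by (auto dest: inj_onD)
  qed
  have small: "N \<subseteq> (\<lambda>i. (f ^^ i) a) ` {0..<m}" if "m > 0" "(f ^^ m) a = a" for m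
  proof
    fix x assume "x \<in> N"
    then obtain i where x: "x = (f ^^ i) a" using orb by auto
    have "(f ^^ i) a = (f ^^ (i mod m)) a"
    proof -
      have "(f ^^ (m * q)) a = a" for q
        by (induction q) (use that in \<open>auto simp: funpow_add\<close>)
      hence "(f ^^ (i mod m)) ((f ^^ (m * (i div m))) a) = (f ^^ (i mod m)) a" by simp
      moreover have "(f ^^ i) a = (f ^^ (i mod m)) ((f ^^ (m * (i div m))) a)"
        by (metis funpow_add o_apply mod_mult_div_eq)
      ultimately show ?thesis by simp
    qed
    thus "x \<in> (\<lambda>i. (f ^^ i) a) ` {0..<m}" using x that by auto
  qed
  show inj: "inj_on (\<lambda>i. (f ^^ i) a) {0..<card N}"
  proof (rule inj_onI, rule ccontr)
    fix i j assume i: "i \<in> {0..<card N}" and j: "j \<in> {0..<card N}" and eq: "(f ^^ i) a = (f ^^ j) a" and ne: "i \<noteq> j"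
    { fix i j assume "i < j" "j < card N" "(f ^^ i) a = (f ^^ j) a"
      hence p: "(f ^^ (j - i)) a = a" using per by auto
      have "N \<subseteq> (\<lambda>i. (f ^^ i) a) ` {0..<j - i}" using small[OF _ p] \<open>i<j\<close> by auto
      hence "card N \<le> card ((\<lambda>i. (f ^^ i) a) ` {0..<j - i})" using card_mono by blast
      also have "\<dots> \<le> j - i" using card_image_le[of "{0..<j-i}"] by auto
      finally have False using \<open>j < card N\<close> by auto }
    thus False using i j eq ne by (cases "i < j") (auto, metis linorder_neqE_nat)
  qed
  have "(f ^^ card N) a \<in> N" by (rule inN)
  moreover have "N = (\<lambda>i. (f ^^ i) a) ` {0..<card N}"
  proof -
    have "(\<lambda>i. (f ^^ i) a) ` {0..<card N} \<subseteq> N" using inN by auto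
    moreover have "card ((\<lambda>i. (f ^^ i) a) ` {0..<card N}) = card N" using card_image[OF inj] by simp
    ultimately show ?thesis using fin by (metis card_subset_eq)
  qed
  ultimately obtain i where i: "i < card N" "(f ^^ card N) a = (f ^^ i) a"
    by (metis (no_types, lifting) atLeastLessThan_iff imageE)
  have "(f ^^ (card N - i)) a = a" using per[of i "card N"] i by auto
  show "(f ^^ card N) a = a"
  proof (cases "i = 0")
    case True thus ?thesis using i by simp
  next
    case False
    hence "card N - i \<in> {0..<card N}" "0 \<in> {0..<card N}" using i by auto
    with inj_onD[OF inj _ this] \<open>(f ^^ (card N - i)) a = a\<close> False i show ?thesis by auto
  qed
qed

locale tg =
  fixes V :: "'v set" and E :: "'v \<Rightarrow> 'v \<Rightarrow> bool" and rot :: "'v \<Rightarrow> 'v \<Rightarrow> 'v"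
  assumes tg: "triangular_graph V E rot"
begin

abbreviation cl where "cl \<equiv> ccw_list E rot"

lemma finV: "finite V" using tg by (simp add: triangular_graph_def)
lemma EV: "E u v \<Longrightarrow> u \<in> V \<and> v \<in> V" using tg by (simp add: triangular_graph_def)
lemma Esym: "E u v \<Longrightarrow> E v u" using tg by (simp add: triangular_graph_def)
lemma Eirr: "\<not> E u u" using tg by (simp add: triangular_graph_def)
lemma Ene: "E u v \<Longrightarrow> u \<noteq> v" using Eirr by auto
lemma rs: "rotation_system V E rot" using tg by (simp add: triangular_graph_def)
lemma tri: "E u v \<Longrightarrow> rot (rot v u) v = u \<and> rot u (rot v u) = v"
  using tg by (simp add: triangular_graph_def Let_def)

lemma fin_nbrs: "finite (nbrs E x)"
proof -
  have "nbrs E x \<subseteq> V" using EV by (auto simp: nbrs_def)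
  thus ?thesis using finV finite_subset by blast
qed

lemma rot_nbr: "E x y \<Longrightarrow> E x (rot x y)"
proof -
  assume "E x y"
  hence "x \<in> V" using EV by auto
  hence "bij_betw (rot x) (nbrs E x) (nbrs E x)" using rs by (auto simp: rotation_system_def)
  thus ?thesis using \<open>E x y\<close> by (auto simp: nbrs_def bij_betw_def)
qed

lemma tri_edge: "E x y \<Longrightarrow> E y (rot x y)"
proof -
  assume a: "E x y"
  have "E x (rot x y)" using rot_nbr a by blast
  hence "E (rot x y) (rot (rot x y) x)" using rot_nbr Esym by blast
  moreover have "rot (rot x y) x = y" using tri[OF Esym[OF a]] by simp
  ultimately show ?thesis using Esym by auto
qed

lemma orbit:
  assumes "E x a"
  shows "inj_on (\<lambda>i. (rot x ^^ i) a) {0..<deg E x}" "(rot x ^^ deg E x) a = a"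
proof -
  have xV: "x \<in> V" using EV assms by auto
  have "bij_betw (rot x) (nbrs E x) (nbrs E x)" "nbrs E x = range (\<lambda>i. (rot x ^^ i) a)"
    using rs xV assms by (auto simp: rotation_system_def nbrs_def)
  from orbit_facts[OF fin_nbrs this(1) _ this(2)] assms
  show "inj_on (\<lambda>i. (rot x ^^ i) a) {0..<deg E x}" "(rot x ^^ deg E x) a = a"
    by (auto simp: deg_def nbrs_def)
qed

lemma pow_nbr: "E x a \<Longrightarrow> E x ((rot x ^^ i) a)"
  by (induction i) (auto intro: rot_nbr)

lemma cl_length[simp]: "length (cl x a) = deg E x" by (simp add: ccw_list_def)
lemma cl_nth: "i < deg E x \<Longrightarrow> cl x a ! i = (rot x ^^ i) a" by (simp add: ccw_list_def)

lemma cl_distinct: "E x a \<Longrightarrow> distinct (cl x a)"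
  using orbit(1) by (simp add: ccw_list_def distinct_map)

lemma deg_pos: "E x a \<Longrightarrow> deg E x > 0"
proof -
  assume "E x a"
  hence "a \<in> nbrs E x" by (simp add: nbrs_def)
  thus ?thesis using fin_nbrs by (auto simp: deg_def card_gt_0_iff)
qed

lemma cl_set: "E x a \<Longrightarrow> set (cl x a) = nbrs E x"
proof -
  assume a: "E x a"
  have "set (cl x a) \<subseteq> nbrs E x" using pow_nbr[OF a] by (auto simp: ccw_list_def nbrs_def)
  moreover have "card (set (cl x a)) = deg E x" using distinct_card[OF cl_distinct[OF a]] by simp
  ultimately show ?thesis using fin_nbrs by (simp add: card_subset_eq deg_def)
qed

lemma cl_mem: "E x a \<Longrightarrow> y \<in> set (cl x a) \<longleftrightarrow> E x y"
  using cl_set by (auto simp: nbrs_def)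

lemma cl_hd: "E x a \<Longrightarrow> cl x a = a # tl (cl x a)"
proof -
  assume a: "E x a"
  have "deg E x > 0" using deg_pos[OF a] .
  thus ?thesis by (cases "deg E x") (auto simp: ccw_list_def upt_conv_Cons map_Suc_upt[symmetric] simp del: upt_Suc)
qed

lemma cl_rotate:
  assumes a: "E x a" and k: "k < deg E x"
  shows "cl x (cl x a ! k) = rotate k (cl x a)"
proof (rule nth_equalityI)
  show "length (cl x (cl x a ! k)) = length (rotate k (cl x a))" by simp
  fix i assume i: "i < length (cl x (cl x a ! k))"
  hence i': "i < deg E x" by simp
  have "rotate k (cl x a) ! i = cl x a ! ((k + i) mod deg E x)"
    using i' by (simp add: nth_rotate add.commute)
  also have "\<dots> = (rot x ^^ ((k + i) mod deg E x)) a" using i' deg_pos[OF a] by (simp add: cl_nth)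
  also have "\<dots> = (rot x ^^ (k + i)) a"
  proof -
    let ?d = "deg E x"
    have "(rot x ^^ (?d * q)) a = a" for q
      by (induction q) (use orbit(2)[OF a] in \<open>auto simp: funpow_add\<close>)
    hence "(rot x ^^ ((k+i) mod ?d)) ((rot x ^^ (?d * ((k+i) div ?d))) a) = (rot x ^^ ((k+i) mod ?d)) a"
      by simp
    moreover have "(rot x ^^ (k+i)) a = (rot x ^^ ((k+i) mod ?d)) ((rot x ^^ (?d * ((k+i) div ?d))) a)"
      by (metis funpow_add o_apply mod_mult_div_eq)
    ultimately show ?thesis by simp
  qed
  also have "\<dots> = (rot x ^^ i) ((rot x ^^ k) a)" by (simp add: funpow_add add.commute)
  finally show "cl x (cl x a ! k) ! i = rotate k (cl x a) ! i"
    using i' k by (simp add: cl_nth)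
qed

lemma cl_rot_split:
  assumes a: "E x a" and eq: "cl x a = P @ c # Q"
  shows "cl x c = c # Q @ P"
proof -
  have k: "length P < deg E x" using eq by (metis cl_length length_append less_add_Suc1 length_Cons add_Suc_right)
  have "cl x a ! length P = c" using eq by simp
  hence "cl x c = rotate (length P) (cl x a)" using cl_rotate[OF a k] by simp
  also have "\<dots> = c # Q @ P" using eq by (simp add: rotate_drop_take)
  finally show ?thesis .
qed

lemma cl_consec:
  assumes a: "E x a" and eq: "cl x a = P @ y # z # Q"
  shows "z = rot x y"
proof -
  let ?k = "length P"
  have k: "Suc ?k < deg E x" using eq by (metis cl_length length_append length_Cons add_Suc_right less_add_Suc1 add_Suc less_add_Suc2 Suc_less_eq)
  have "cl x a ! ?k = y" "cl x a ! Suc ?k = z" using eq by (auto simp: nth_append)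
  thus ?thesis using k cl_nth[of ?k x a] cl_nth[of "Suc ?k" x a] by simp
qed

lemma cl_last:
  assumes a: "E x a"
  shows "rot x (last (cl x a)) = a"
proof -
  have d: "deg E x > 0" using deg_pos[OF a] .
  have "cl x a \<noteq> []" using d by (metis cl_length length_0_conv less_not_refl)
  hence "last (cl x a) = cl x a ! (deg E x - 1)" by (simp add: last_conv_nth)
  also have "\<dots> = (rot x ^^ (deg E x - 1)) a" using d by (simp add: cl_nth)
  finally have "rot x (last (cl x a)) = (rot x ^^ Suc (deg E x - 1)) a" by simp
  thus ?thesis using d orbit(2)[OF a] by simp
qed

end


definition pp :: "'a list \<Rightarrow> ('a \<times> 'a) set" where
  "pp xs = set (zip xs (tl xs))"

definition cp :: "'a list \<Rightarrow> ('a \<times> 'a) set" where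
  "cp C = pp (C @ [hd C])"

lemma pp_Nil[simp]: "pp [] = {}" and pp_single[simp]: "pp [x] = {}"
  and pp_Cons2[simp]: "pp (x # y # zs) = insert (x, y) (pp (y # zs))"
  by (auto simp: pp_def)

lemma pp_append: "pp (xs @ y # ys) = pp (xs @ [y]) \<union> pp (y # ys)"
proof (induction xs)
  case Nil thus ?case by simp
next
  case (Cons a xs) thus ?case by (cases xs) auto
qed

lemma pp_iff: "(a, b) \<in> pp xs \<longleftrightarrow> (\<exists>k. Suc k < length xs \<and> xs ! k = a \<and> xs ! Suc k = b)"
proof (induction xs rule: induct_list012)
  case (3 x y zs)
  show ?case
  proof
    assume "(a, b) \<in> pp (x # y # zs)"
    then consider "a = x" "b = y" | "(a, b) \<in> pp (y # zs)" by auto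
    thus "\<exists>k. Suc k < length (x # y # zs) \<and> (x # y # zs) ! k = a \<and> (x # y # zs) ! Suc k = b"
    proof cases
      case 1 thus ?thesis by (intro exI[of _ 0]) auto
    next
      case 2 then obtain k where "Suc k < length (y # zs)" "(y # zs) ! k = a" "(y # zs) ! Suc k = b"
        using 3 by auto
      thus ?thesis by (intro exI[of _ "Suc k"]) auto
    qed
  next
    assume "\<exists>k. Suc k < length (x # y # zs) \<and> (x # y # zs) ! k = a \<and> (x # y # zs) ! Suc k = b"
    then obtain k where k: "Suc k < length (x # y # zs)" "(x # y # zs) ! k = a" "(x # y # zs) ! Suc k = b" by blast
    show "(a, b) \<in> pp (x # y # zs)"
    proof (cases k)
      case 0 thus ?thesis using k by auto
    next
      case (Suc k') thus ?thesis using k 3 by auto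
    qed
  qed
qed auto

lemma pp_mem: "(a, b) \<in> pp xs \<Longrightarrow> a \<in> set xs \<and> b \<in> set xs"
  by (auto simp: pp_iff)

lemma pp_snd_not_hd: "distinct xs \<Longrightarrow> (a, b) \<in> pp xs \<Longrightarrow> b \<noteq> hd xs"
proof
  assume d: "distinct xs" and "(a, b) \<in> pp xs" and h: "b = hd xs"
  then obtain k where k: "Suc k < length xs" "xs ! Suc k = b" by (auto simp: pp_iff)
  hence "xs ! Suc k = xs ! 0" using h by (metis hd_conv_nth list.size(3) not_less_zero)
  thus False using d k nth_eq_iff_index_eq[OF d, of "Suc k" 0] by force
qed

lemma pp_fst_not_last: "distinct xs \<Longrightarrow> (a, b) \<in> pp xs \<Longrightarrow> a \<noteq> last xs"
proof
  assume d: "distinct xs" and "(a, b) \<in> pp xs" and h: "a = last xs"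
  then obtain k where k: "Suc k < length xs" "xs ! k = a" by (auto simp: pp_iff)
  hence "xs ! k = xs ! (length xs - 1)" using h by (metis last_conv_nth list.size(3) not_less_zero)
  thus False using d k nth_eq_iff_index_eq[OF d, of k "length xs - 1"] by force
qed

lemma pp_fun1: "distinct xs \<Longrightarrow> (a, b) \<in> pp xs \<Longrightarrow> (a', b) \<in> pp xs \<Longrightarrow> a = a'"
  by (auto simp: pp_iff nth_eq_iff_index_eq)

lemma pp_fun2: "distinct xs \<Longrightarrow> (a, b) \<in> pp xs \<Longrightarrow> (a, b') \<in> pp xs \<Longrightarrow> b = b'"
  by (auto simp: pp_iff nth_eq_iff_index_eq)

lemma cp_iff:
  assumes "C \<noteq> []"
  shows "(a, b) \<in> cp C \<longleftrightarrow> (\<exists>k < length C. a = C ! k \<and> b = C ! (Suc k mod length C))"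
proof -
  have h1: "(C @ [hd C]) ! Suc k = C ! (Suc k mod length C)" if "k < length C" for k
    using that assms by (cases "Suc k = length C") (auto simp: nth_append hd_conv_nth)
  have h2: "(C @ [hd C]) ! k = C ! k" if "k < length C" for k using that by (simp add: nth_append)
  show ?thesis
  proof
    assume "(a, b) \<in> cp C"
    then obtain k where k: "Suc k < length (C @ [hd C])" "(C @ [hd C]) ! k = a" "(C @ [hd C]) ! Suc k = b"
      unfolding cp_def pp_iff by blast
    hence "k < length C" by simp
    thus "\<exists>k < length C. a = C ! k \<and> b = C ! (Suc k mod length C)" using k h1 h2 by metis
  next
    assume "\<exists>k < length C. a = C ! k \<and> b = C ! (Suc k mod length C)"
    then obtain k where k: "k < length C" "a = C ! k" "b = C ! (Suc k mod length C)" by blast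
    hence "Suc k < length (C @ [hd C])" "(C @ [hd C]) ! k = a" "(C @ [hd C]) ! Suc k = b"
      using h1 h2 by auto
    thus "(a, b) \<in> cp C" unfolding cp_def pp_iff by blast
  qed
qed

lemma suc_mod_inj: "k < n \<Longrightarrow> k' < n \<Longrightarrow> Suc k mod n = Suc k' mod n \<Longrightarrow> k = k'"
  by (auto simp: mod_Suc split: if_splits)

lemma cp_fun1:
  assumes "distinct C" "(a, b) \<in> cp C" "(a', b) \<in> cp C" shows "a = a'"
proof -
  have ne: "C \<noteq> []" using assms(2) by (auto simp: cp_def)
  obtain k where k: "k < length C" "a = C ! k" "b = C ! (Suc k mod length C)"
    using assms(2) cp_iff[OF ne] by blast
  obtain k' where k': "k' < length C" "a' = C ! k'" "b = C ! (Suc k' mod length C)"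
    using assms(3) cp_iff[OF ne] by blast
  have "Suc k mod length C = Suc k' mod length C"
    using k k' nth_eq_iff_index_eq[OF assms(1)] ne by simp
  hence "k = k'" using suc_mod_inj k k' by blast
  thus ?thesis using k k' by simp
qed

lemma cp_fun2:
  assumes "distinct C" "(a, b) \<in> cp C" "(a, b') \<in> cp C" shows "b = b'"
proof -
  have ne: "C \<noteq> []" using assms(2) by (auto simp: cp_def)
  obtain k where k: "k < length C" "a = C ! k" "b = C ! (Suc k mod length C)"
    using assms(2) cp_iff[OF ne] by blast
  obtain k' where k': "k' < length C" "a = C ! k'" "b' = C ! (Suc k' mod length C)"
    using assms(3) cp_iff[OF ne] by blast
  have "k = k'" using k k' nth_eq_iff_index_eq[OF assms(1)] by simp
  thus ?thesis using k k' by simp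
qed

lemma cp_mem: "(a, b) \<in> cp C \<Longrightarrow> a \<in> set C \<and> b \<in> set C"
  by (cases C) (auto simp: cp_def dest!: pp_mem)

context tg begin

definition nb :: "'v set \<Rightarrow> 'v \<Rightarrow> 'v set" where
  "nb S x = {y \<in> S. E x y}"

definition ival :: "'v set \<Rightarrow> 'v \<Rightarrow> 'v \<Rightarrow> 'v \<Rightarrow> bool" where
  "ival S x a s \<longleftrightarrow> (\<exists>ys zs. cl x a = ys @ zs \<and> ys \<noteq> [] \<and> last ys = s \<and> set ys = nb S x)"

definition NT :: "'v set \<Rightarrow> 'v list \<Rightarrow> bool" where
  "NT S C \<longleftrightarrow> S \<subseteq> V \<and> distinct C \<and> 2 \<le> length C \<and> set C \<subseteq> S \<and>
     (\<forall>x \<in> S - set C. \<forall>y. E x y \<longrightarrow> y \<in> S) \<and>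
     (\<forall>a x s. (a, x) \<in> cp C \<longrightarrow> (x, s) \<in> cp C \<longrightarrow> ival S x a s)"

definition lab :: "('v \<times> 'v \<times> nat) set \<Rightarrow> ('v \<Rightarrow> 'v \<Rightarrow> bool) \<Rightarrow> 'v \<Rightarrow> 'v list \<Rightarrow> 'v \<Rightarrow> 'v list \<Rightarrow> 'v \<Rightarrow> 'v list \<Rightarrow> bool" where
  "lab R col x B g Rs b A \<longleftrightarrow>
     (g, x, 1) \<in> R \<and> col g x \<and> (b, x, 1) \<in> R \<and> \<not> col b x \<and>
     (\<forall>y \<in> set Rs. (x, y, 2) \<in> R) \<and>
     (\<forall>y \<in> set B. (x, y, 1) \<in> R \<and> \<not> col x y) \<and>
     (\<forall>y \<in> set A. (x, y, 1) \<in> R \<and> col x y)"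

definition full :: "('v \<times> 'v \<times> nat) set \<Rightarrow> ('v \<Rightarrow> 'v \<Rightarrow> bool) \<Rightarrow> 'v \<Rightarrow> bool" where
  "full R col x \<longleftrightarrow> (\<exists>p B g Rs b A. cl x p = p # B @ g # Rs @ b # A \<and> (p, x, 2) \<in> R \<and> lab R col x B g Rs b A)"

definition part :: "'v set \<Rightarrow> ('v \<times> 'v \<times> nat) set \<Rightarrow> ('v \<Rightarrow> 'v \<Rightarrow> bool) \<Rightarrow> 'v \<Rightarrow> 'v \<Rightarrow> 'v \<Rightarrow> bool" where
  "part S R col x a s \<longleftrightarrow> (\<exists>B g Rs b A zs. cl x a = (B @ g # Rs @ b # A) @ zs \<and>
       last (B @ g # Rs @ b # A) = s \<and> set (B @ g # Rs @ b # A) = nb S x \<and> lab R col x B g Rs b A)"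

definition LAB :: "'v set \<Rightarrow> 'v list \<Rightarrow> ('v \<times> 'v \<times> nat) set \<Rightarrow> ('v \<Rightarrow> 'v \<Rightarrow> bool) \<Rightarrow> ('v \<Rightarrow> nat) \<Rightarrow> bool" where
  "LAB S C R col t \<longleftrightarrow>
    (\<forall>u w k. (u, w, k) \<in> R \<longrightarrow> E u w \<and> u \<in> S \<and> w \<in> S \<and> {u, w} \<noteq> {C ! 0, C ! 1} \<and> (k = 1 \<or> k = 2)) \<and>
    (\<forall>u w. E u w \<longrightarrow> u \<in> S \<longrightarrow> w \<in> S \<longrightarrow> {u, w} \<noteq> {C ! 0, C ! 1} \<longrightarrow> (\<exists>k. (u, w, k) \<in> R \<or> (w, u, k) \<in> R)) \<and>
    (\<forall>u w k u' w' k'. (u, w, k) \<in> R \<longrightarrow> (u', w', k') \<in> R \<longrightarrow> {u, w} = {u', w'} \<longrightarrow> u = u' \<and> w = w' \<and> k = k') \<and>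
    (\<forall>w \<in> S. E (C ! 0) w \<longrightarrow> w \<noteq> C ! 1 \<longrightarrow> (C ! 0, w, 1) \<in> R \<and> \<not> col (C ! 0) w) \<and>
    (\<forall>w \<in> S. E (C ! 1) w \<longrightarrow> w \<noteq> C ! 0 \<longrightarrow> (C ! 1, w, 1) \<in> R \<and> col (C ! 1) w) \<and>
    (\<forall>u w. (u, w, 2) \<in> R \<longrightarrow> t u < t w) \<and>
    (\<forall>x \<in> S - {C ! 0, C ! 1}. (x \<notin> set C \<longrightarrow> full R col x) \<and>
        (\<forall>a s. (a, x) \<in> cp C \<longrightarrow> (x, s) \<in> cp C \<longrightarrow> part S R col x a s))"

lemma lab_mono:
  assumes "lab R col x B g Rs b A" "R \<subseteq> R'"
    and "\<forall>y \<in> set (B @ g # Rs @ b # A). col' x y = col x y \<and> col' y x = col y x"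
  shows "lab R' col' x B g Rs b A"
proof -
  from assms(3) have c: "col' g x = col g x" "col' b x = col b x" "\<forall>y\<in>set B. col' x y = col x y"
    "\<forall>y\<in>set A. col' x y = col x y" by auto
  show ?thesis using assms(1,2) c unfolding lab_def by blast
qed

lemma rot_inj: "E x y \<Longrightarrow> E x z \<Longrightarrow> rot x y = rot x z \<Longrightarrow> y = z"
proof -
  assume a: "E x y" "E x z" "rot x y = rot x z"
  hence "x \<in> V" using EV by auto
  hence "inj_on (rot x) (nbrs E x)" using rs by (auto simp: rotation_system_def bij_betw_def)
  thus ?thesis using a by (auto simp: nbrs_def dest: inj_onD)
qed

lemma prefix_last_unique:
  assumes "distinct (ys @ zs)" "ys @ zs = ys' @ zs'" "ys \<noteq> []" "ys' \<noteq> []" "last ys = last ys'"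
  shows "ys = ys'"
proof -
  obtain us where us: "(ys = ys' @ us \<and> us @ zs = zs') \<or> (ys @ us = ys' \<and> zs = us @ zs')"
    using assms(2) by (auto simp: append_eq_append_conv2)
  show ?thesis
  proof (cases "us = []")
    case True thus ?thesis using us by auto
  next
    case False
    then obtain c m' where c: "us = c # m'" by (cases us) auto
    have lu: "last us \<in> set us" using False by simp
    from us show ?thesis
    proof
      assume h: "ys = ys' @ us \<and> us @ zs = zs'"
      hence "last ys = last us" using False by simp
      moreover have "distinct (ys' @ us)" using assms(1) h by (metis append.assoc distinct_append)
      ultimately show ?thesis using assms(4,5) lu by (metis disjoint_iff distinct_append last_in_set)
    next
      assume h: "ys @ us = ys' \<and> zs = us @ zs'"
      hence "last ys' = last us" using False by (metis last_appendR)
      moreover have "distinct (ys @ us)" using assms(1) h by (metis append.assoc distinct_append)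
      ultimately show ?thesis using assms(3,5) lu by (metis disjoint_iff distinct_append last_in_set)
    qed
  qed
qed

lemma ival_E: "ival S x a s \<Longrightarrow> E x a"
proof -
  assume "ival S x a s"
  then obtain ys zs where y: "cl x a = ys @ zs" "ys \<noteq> []" "set ys = nb S x" by (auto simp: ival_def)
  hence "deg E x > 0" by (metis Nil_is_append_conv cl_length length_greater_0_conv)
  hence "cl x a ! 0 = a" by (simp add: cl_nth)
  hence "hd ys = a" using y by (metis hd_append2 hd_conv_nth Nil_is_append_conv)
  hence "a \<in> nb S x" using y by (metis list.set_sel(1))
  thus ?thesis by (simp add: nb_def)
qed

end


lemma cp_cons3: "cp (c0 # c1 # v # D) = {(c0, c1), (c1, v), (v, hd (D @ [c0]))} \<union> pp (D @ [c0])"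
proof -
  have "D @ [c0] = hd (D @ [c0]) # tl (D @ [c0])" by (cases D) auto
  hence "pp (c0 # c1 # v # D @ [c0]) = {(c0, c1), (c1, v), (v, hd (D @ [c0]))} \<union> pp (D @ [c0])"
    by (metis Un_insert_left insert_is_Un pp_Cons2 sup_commute)
  thus ?thesis by (simp add: cp_def)
qed

lemma cp_after: "cp (c0 # c1 # tw @ D) = {(c0, c1)} \<union> pp (c1 # tw @ [hd (D @ [c0])]) \<union> pp (D @ [c0])"
proof -
  have e: "D @ [c0] = hd (D @ [c0]) # tl (D @ [c0])" by (cases D) auto
  have "c0 # c1 # tw @ D @ [c0] = c0 # ((c1 # tw) @ hd (D @ [c0]) # tl (D @ [c0]))" using e by simp
  hence "pp (c0 # c1 # tw @ D @ [c0]) = insert (c0, c1) (pp ((c1 # tw) @ [hd (D @ [c0])]) \<union> pp (D @ [c0]))"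
    using pp_append[of "c1 # tw" "hd (D @ [c0])" "tl (D @ [c0])"] e
    by (metis append_Cons pp_Cons2)
  thus ?thesis by (simp add: cp_def)
qed

lemma list_snoc_prefix: "M @ zs = X @ [v] \<Longrightarrow> v \<notin> set M \<Longrightarrow> \<exists>zs'. X = M @ zs'"
proof -
  assume h: "M @ zs = X @ [v]" and nv: "v \<notin> set M"
  obtain us where us: "(M = X @ us \<and> us @ zs = [v]) \<or> (M @ us = X \<and> zs = us @ [v])"
    using h by (auto simp: append_eq_append_conv2)
  thus ?thesis
  proof
    assume a: "M = X @ us \<and> us @ zs = [v]"
    hence "us = [] \<or> us = [v]" by (cases us) auto
    thus ?thesis using a nv by auto
  next
    assume "M @ us = X \<and> zs = us @ [v]" thus ?thesis by auto
  qed
qed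

context tg begin

lemma around:
  assumes xv: "E x v" and xs: "E x s" and a: "rot x v = a" and s: "rot x s = v" and av: "a \<noteq> v"
  shows "\<exists>L. cl x a = L @ [v] \<and> L \<noteq> [] \<and> last L = s \<and> set L = nbrs E x - {v}"
proof -
  have xa: "E x a" using rot_nbr[OF xv] a by simp
  have d: "deg E x > 1"
  proof -
    have "{v, a} \<subseteq> nbrs E x" using xv xa by (auto simp: nbrs_def)
    hence "card {v, a} \<le> deg E x" using fin_nbrs by (simp add: deg_def card_mono)
    thus ?thesis using av by simp
  qed
  have "cl x v ! 1 = a" using d a by (simp add: cl_nth)
  moreover have "cl x v = v # tl (cl x v)" using cl_hd[OF xv] .
  moreover have "length (cl x v) > 1" using d by simp
  ultimately obtain T where T: "cl x v = [] @ v # a # T"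
    by (metis append_Nil length_Cons list.exhaust list.size(3) nth_Cons_0 nth_Cons_Suc not_less_zero less_Suc0 One_nat_def)
  hence ca: "cl x a = a # T @ [v]" using cl_rot_split[OF xv, of "[v]" a T] by simp
  let ?L = "a # T"
  have "last ?L = s"
  proof -
    obtain P' l where Pl: "?L = P' @ [l]" by (metis append_butlast_last_id list.distinct(1))
    hence cP: "cl x a = P' @ l # v # []" using ca by simp
    hence "v = rot x l" using cl_consec[OF xa] by blast
    moreover have "l \<in> set (cl x a)" using cP by simp
    hence "E x l" using cl_mem[OF xa] by simp
    ultimately have "l = s" using rot_inj[OF _ xs] s by metis
    thus ?thesis using Pl by simp
  qed
  moreover have "set ?L = nbrs E x - {v}"
  proof -
    have "distinct (cl x a)" using cl_distinct[OF xa] .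
    hence "v \<notin> set ?L" using ca by auto
    moreover have "set (cl x a) = nbrs E x" using cl_set[OF xa] .
    ultimately show ?thesis using ca by auto
  qed
  ultimately show ?thesis using ca by (intro exI[of _ ?L]) auto
qed

lemma prepend:
  assumes xv: "E x v" and a: "rot x v = a'" and M: "cl x a' = M @ zs" and nv: "v \<notin> set M"
  shows "\<exists>zs'. cl x v = v # M @ zs'"
proof (cases "deg E x > 1")
  case True
  have "cl x v ! 1 = a'" using True a by (simp add: cl_nth)
  moreover have "cl x v = v # tl (cl x v)" using cl_hd[OF xv] .
  moreover have "length (cl x v) > 1" using True by simp
  ultimately obtain T where T: "cl x v = [] @ v # a' # T"
    by (metis append_Nil length_Cons list.exhaust list.size(3) nth_Cons_0 nth_Cons_Suc not_less_zero less_Suc0 One_nat_def)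
  hence "cl x a' = (a' # T) @ [v]" using cl_rot_split[OF xv, of "[v]" a' T] by simp
  then obtain zs' where "a' # T = M @ zs'" using list_snoc_prefix M nv by metis
  thus ?thesis using T by auto
next
  case False
  hence "deg E x = 1" using deg_pos[OF xv] by simp
  hence cv: "cl x v = [v]" using cl_hd[OF xv] by (metis cl_length length_0_conv length_tl diff_self_eq_0 One_nat_def)
  have "rot x v = v" using cl_last[OF xv] cv by simp
  hence "cl x a' = [v]" using a cv by simp
  hence "M = []" using M nv by (cases M) auto
  thus ?thesis using cv by simp
qed

lemma chordless_nbr:
  assumes len: "3 \<le> length C" and nc: "\<not> has_chord E C" and y: "y \<in> set C" and e: "E (C ! 2) y"
  shows "y = C ! 1 \<or> y = next_after_v3 C"
proof -
  obtain k where k: "k < length C" "y = C ! k" using y by (metis in_set_conv_nth)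
  have "k \<noteq> 2" using e k Eirr by auto
  consider "k = 0" | "k = 1" | "k = 3" | "k \<ge> 4" using \<open>k \<noteq> 2\<close> by linarith
  thus ?thesis
  proof cases
    case 1
    show ?thesis
    proof (cases "length C = 3")
      case True thus ?thesis using 1 k by (simp add: next_after_v3_def)
    next
      case False
      have "has_chord E C" unfolding has_chord_def
        by (rule exI[of _ 0], rule exI[of _ 2]) (use False len e k 1 Esym in auto)
      thus ?thesis using nc by simp
    qed
  next
    case 2 thus ?thesis using k by simp
  next
    case 3 thus ?thesis using k by (simp add: next_after_v3_def)
  next
    case 4
    have "has_chord E C" unfolding has_chord_def
      by (rule exI[of _ 2], rule exI[of _ k]) (use 4 len e k in auto)
    thus ?thesis using nc by simp
  qed
qed

lemma orient_setup:
  assumes NT: "NT S C" and len: "3 \<le> length C" and nc: "\<not> has_chord E C"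
  obtains tw zs where
    "C = C!0 # C!1 # C!2 # drop 3 C"
    "next_after_v3 C = hd (drop 3 C @ [C!0])"
    "cl (C!2) (C!1) = (C!1 # tw @ [next_after_v3 C]) @ zs"
    "set (C!1 # tw @ [next_after_v3 C]) = nb S (C!2)"
    "distinct (C!1 # tw @ [next_after_v3 C])"
    "cycle_after_delete E rot C = C!0 # C!1 # tw @ drop 3 C"
    "set tw \<inter> set C = {}"
proof -
  let ?c0 = "C!0" and ?c1 = "C!1" and ?v = "C!2" and ?D = "drop 3 C" and ?nx = "next_after_v3 C"
  have HC: "C = ?c0 # ?c1 # ?v # ?D" using len
    by (metis Cons_nth_drop_Suc One_nat_def Suc_1 Suc_le_lessD drop0 numeral_3_eq_3 less_le_trans lessI Suc_lessD)
  have dC: "distinct C" using NT by (simp add: NT_def)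
  have nxe: "?nx = hd (?D @ [?c0])"
  proof (cases "?D = []")
    case True thus ?thesis by (simp add: next_after_v3_def)
  next
    case False
    hence "3 < length C" by simp
    hence "hd ?D = C ! 3" by (simp add: hd_drop_conv_nth)
    thus ?thesis using False by (simp add: next_after_v3_def)
  qed
  have cpC: "cp C = {(?c0, ?c1), (?c1, ?v), (?v, ?nx)} \<union> pp (?D @ [?c0])"
    using cp_cons3[of ?c0 ?c1 ?v ?D] HC nxe by simp
  have "ival S ?v ?c1 ?nx" using NT cpC by (auto simp: NT_def)
  then obtain ys zs where ys: "cl ?v ?c1 = ys @ zs" "ys \<noteq> []" "last ys = ?nx" "set ys = nb S ?v"
    by (auto simp: ival_def)
  have vc1: "E ?v ?c1" using ival_E[OF \<open>ival S ?v ?c1 ?nx\<close>] .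
  have dys: "distinct ys" using cl_distinct[OF vc1] ys(1) by simp
  have hys: "hd ys = ?c1" using cl_hd[OF vc1] ys(1,2) by (metis hd_append2 list.sel(1))
  have nxne: "?nx \<noteq> ?c1"
  proof
    assume "?nx = ?c1"
    hence "hd (?D @ [?c0]) = ?c1" using nxe by simp
    moreover have "hd (?D @ [?c0]) \<in> set ?D \<union> {?c0}" by (cases ?D) auto
    ultimately show False using dC HC by (metis distinct.simps(2) insert_iff list.set_intros(1) list.set_intros(2) Un_iff empty_iff)
  qed
  obtain tw where tw: "ys = ?c1 # tw @ [?nx]"
  proof -
    obtain r where r: "ys = ?c1 # r" using hys ys(2) by (cases ys) auto
    have "r \<noteq> []" using r ys(3) nxne by auto
    hence "r = butlast r @ [?nx]" using r ys(3) by (metis append_butlast_last_id last_ConsR)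
    thus ?thesis using that r by blast
  qed
  have tw_take: "takeWhile (\<lambda>w. w \<noteq> ?nx) (tl (cl ?v ?c1)) = tw"
  proof -
    have "tl (cl ?v ?c1) = tw @ ?nx # zs" using ys(1) tw by simp
    moreover have "?nx \<notin> set tw" using dys tw by simp
    moreover have "\<forall>x\<in>set tw. x \<noteq> ?nx" using \<open>?nx \<notin> set tw\<close> by blast
    ultimately show ?thesis by (simp add: takeWhile_append2 takeWhile_tail)
  qed
  have cad: "cycle_after_delete E rot C = ?c0 # ?c1 # tw @ ?D"
    using tw_take by (simp add: cycle_after_delete_def)
  have twC: "set tw \<inter> set C = {}"
  proof (rule ccontr)
    assume "set tw \<inter> set C \<noteq> {}"
    then obtain y where y: "y \<in> set tw" "y \<in> set C" by blast
    have "y \<in> set ys" using tw y by simp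
    hence "y \<in> nb S ?v" using ys(4) by simp
    hence "E ?v y" by (simp add: nb_def)
    hence "y = ?c1 \<or> y = ?nx" using chordless_nbr[OF len nc y(2)] by simp
    thus False using dys tw y by auto
  qed
  show ?thesis using that[OF HC nxe, of tw zs] ys tw dys cad twC by simp
qed

lemma consec_pp:
  assumes "E x a0" "cl x a0 = W @ zs" "(p, q) \<in> pp W"
  shows "q = rot x p"
proof -
  obtain k where k: "Suc k < length W" "W ! k = p" "W ! Suc k = q" using assms(3) by (auto simp: pp_iff)
  have "W = take k W @ W ! k # W ! Suc k # drop (Suc (Suc k)) W"
    using k(1) by (metis Cons_nth_drop_Suc Suc_lessD append_take_drop_id)
  hence "cl x a0 = take k W @ p # q # (drop (Suc (Suc k)) W @ zs)" using assms(2) k by (metis append.assoc append_Cons)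
  thus ?thesis using cl_consec[OF assms(1)] by blast
qed

lemma nb_E: "y \<in> nb S x \<Longrightarrow> E x y" by (simp add: nb_def)

lemma lab_consB: "lab R col x B g Rs b A \<Longrightarrow> (x, y, 1) \<in> R \<Longrightarrow> \<not> col x y \<Longrightarrow> lab R col x (y # B) g Rs b A"
  by (simp add: lab_def)

lemma lab_appB: "lab R col x B g Rs b A \<Longrightarrow> \<forall>y \<in> set B0. (x, y, 1) \<in> R \<and> \<not> col x y \<Longrightarrow> lab R col x (B0 @ B) g Rs b A"
  by (auto simp: lab_def)

lemma lab_appA: "lab R col x B g Rs b A \<Longrightarrow> \<forall>y \<in> set A0. (x, y, 1) \<in> R \<and> col x y \<Longrightarrow> lab R col x B g Rs b (A @ A0)"
  by (auto simp: lab_def)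

lemma pp_last: "X \<noteq> [] \<Longrightarrow> (last X, y) \<in> pp (X @ [y])"
proof (induction X rule: induct_list012)
  case (3 x1 x2 xs) thus ?case by simp
qed auto

lemma pp_split_mid: "X \<noteq> [] \<Longrightarrow> Y \<noteq> [] \<Longrightarrow> (last X, x) \<in> pp (X @ x # Y) \<and> (x, hd Y) \<in> pp (X @ x # Y)"
  using pp_append[of X x Y] pp_last[of X x] by (cases Y) auto

lemma orient_step:
  assumes NT: "NT S C" and len: "3 \<le> length C" and nc: "\<not> has_chord E C"
  shows "NT (S - {C!2}) (cycle_after_delete E rot C)"
    and "LAB (S - {C!2}) (cycle_after_delete E rot C) R' col' t' \<Longrightarrow>
         \<exists>col t. LAB S C (orient_labels E S C \<union> R') col t"
proof -
  obtain tw zs where HC0: "C = C!0 # C!1 # C!2 # drop 3 C"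
    and nxe0: "next_after_v3 C = hd (drop 3 C @ [C!0])"
    and clv0: "cl (C!2) (C!1) = (C!1 # tw @ [next_after_v3 C]) @ zs"
    and sW0: "set (C!1 # tw @ [next_after_v3 C]) = nb S (C!2)"
    and dW0: "distinct (C!1 # tw @ [next_after_v3 C])"
    and cad0: "cycle_after_delete E rot C = C!0 # C!1 # tw @ drop 3 C"
    and twC: "set tw \<inter> set C = {}"
    using orient_setup[OF NT len nc] by blast
  define c0 c1 v D nx where "c0 = C!0" and "c1 = C!1" and "v = C!2" and "D = drop 3 C"
    and "nx = next_after_v3 C"
  define W P C' S' where "W = c1 # tw @ [nx]" and "P = D @ [c0]" and "C' = c0 # c1 # tw @ D"
    and "S' = S - {v}"
  note defs = c0_def c1_def v_def D_def nx_def W_def P_def C'_def S'_def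
  have HC: "C = c0 # c1 # v # D" using HC0 by (simp add: defs)
  have nxP: "nx = hd P" using nxe0 by (simp add: defs)
  have clv: "cl v c1 = W @ zs" using clv0 by (simp add: defs)
  have sW: "set W = nb S v" using sW0 by (simp add: defs)
  have dW: "distinct W" using dW0 by (simp add: defs)
  have cad: "cycle_after_delete E rot C = C'" using cad0 by (simp add: defs)
  have dC: "distinct C" using NT by (simp add: NT_def)
  hence dist: "c0 \<noteq> c1" "c0 \<noteq> v" "c1 \<noteq> v" "c0 \<notin> set D" "c1 \<notin> set D" "v \<notin> set D" "distinct D"
    using HC by (metis distinct.simps(2) list.set_intros(1) list.set_intros(2))+
  have Pne: "P = nx # tl P" using nxP by (simp add: P_def)
  have setP: "set P = insert c0 (set D)" by (simp add: P_def)
  have nxin: "nx \<in> set P" using Pne by (metis list.set_intros(1))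
  have dP: "distinct P" using dist by (simp add: P_def)
  have cpC: "cp C = {(c0, c1), (c1, v), (v, nx)} \<union> pp P"
    using cp_cons3[of c0 c1 v D] HC nxP by (simp add: P_def)
  have cpC': "cp C' = {(c0, c1)} \<union> pp W \<union> pp P"
    using cp_after[of c0 c1 tw D] nxP by (simp add: C'_def W_def P_def)
  have setC: "set C = {c0, c1, v} \<union> set D" using HC by auto
  have setC': "set C' = {c0, c1} \<union> set tw \<union> set D" by (auto simp: C'_def)
  have twC': "set tw \<inter> ({c0, c1, v} \<union> set D) = {}" using twC setC by simp
  have nxv: "nx \<noteq> v" using nxin setP dist by auto
  have nxc1: "nx \<noteq> c1" using dW by (auto simp: W_def)
  have vW: "v \<notin> set W" using sW Eirr by (auto simp: nb_def)
  have vtw: "v \<notin> set tw" using vW by (simp add: W_def)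
  have dC': "distinct C'" using dist twC' dW by (auto simp: C'_def W_def)
  have SV: "S \<subseteq> V" and CS: "set C \<subseteq> S" and intS: "\<forall>x \<in> S - set C. \<forall>y. E x y \<longrightarrow> y \<in> S"
    and ivS: "\<And>a x s. (a, x) \<in> cp C \<Longrightarrow> (x, s) \<in> cp C \<Longrightarrow> ival S x a s"
    using NT by (auto simp: NT_def)
  have WS: "set W \<subseteq> S" using sW by (auto simp: nb_def)
  have vS: "v \<in> S" using CS HC by simp
  have nbS': "nb S' x = nb S x - {v}" for x by (auto simp: nb_def S'_def)
  have Ev1: "E v c1" using clv cl_hd
    by (metis Nil_is_append_conv W_def cl_length deg_pos hd_append2 length_greater_0_conv list.sel(1) list.simps(3) nb_E sW list.set_intros(1))
  have EvW: "y \<in> set W \<Longrightarrow> E v y" for y using sW nb_E by blast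
  have consW: "(p, q) \<in> pp W \<Longrightarrow> q = rot v p" for p q using consec_pp[OF Ev1 clv] by blast
  have ppPC: "pp P \<subseteq> cp C" using cpC by auto
  have ppPC': "pp P \<subseteq> cp C'" using cpC' by auto
  have FA: "\<exists>L. cl x a = L @ [v] \<and> L \<noteq> [] \<and> last L = s \<and> set L = nb S' x"
    if x: "x \<in> set tw" and ax: "(a, x) \<in> cp C'" and xs: "(x, s) \<in> cp C'" for x a s
  proof -
    have xnC: "x \<notin> set C" using x twC by auto
    have "x \<noteq> c1" "x \<noteq> c0" "x \<notin> set P" using x twC' setP by auto
    hence ax': "(a, x) \<in> pp W" and xs': "(x, s) \<in> pp W" using ax xs cpC' pp_mem by fastforce+
    have rx: "x = rot v a" and rs: "s = rot v x" using consW ax' xs' by auto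
    have Eva: "E v a" and Evx: "E v x" using EvW pp_mem[OF ax'] by auto
    have "rot x v = a" using tri[OF Esym[OF Eva]] rx by simp
    moreover have "rot x s = v" using tri[OF Esym[OF Evx]] rs by simp
    moreover have "E x s" using tri_edge[OF Evx] rs by simp
    moreover have "a \<noteq> v" using Eva Eirr by auto
    ultimately obtain L where L: "cl x a = L @ [v]" "L \<noteq> []" "last L = s" "set L = nbrs E x - {v}"
      using around[OF Esym[OF Evx]] by blast
    have xS: "x \<in> S" using x WS by (auto simp: W_def)
    have "nb S x = nbrs E x" using intS xS xnC by (auto simp: nb_def nbrs_def)
    hence "set L = nb S' x" using L(4) nbS' by simp
    thus ?thesis using L by blast
  qed
  have FB1: "rot nx v = a" if "(a, nx) \<in> cp C'" for a
  proof -
    have "(a, nx) \<notin> pp P" using pp_snd_not_hd[OF dP] nxP by blast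
    hence "(a, nx) \<in> pp W" using that cpC' nxc1 by auto
    hence "nx = rot v a" "E v a" using consW EvW pp_mem[OF \<open>(a, nx) \<in> pp W\<close>] by auto
    thus ?thesis using tri[OF Esym[OF \<open>E v a\<close>]] by simp
  qed
  have FB2: "(nx, s) \<in> cp C" if "(nx, s) \<in> cp C'" for s
  proof -
    have "nx = last W" by (simp add: W_def)
    hence "(nx, s) \<notin> pp W" using pp_fst_not_last[OF dW] by blast
    thus ?thesis using that cpC cpC' by auto
  qed
  have FB3: "(nx, s) \<in> cp C'" if "(nx, s) \<in> cp C" "nx \<noteq> c0" for s
    using that cpC cpC' nxv nxc1 by auto
  have FC: "a = c0 \<and> E c1 s \<and> rot c1 s = v" if "(a, c1) \<in> cp C'" "(c1, s) \<in> cp C'" for a s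
  proof -
    have "(c0, c1) \<in> cp C'" using cpC' by simp
    hence "a = c0" using cp_fun1[OF dC'] that(1) by blast
    have "(c1, hd (tw @ [nx])) \<in> pp W" by (cases tw) (auto simp: W_def)
    hence "(c1, hd (tw @ [nx])) \<in> cp C'" using cpC' by auto
    hence "s = hd (tw @ [nx])" using cp_fun2[OF dC'] that(2) by blast
    hence "(c1, s) \<in> pp W" using \<open>(c1, hd (tw @ [nx])) \<in> pp W\<close> by simp
    hence "s = rot v c1" using consW by blast
    thus ?thesis using tri[OF Esym[OF Ev1]] tri_edge[OF Ev1] \<open>a = c0\<close> by simp
  qed
  have FD1: "(a, x) \<in> cp C \<longleftrightarrow> (a, x) \<in> cp C'" "(x, s) \<in> cp C \<longleftrightarrow> (x, s) \<in> cp C'"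
    if "x \<notin> set tw" "x \<noteq> nx" "x \<noteq> c1" "x \<noteq> v" for x a s
  proof -
    have "x \<notin> set W" using that by (simp add: W_def)
    hence "(a, x) \<notin> pp W" "(x, s) \<notin> pp W" using pp_mem by metis+
    thus "(a, x) \<in> cp C \<longleftrightarrow> (a, x) \<in> cp C'" "(x, s) \<in> cp C \<longleftrightarrow> (x, s) \<in> cp C'"
      using cpC cpC' that by auto
  qed
  have FD2: "\<not> E v x" if "x \<in> set C" "x \<noteq> nx" "x \<noteq> c1" for x
    using chordless_nbr[OF len nc that(1)] that by (auto simp: defs)
  show NT': "NT (S - {C!2}) (cycle_after_delete E rot C)"
  proof -
    have "S' \<subseteq> V" using SV by (auto simp: S'_def)
    moreover have "2 \<le> length C'" by (simp add: C'_def)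
    moreover have "set C' \<subseteq> S'" using CS WS vtw dist setC by (auto simp: C'_def S'_def W_def)
    moreover have "\<forall>x \<in> S' - set C'. \<forall>y. E x y \<longrightarrow> y \<in> S'"
    proof (intro ballI allI impI)
      fix x y assume x: "x \<in> S' - set C'" and xy: "E x y"
      have "x \<notin> set C" using x setC setC' by (auto simp: S'_def)
      hence "y \<in> S" using intS x xy by (auto simp: S'_def)
      moreover have "y \<noteq> v"
      proof
        assume "y = v"
        hence "x \<in> nb S v" using x xy Esym by (auto simp: nb_def S'_def)
        hence "x \<in> set W" using sW by simp
        moreover have "set W \<subseteq> set C'" using nxin setP setC' by (auto simp: W_def)
        ultimately show False using x by auto
      qed
      ultimately show "y \<in> S'" by (simp add: S'_def)
    qed
    moreover have "ival S' x a s" if ax: "(a, x) \<in> cp C'" and xs: "(x, s) \<in> cp C'" for a x s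
    proof -
      have xC': "x \<in> set C'" using cp_mem[OF ax] by simp
      consider "x \<in> set tw" | "x = nx" | "x = c1" | "x \<notin> set tw" "x \<noteq> nx" "x \<noteq> c1" by blast
      thus ?thesis
      proof cases
        case 1 thus ?thesis using FA[OF 1 ax xs] by (auto simp: ival_def)
      next
        case 2
        have ra: "rot nx v = a" using FB1 ax 2 by simp
        have "(nx, s) \<in> cp C" using FB2 xs 2 by simp
        hence iv: "ival S nx v s" using ivS cpC by blast
        then obtain ys1 zs1 where y1: "cl nx v = ys1 @ zs1" "ys1 \<noteq> []" "last ys1 = s" "set ys1 = nb S nx"
          by (auto simp: ival_def)
        have Enx: "E nx v" using ival_E[OF iv] .
        have hy: "hd ys1 = v" using cl_hd[OF Enx] y1(1,2) by (metis hd_append2 list.sel(1))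
        have "s \<in> set C'" using cp_mem[OF xs] by simp
        hence sv: "s \<noteq> v" using setC' dist vtw by auto
        obtain ys1' where ys1': "ys1 = v # ys1'" using hy y1(2) by (cases ys1) auto
        have ne: "ys1' \<noteq> []" using ys1' y1(3) sv by auto
        then obtain a0 r where ar: "ys1' = a0 # r" by (cases ys1') auto
        have "cl nx v = [] @ v # a0 # (r @ zs1)" using y1(1) ys1' ar by simp
        hence "a0 = rot nx v" using cl_consec[OF Enx] by blast
        hence a0: "a0 = a" using ra by simp
        have "cl nx v = [v] @ a # (r @ zs1)" using y1(1) ys1' ar a0 by simp
        hence "cl nx a = a # (r @ zs1) @ [v]" using cl_rot_split[OF Enx, of "[v]" a "r @ zs1"] by simp
        hence "cl nx a = ys1' @ (zs1 @ [v])" using ar a0 by simp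
        moreover have "last ys1' = s" using y1(3) ys1' ne by simp
        moreover have "set ys1' = nb S' nx"
        proof -
          have "distinct ys1" using cl_distinct[OF Enx] y1(1) by simp
          thus ?thesis using ys1' y1(4) nbS' by auto
        qed
        ultimately show ?thesis using ne 2 by (auto simp: ival_def)
      next
        case 3
        have a: "a = c0" and Es: "E c1 s" and rs: "rot c1 s = v" using FC ax xs 3 by auto
        have "(c0, c1) \<in> cp C" "(c1, v) \<in> cp C" using cpC by auto
        hence iv: "ival S c1 c0 v" using ivS by blast
        then obtain ys1 zs1 where y1: "cl c1 c0 = ys1 @ zs1" "ys1 \<noteq> []" "last ys1 = v" "set ys1 = nb S c1"
          by (auto simp: ival_def)
        have Ec: "E c1 c0" using ival_E[OF iv] .
        have hy: "hd ys1 = c0" using cl_hd[OF Ec] y1(1,2) by (metis hd_append2 list.sel(1))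
        obtain ys1' where ys1': "ys1 = ys1' @ [v]" using y1(2,3) by (metis append_butlast_last_id)
        have ne: "ys1' \<noteq> []" using ys1' hy dist by auto
        obtain b l where bl: "ys1' = b @ [l]" using ne by (metis append_butlast_last_id)
        have "cl c1 c0 = b @ l # v # zs1" using y1(1) ys1' bl by simp
        hence "v = rot c1 l" using cl_consec[OF Ec] by blast
        moreover have "E c1 l" using y1(4) ys1' bl nb_E by (metis in_set_conv_decomp append.assoc append_Cons)
        ultimately have "l = s" using rot_inj[OF _ Es] rs by metis
        have "cl c1 c0 = ys1' @ (v # zs1)" using y1(1) ys1' by simp
        moreover have "last ys1' = s" using bl \<open>l = s\<close> by simp
        moreover have "set ys1' = nb S' c1"
        proof -
          have "distinct ys1" using cl_distinct[OF Ec] y1(1) by simp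
          thus ?thesis using ys1' y1(4) nbS' by auto
        qed
        ultimately show ?thesis using ne 3 a by (auto simp: ival_def)
      next
        case 4
        have xv: "x \<noteq> v" using xC' setC' dist vtw by auto
        have ax': "(a, x) \<in> cp C" and xs': "(x, s) \<in> cp C" using FD1[OF 4 xv] ax xs by auto
        have "x \<in> set C" using xC' 4 setC setC' by auto
        hence "\<not> E v x" using FD2 4 by blast
        hence "nb S' x = nb S x" using nbS' Esym by (auto simp: nb_def)
        thus ?thesis using ivS[OF ax' xs'] by (simp add: ival_def)
      qed
    qed
    ultimately have "NT S' C'" using dC' unfolding NT_def by blast
    thus ?thesis using cad by (simp add: S'_def v_def)
  qed
  show "LAB (S - {C!2}) (cycle_after_delete E rot C) R' col' t' \<Longrightarrow>
         \<exists>col t. LAB S C (orient_labels E S C \<union> R') col t"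
  proof -
    assume LAB0: "LAB (S - {C!2}) (cycle_after_delete E rot C) R' col' t'"
    hence LAB': "LAB S' C' R' col' t'" using cad by (simp add: S'_def v_def)
    have C'01: "C' ! 0 = c0" "C' ! 1 = c1" by (simp_all add: C'_def)
    have C01: "C ! 0 = c0" "C ! 1 = c1" by (simp_all add: c0_def c1_def)
    note L' = LAB'[unfolded LAB_def C'01]
    have L0': "\<And>u w k. (u, w, k) \<in> R' \<Longrightarrow> E u w \<and> u \<in> S' \<and> w \<in> S' \<and> {u, w} \<noteq> {c0, c1} \<and> (k = 1 \<or> k = 2)"
      using L'[THEN conjunct1] by blast
    have L1a': "\<And>u w. E u w \<Longrightarrow> u \<in> S' \<Longrightarrow> w \<in> S' \<Longrightarrow> {u, w} \<noteq> {c0, c1} \<Longrightarrow> (\<exists>k. (u, w, k) \<in> R' \<or> (w, u, k) \<in> R')"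
      using L'[THEN conjunct2, THEN conjunct1] by blast
    have L1b': "\<And>u w k u' w' k'. (u, w, k) \<in> R' \<Longrightarrow> (u', w', k') \<in> R' \<Longrightarrow> {u, w} = {u', w'} \<Longrightarrow> u = u' \<and> w = w' \<and> k = k'"
      using L'[THEN conjunct2, THEN conjunct2, THEN conjunct1] by blast
    have L2a': "\<And>w. w \<in> S' \<Longrightarrow> E c0 w \<Longrightarrow> w \<noteq> c1 \<Longrightarrow> (c0, w, 1) \<in> R' \<and> \<not> col' c0 w"
      using L'[THEN conjunct2, THEN conjunct2, THEN conjunct2, THEN conjunct1] by blast
    have L2b': "\<And>w. w \<in> S' \<Longrightarrow> E c1 w \<Longrightarrow> w \<noteq> c0 \<Longrightarrow> (c1, w, 1) \<in> R' \<and> col' c1 w"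
      using L'[THEN conjunct2, THEN conjunct2, THEN conjunct2, THEN conjunct2, THEN conjunct1] by blast
    have L4': "\<And>u w. (u, w, 2) \<in> R' \<Longrightarrow> t' u < t' w" using L'[THEN conjunct2, THEN conjunct2, THEN conjunct2, THEN conjunct2, THEN conjunct2, THEN conjunct1] by blast
    have L3f': "\<And>x. x \<in> S' - {c0, c1} \<Longrightarrow> x \<notin> set C' \<Longrightarrow> full R' col' x" using L'[THEN conjunct2, THEN conjunct2, THEN conjunct2, THEN conjunct2, THEN conjunct2, THEN conjunct2] by blast
    have L3p': "\<And>x a s. x \<in> S' - {c0, c1} \<Longrightarrow> (a, x) \<in> cp C' \<Longrightarrow> (x, s) \<in> cp C' \<Longrightarrow> part S' R' col' x a s"
      using L'[THEN conjunct2, THEN conjunct2, THEN conjunct2, THEN conjunct2, THEN conjunct2, THEN conjunct2] by blast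
    define Ol where "Ol = orient_labels E S C"
    have Och: "(p, q, k) \<in> Ol \<longleftrightarrow> (q = v \<and> k = 1 \<and> (p = c1 \<or> p = nx)) \<or> (p = v \<and> k = 2 \<and> q \<in> set tw)" for p q k
    proof -
      have "(u \<in> S \<and> E v u) \<longleftrightarrow> u \<in> set W" for u using sW by (simp add: nb_def)
      hence "(p, q, k) \<in> Ol \<longleftrightarrow> (q = v \<and> k = 1 \<and> p \<in> set W \<and> (p = c1 \<or> p = nx)) \<or> (p = v \<and> k = 2 \<and> q \<in> set W \<and> q \<noteq> c1 \<and> q \<noteq> nx)"
        by (auto simp: Ol_def orient_labels_def defs)
      moreover have "q \<in> set W \<and> q \<noteq> c1 \<and> q \<noteq> nx \<longleftrightarrow> q \<in> set tw" using dW by (auto simp: W_def)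
      ultimately show ?thesis by (auto simp: W_def)
    qed
    define col where "col u w = (if w = v then u = c1 else col' u w)" for u w
    define t where "t x = (if x = v then 0 else Suc (t' x))" for x
    have R'S': "(u, w, k) \<in> R' \<Longrightarrow> u \<noteq> v \<and> w \<noteq> v" for u w k using L0' by (auto simp: S'_def)
    have c1W: "c1 \<in> set W" and nxW: "nx \<in> set W" by (auto simp: W_def)
    have Evc1: "E c1 v" and Evnx: "E nx v" using EvW c1W nxW Esym by blast+
    have c0v: "E c0 v \<Longrightarrow> c0 = nx"
    proof -
      assume "E c0 v"
      hence "c0 \<in> set W" using sW CS HC Esym by (auto simp: nb_def)
      thus "c0 = nx" using twC' dist by (auto simp: W_def)
    qed
    have G0: "E u w \<and> u \<in> S \<and> w \<in> S \<and> {u, w} \<noteq> {c0, c1} \<and> (k = 1 \<or> k = 2)"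
      if "(u, w, k) \<in> Ol \<union> R'" for u w k
    proof (cases "(u, w, k) \<in> Ol")
      case True
      hence "(w = v \<and> k = 1 \<and> (u = c1 \<or> u = nx)) \<or> (u = v \<and> k = 2 \<and> w \<in> set tw)" using Och by blast
      moreover have "v \<notin> {c0, c1}" using dist by auto
      moreover have "set tw \<subseteq> set W" by (auto simp: W_def)
      ultimately show ?thesis using Evc1 Evnx EvW WS vS c1W nxW C01 by (auto dest: subsetD)
    next
      case False
      hence "(u, w, k) \<in> R'" using that by blast
      thus ?thesis using L0' C01 by (auto simp: S'_def)
    qed
    have G1a: "\<exists>k. (u, w, k) \<in> Ol \<union> R' \<or> (w, u, k) \<in> Ol \<union> R'"
      if "E u w" "u \<in> S" "w \<in> S" "{u, w} \<noteq> {c0, c1}" for u w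
    proof -
      have nbv: "y \<in> set W" if "E v y" "y \<in> S" for y using sW that by (auto simp: nb_def)
      have Wc: "y \<in> set W \<Longrightarrow> y = c1 \<or> y = nx \<or> y \<in> set tw" for y by (auto simp: W_def)
      show ?thesis
      proof (cases "u = v \<or> w = v")
        case True
        thus ?thesis
        proof
          assume "u = v"
          hence "w \<in> set W" using nbv that by blast
          thus ?thesis using Wc Och \<open>u = v\<close> by blast
        next
          assume "w = v"
          hence "u \<in> set W" using nbv that Esym by blast
          thus ?thesis using Wc Och \<open>w = v\<close> by blast
        qed
      next
        case False
        hence "u \<in> S'" "w \<in> S'" using that by (auto simp: S'_def)
        thus ?thesis using L1a' that C01 by blast
      qed
    qed
    have G1b: "u = u' \<and> w = w' \<and> k = k'"
      if "(u, w, k) \<in> Ol \<union> R'" "(u', w', k') \<in> Ol \<union> R'" "{u, w} = {u', w'}" for u w k u' w' k'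
    proof -
      have Ov: "(p, q, j) \<in> Ol \<Longrightarrow> v \<in> {p, q}" for p q j using Och by auto
      have R'v: "(p, q, j) \<in> R' \<Longrightarrow> v \<notin> {p, q}" for p q j using R'S' by auto
      show ?thesis
      proof (cases "(u, w, k) \<in> Ol")
        case True
        hence "(u', w', k') \<in> Ol" using that R'v Ov by (metis UnE)
        thus ?thesis using True that(3) Och dW nxv dist vtw nxc1 by (auto simp: W_def doubleton_eq_iff)
      next
        case False
        hence "(u, w, k) \<in> R'" using that by blast
        hence "(u', w', k') \<in> R'" using that R'v Ov by (metis UnE)
        thus ?thesis using L1b' \<open>(u, w, k) \<in> R'\<close> that(3) by blast
      qed
    qed
    have G2a: "(c0, w, 1) \<in> Ol \<union> R' \<and> \<not> col c0 w" if "w \<in> S" "E c0 w" "w \<noteq> c1" for w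
    proof (cases "w = v")
      case True
      hence "c0 = nx" using c0v that by simp
      thus ?thesis using True Och dist by (auto simp: col_def)
    next
      case False
      thus ?thesis using L2a'[of w] that by (auto simp: col_def S'_def)
    qed
    have G2b: "(c1, w, 1) \<in> Ol \<union> R' \<and> col c1 w" if "w \<in> S" "E c1 w" "w \<noteq> c0" for w
    proof (cases "w = v")
      case True
      thus ?thesis using Och by (auto simp: col_def)
    next
      case False
      thus ?thesis using L2b'[of w] that by (auto simp: col_def S'_def)
    qed
    have G4: "t u < t w" if "(u, w, 2) \<in> Ol \<union> R'" for u w
    proof (cases "(u, w, 2) \<in> Ol")
      case True
      hence "u = v" "w \<noteq> v" using Och vtw by auto
      thus ?thesis by (simp add: t_def)
    next
      case False
      hence "(u, w, 2) \<in> R'" using that by blast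
      thus ?thesis using R'S' L4' by (auto simp: t_def)
    qed
    have colag: "col x y = col' x y \<and> col y x = col' y x" if "x \<noteq> v" "y \<noteq> v" for x y
      using that by (simp add: col_def)
    have G3f: "full (Ol \<union> R') col x" if x: "x \<in> S - {c0, c1}" "x \<notin> set C" for x
    proof -
      have xv: "x \<noteq> v" using x HC by auto
      have xS': "x \<in> S' - {c0, c1}" using x xv by (auto simp: S'_def)
      show ?thesis
      proof (cases "x \<in> set C'")
        case False
        then obtain p B g Rs b A where F: "cl x p = p # B @ g # Rs @ b # A" "(p, x, 2) \<in> R'" "lab R' col' x B g Rs b A"
          using L3f'[OF xS'] by (auto simp: full_def)
        have nvx: "\<not> E x v"
        proof
          assume "E x v"
          hence "x \<in> set W" using sW x Esym by (auto simp: nb_def)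
          moreover have "set W \<subseteq> set C'" using nxin setP setC' by (auto simp: W_def)
          ultimately show False using False by auto
        qed
        have Exp: "E x p" using F(2) L0' Esym by blast
        have "\<forall>y \<in> set (B @ g # Rs @ b # A). y \<noteq> v"
        proof
          fix y assume "y \<in> set (B @ g # Rs @ b # A)"
          hence "y \<in> set (cl x p)" using F(1) by simp
          hence "E x y" using cl_mem[OF Exp] by simp
          thus "y \<noteq> v" using nvx by auto
        qed
        hence "lab (Ol \<union> R') col x B g Rs b A" using lab_mono[OF F(3), of "Ol \<union> R'" col] colag xv by auto
        thus ?thesis using F unfolding full_def by blast
      next
        case True
        hence xtw: "x \<in> set tw" using x setC setC' by auto
        then obtain t1 t2 where tt: "tw = t1 @ x # t2" by (metis split_list)
        have Wsp: "W = (c1 # t1) @ x # (t2 @ [nx])" using tt by (simp add: W_def)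
        define a s where "a = last (c1 # t1)" and "s = hd (t2 @ [nx])"
        have "(a, x) \<in> pp W" "(x, s) \<in> pp W" using pp_split_mid[of "c1 # t1" "t2 @ [nx]" x] Wsp by (auto simp: a_def s_def)
        hence ax: "(a, x) \<in> cp C'" and xs: "(x, s) \<in> cp C'" using cpC' by auto
        obtain L where L: "cl x a = L @ [v]" "L \<noteq> []" "last L = s" "set L = nb S' x" using FA[OF xtw ax xs] by blast
        obtain B g Rs b A zs where Pt: "cl x a = (B @ g # Rs @ b # A) @ zs" "last (B @ g # Rs @ b # A) = s"
          "set (B @ g # Rs @ b # A) = nb S' x" "lab R' col' x B g Rs b A"
          using L3p'[OF xS' ax xs] by (auto simp: part_def)
        have Exa: "E x a"
        proof -
          have axW: "(a, x) \<in> pp W" using \<open>(a, x) \<in> pp W\<close> .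
          have Eva: "E v a" and Evx: "E v x" using EvW pp_mem[OF axW] by auto
          have xr: "x = rot v a" using consW axW by blast
          have "rot x v = a" using tri[OF Esym[OF Eva]] xr by simp
          thus ?thesis using rot_nbr[OF Esym[OF Evx]] by simp
        qed
        have "B @ g # Rs @ b # A = L"
          using prefix_last_unique[of "B @ g # Rs @ b # A" zs L "[v]"] Pt L cl_distinct[OF Exa] by auto
        hence "cl x a = (B @ g # Rs @ b # A) @ [v]" using L by simp
        hence clxv: "cl x v = v # B @ g # Rs @ b # A"
          using cl_rot_split[OF Exa, of "B @ g # Rs @ b # A" v "[]"] by simp
        have "\<forall>y \<in> set (B @ g # Rs @ b # A). y \<noteq> v" using Pt(3) by (auto simp: nb_def S'_def)
        hence "lab (Ol \<union> R') col x B g Rs b A" using lab_mono[OF Pt(4), of "Ol \<union> R'" col] colag xv by auto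
        moreover have "(v, x, 2) \<in> Ol \<union> R'" using Och xtw by auto
        ultimately show ?thesis using clxv unfolding full_def by blast
      qed
    qed
    have G3p: "part S (Ol \<union> R') col x a s"
      if x: "x \<in> S - {c0, c1}" and ax: "(a, x) \<in> cp C" and xs: "(x, s) \<in> cp C" for x a s
    proof -
      consider "x = v" | "x = nx" "x \<noteq> v" | "x \<noteq> v" "x \<noteq> nx" by blast
      thus ?thesis
      proof cases
        case 1
        have "(c1, v) \<in> cp C" "(v, nx) \<in> cp C" using cpC by auto
        hence as: "a = c1" "s = nx" using cp_fun1[OF dC] cp_fun2[OF dC] ax xs 1 by blast+
        have "cl v c1 = ([] @ c1 # tw @ nx # []) @ zs" using clv by (simp add: W_def)
        moreover have "last ([] @ c1 # tw @ nx # []) = nx" by simp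
        moreover have "set ([] @ c1 # tw @ nx # []) = nb S v" using sW by (simp add: W_def)
        moreover have "lab (Ol \<union> R') col v [] c1 tw nx []"
          using Och nxc1 by (auto simp: lab_def col_def)
        ultimately show ?thesis unfolding part_def using 1 as by blast
      next
        case 2
        have "(v, nx) \<in> cp C" using cpC by auto
        hence av: "a = v" using cp_fun1[OF dC] ax 2 by blast
        have "nx \<noteq> c0" using x 2 by auto
        hence xs': "(nx, s) \<in> cp C'" using FB3 xs 2 by blast
        define a' where "a' = last (c1 # tw)"
        have "(a', nx) \<in> pp W" using pp_last[of "c1 # tw" nx] by (simp add: W_def a'_def)
        hence ax': "(a', nx) \<in> cp C'" using cpC' by auto
        have xS': "nx \<in> S' - {c0, c1}" using x 2 by (auto simp: S'_def)
        obtain B g Rs b A zs where Pt: "cl nx a' = (B @ g # Rs @ b # A) @ zs" "last (B @ g # Rs @ b # A) = s"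
          "set (B @ g # Rs @ b # A) = nb S' nx" "lab R' col' nx B g Rs b A"
          using L3p'[OF xS' ax' xs'] by (auto simp: part_def)
        have nvM: "v \<notin> set (B @ g # Rs @ b # A)" using Pt(3) by (auto simp: nb_def S'_def)
        obtain zs' where clnx: "cl nx v = v # (B @ g # Rs @ b # A) @ zs'"
          using prepend[OF Evnx FB1[OF ax'] Pt(1) nvM] by blast
        have "\<forall>y \<in> set (B @ g # Rs @ b # A). y \<noteq> v" using nvM by auto
        hence "lab (Ol \<union> R') col nx B g Rs b A" using lab_mono[OF Pt(4), of "Ol \<union> R'" col] colag nxv by auto
        hence "lab (Ol \<union> R') col nx (v # B) g Rs b A"
          using lab_consB[of "Ol \<union> R'" col nx B g Rs b A v] Och nxc1 by (auto simp: col_def)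
        moreover have "cl nx v = ((v # B) @ g # Rs @ b # A) @ zs'" using clnx by simp
        moreover have "last ((v # B) @ g # Rs @ b # A) = s" using Pt(2) by simp
        moreover have "set ((v # B) @ g # Rs @ b # A) = nb S nx"
          using Pt(3) nbS' vS Evnx by (auto simp: nb_def)
        ultimately show ?thesis unfolding part_def using av 2 by blast
      next
        case 3
        have xC: "x \<in> set C" using cp_mem[OF ax] by simp
        have xtw: "x \<notin> set tw" using xC twC by auto
        have xc1: "x \<noteq> c1" using x by auto
        have ax': "(a, x) \<in> cp C'" and xs': "(x, s) \<in> cp C'" using FD1[OF xtw 3(2) xc1 3(1)] ax xs by auto
        have xS': "x \<in> S' - {c0, c1}" using x 3 by (auto simp: S'_def)
        obtain B g Rs b A zs where Pt: "cl x a = (B @ g # Rs @ b # A) @ zs" "last (B @ g # Rs @ b # A) = s"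
          "set (B @ g # Rs @ b # A) = nb S' x" "lab R' col' x B g Rs b A"
          using L3p'[OF xS' ax' xs'] by (auto simp: part_def)
        have "\<not> E v x" using FD2[OF xC 3(2) xc1] .
        hence nbeq: "nb S' x = nb S x" using nbS' Esym by (auto simp: nb_def)
        have "\<forall>y \<in> set (B @ g # Rs @ b # A). y \<noteq> v" using Pt(3) by (auto simp: nb_def S'_def)
        hence lb: "lab (Ol \<union> R') col x B g Rs b A" using lab_mono[OF Pt(4), of "Ol \<union> R'" col] colag 3 by auto
        have "set (B @ g # Rs @ b # A) = nb S x" using Pt(3) nbeq by simp
        thus ?thesis using Pt(1,2) lb unfolding part_def by blast
      qed
    qed
    have "LAB S C (Ol \<union> R') col t"
      unfolding LAB_def C01
      apply (intro conjI)
      subgoal using G0 by blast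
      subgoal using G1a by blast
      subgoal using G1b by blast
      subgoal using G2a by blast
      subgoal using G2b by blast
      subgoal using G4 by blast
      subgoal using G3f G3p by blast
      done
    thus ?thesis unfolding Ol_def by blast
  qed
qed

end


lemma path_side:
  assumes "successively E xs" "set xs \<subseteq> T1 \<union> T2" "\<forall>p\<in>T1. \<forall>q\<in>T2. \<not> E p q" "xs \<noteq> []" "hd xs \<in> T1"
  shows "set xs \<subseteq> T1"
  using assms
proof (induction xs rule: induct_list012)
  case (3 x y zs)
  have "E x y" using 3(3) by simp
  hence "y \<in> T1" using 3 by auto
  moreover have "successively E (y # zs)" using 3(3) by simp
  ultimately have "set (y # zs) \<subseteq> T1" using 3 by auto
  thus ?case using 3 by simp
qed auto

context tg begin

lemma cl_succ: "E x a \<Longrightarrow> successively E (cl x a)"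
proof -
  assume a: "E x a"
  show ?thesis unfolding successively_conv_nth
  proof (intro allI impI)
    fix i assume i: "Suc i < length (cl x a)"
    have "cl x a ! Suc i = rot x (cl x a ! i)" using i by (simp add: cl_nth)
    moreover have "E x (cl x a ! i)" using i pow_nbr[OF a] by (simp add: cl_nth)
    ultimately show "E (cl x a ! i) (cl x a ! Suc i)" using tri_edge by simp
  qed
qed

lemma end_split:
  assumes iv: "ival S x a s" and c: "c \<in> nb S x"
    and U: "SA \<union> SB = S" and I: "SA \<inter> SB = {x, c}"
    and ne: "\<forall>p\<in>SA - {x, c}. \<forall>q\<in>SB - {x, c}. \<not> E p q"
    and aA: "a \<in> SA - {x, c}" and sB: "s \<in> SB - {x, c}"
  shows "\<exists>P Q zs. cl x a = P @ c # Q @ zs \<and> P \<noteq> [] \<and> Q \<noteq> [] \<and> set P \<subseteq> SA - {x, c} \<and>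
            set Q \<subseteq> SB - {x, c} \<and> last Q = s \<and> set (P @ c # Q) = nb S x"
proof -
  obtain ys zs where y: "cl x a = ys @ zs" "ys \<noteq> []" "last ys = s" "set ys = nb S x"
    using iv by (auto simp: ival_def)
  have Exa: "E x a" using ival_E[OF iv] .
  have dys: "distinct ys" using cl_distinct[OF Exa] y(1) by simp
  have sys: "successively E ys" using cl_succ[OF Exa] y(1) by (simp add: successively_append_iff)
  have hy: "hd ys = a" using cl_hd[OF Exa] y(1,2) by (metis hd_append2 list.sel(1))
  obtain P Q where PQ: "ys = P @ c # Q" using c y(4) by (metis split_list)
  have T: "set P \<union> set Q \<subseteq> (SA - {x, c}) \<union> (SB - {x, c})"
  proof
    fix y assume yy: "y \<in> set P \<union> set Q"
    hence "y \<in> nb S x" using y(4) PQ by auto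
    hence "y \<in> S" "y \<noteq> x" using Eirr by (auto simp: nb_def)
    moreover have "y \<noteq> c" using yy dys PQ by auto
    ultimately show "y \<in> (SA - {x, c}) \<union> (SB - {x, c})" using U by auto
  qed
  have ne2: "\<forall>p\<in>SB - {x, c}. \<forall>q\<in>SA - {x, c}. \<not> E p q" using ne Esym by blast
  have Pne: "P \<noteq> []"
  proof
    assume "P = []"
    hence "a = c" using hy PQ by simp
    thus False using aA by simp
  qed
  have hP: "hd P = a" using hy PQ Pne by simp
  have sP: "successively E P" using sys PQ by (simp add: successively_append_iff)
  have PA: "set P \<subseteq> SA - {x, c}"
    using path_side[OF sP _ ne Pne] T hP aA by auto
  have Qne: "Q \<noteq> []"
  proof
    assume "Q = []"
    hence "s = c" using y(3) PQ by simp
    thus False using sB by simp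
  qed
  have lQ: "last Q = s" using y(3) PQ Qne by simp
  have sQ: "successively E (rev Q)"
  proof -
    have "successively E (c # Q)" using sys PQ by (simp add: successively_append_iff)
    hence "successively E Q" by (cases Q) auto
    hence "successively (\<lambda>p q. E q p) Q" by (rule successively_mono) (use Esym in blast)
    thus ?thesis by simp
  qed
  have QB: "set Q \<subseteq> SB - {x, c}"
    using path_side[OF sQ _ ne2] T Qne lQ sB by (auto simp: hd_rev)
  show ?thesis
    by (rule exI[of _ P], rule exI[of _ Q], rule exI[of _ zs]) (use y PQ Pne Qne PA QB lQ in auto)
qed

lemma end_ivals:
  assumes cl: "cl x a = P @ c # Q @ zs" and Pne: "P \<noteq> []" and Qne: "Q \<noteq> []"
    and PA: "set P \<subseteq> SA - {x, c}" and QB: "set Q \<subseteq> SB - {x, c}" and lQ: "last Q = s"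
    and st: "set (P @ c # Q) = nb S x" and U: "SA \<union> SB = S" and I: "SA \<inter> SB = {x, c}"
  shows "ival SA x a c" "ival SB x c s"
proof -
  have cA: "c \<in> SA" "c \<in> SB" using I by auto
  have nbA: "nb SA x = set (P @ [c])"
  proof
    show "nb SA x \<subseteq> set (P @ [c])"
    proof
      fix y assume yA: "y \<in> nb SA x"
      hence "y \<in> nb S x" using U by (auto simp: nb_def)
      hence "y \<in> set P \<or> y = c \<or> y \<in> set Q" using st by auto
      moreover have "y \<notin> set Q" using QB yA I by (auto simp: nb_def)
      ultimately show "y \<in> set (P @ [c])" by auto
    qed
  next
    show "set (P @ [c]) \<subseteq> nb SA x" using st PA cA by (auto simp: nb_def)
  qed
  show "ival SA x a c" unfolding ival_def
    by (rule exI[of _ "P @ [c]"], rule exI[of _ "Q @ zs"]) (use cl nbA in auto)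
  have Exa: "E x a"
  proof -
    have "deg E x > 0" using cl by (metis Nil_is_append_conv cl_length length_greater_0_conv list.simps(3))
    hence "cl x a ! 0 = a" by (simp add: cl_nth)
    hence "hd P = a" using cl Pne by (simp add: hd_conv_nth nth_append)
    hence "a \<in> nb S x" using st Pne by (metis hd_in_set set_append Un_iff)
    thus ?thesis by (simp add: nb_def)
  qed
  have clc: "cl x c = c # (Q @ zs) @ P" using cl_rot_split[OF Exa, of P c "Q @ zs"] cl by simp
  have nbB: "nb SB x = set (c # Q)"
  proof
    show "nb SB x \<subseteq> set (c # Q)"
    proof
      fix y assume yB: "y \<in> nb SB x"
      hence "y \<in> nb S x" using U by (auto simp: nb_def)
      hence "y \<in> set P \<or> y = c \<or> y \<in> set Q" using st by auto
      moreover have "y \<notin> set P" using PA yB I by (auto simp: nb_def)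
      ultimately show "y \<in> set (c # Q)" by auto
    qed
  next
    show "set (c # Q) \<subseteq> nb SB x" using st QB cA by (auto simp: nb_def)
  qed
  show "ival SB x c s" unfolding ival_def
    by (rule exI[of _ "c # Q"], rule exI[of _ "zs @ P"]) (use clc nbB lQ Qne in auto)
qed

lemma chord_geom:
  assumes NT: "NT S C"
    and cpC: "cp C = pp (ci # Y @ [cj]) \<union> pp (cj # W @ [ci])"
    and cpY: "cp CY = pp (ci # Y @ [cj]) \<union> {(cj, ci)}"
    and cpW: "cp CW = pp (cj # W @ [ci]) \<union> {(ci, cj)}"
    and sC: "set C = {ci, cj} \<union> set Y \<union> set W" and sY: "set CY = {ci, cj} \<union> set Y"
    and sW: "set CW = {ci, cj} \<union> set W"
    and d: "distinct (ci # cj # Y @ W)" and dY: "distinct CY" and dW: "distinct CW"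
    and Yne: "Y \<noteq> []" and Wne: "W \<noteq> []" and lY: "2 \<le> length CY" and lW: "2 \<le> length CW"
    and U: "SY \<union> SW = S" and I: "SY \<inter> SW = {ci, cj}" and CYS: "set CY \<subseteq> SY" and CWS: "set CW \<subseteq> SW"
    and ne: "\<forall>p\<in>SY - {ci, cj}. \<forall>q\<in>SW - {ci, cj}. \<not> E p q"
    and Eij: "E ci cj"
  shows "NT SY CY" "NT SW CW"
    "\<And>a s. (a, ci) \<in> cp C \<Longrightarrow> (ci, s) \<in> cp C \<Longrightarrow> \<exists>P Q zs. cl ci a = P @ cj # Q @ zs \<and> P \<noteq> [] \<and> Q \<noteq> [] \<and>
        set P \<subseteq> SW - {ci, cj} \<and> set Q \<subseteq> SY - {ci, cj} \<and> last Q = s \<and> set (P @ cj # Q) = nb S ci \<and>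
        (a, ci) \<in> cp CW \<and> (ci, cj) \<in> cp CW \<and> (cj, ci) \<in> cp CY \<and> (ci, s) \<in> cp CY"
    "\<And>a s. (a, cj) \<in> cp C \<Longrightarrow> (cj, s) \<in> cp C \<Longrightarrow> \<exists>P Q zs. cl cj a = P @ ci # Q @ zs \<and> P \<noteq> [] \<and> Q \<noteq> [] \<and>
        set P \<subseteq> SY - {ci, cj} \<and> set Q \<subseteq> SW - {ci, cj} \<and> last Q = s \<and> set (P @ ci # Q) = nb S cj \<and>
        (a, cj) \<in> cp CY \<and> (cj, ci) \<in> cp CY \<and> (ci, cj) \<in> cp CW \<and> (cj, s) \<in> cp CW"
    "\<And>x a. x \<notin> {ci, cj} \<Longrightarrow> x \<in> SY \<Longrightarrow> ((a, x) \<in> cp C \<longleftrightarrow> (a, x) \<in> cp CY) \<and> ((x, a) \<in> cp C \<longleftrightarrow> (x, a) \<in> cp CY)"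
    "\<And>x a. x \<notin> {ci, cj} \<Longrightarrow> x \<in> SW \<Longrightarrow> ((a, x) \<in> cp C \<longleftrightarrow> (a, x) \<in> cp CW) \<and> ((x, a) \<in> cp C \<longleftrightarrow> (x, a) \<in> cp CW)"
proof -
  have dC: "distinct C" and SV: "S \<subseteq> V" and CS: "set C \<subseteq> S"
    and intS: "\<forall>x \<in> S - set C. \<forall>y. E x y \<longrightarrow> y \<in> S"
    and ivS: "\<And>a x s. (a, x) \<in> cp C \<Longrightarrow> (x, s) \<in> cp C \<Longrightarrow> ival S x a s"
    using NT by (auto simp: NT_def)
  have ij: "ci \<noteq> cj" using d by simp
  have YSY: "set Y \<subseteq> SY - {ci, cj}" using sY CYS d by auto
  have WSW: "set W \<subseteq> SW - {ci, cj}" using sW CWS d by auto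
  have ne2: "\<forall>p\<in>SW - {ci, cj}. \<forall>q\<in>SY - {ci, cj}. \<not> E p q" using ne Esym by blast
  have lW1: "(last W, ci) \<in> pp (cj # W @ [ci])"
    using pp_last[of "cj # W" ci] Wne by simp
  have lY1: "(last Y, cj) \<in> pp (ci # Y @ [cj])"
    using pp_last[of "ci # Y" cj] Yne by simp
  have hY1: "(ci, hd Y) \<in> pp (ci # Y @ [cj])" using Yne by (cases Y) auto
  have hW1: "(cj, hd W) \<in> pp (cj # W @ [ci])" using Wne by (cases W) auto
  have p1: "(last W, ci) \<in> cp C" "(ci, hd Y) \<in> cp C" "(last Y, cj) \<in> cp C" "(cj, hd W) \<in> cp C"
    unfolding cpC using lW1 lY1 hY1 hW1 by blast+
  have lWin: "last W \<in> SW - {ci, cj}" and hYin: "hd Y \<in> SY - {ci, cj}"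
    and lYin: "last Y \<in> SY - {ci, cj}" and hWin: "hd W \<in> SW - {ci, cj}"
  proof -
    have "last W \<in> set W" "hd W \<in> set W" "last Y \<in> set Y" "hd Y \<in> set Y" using Yne Wne by auto
    thus "last W \<in> SW - {ci, cj}" "hd Y \<in> SY - {ci, cj}" "last Y \<in> SY - {ci, cj}" "hd W \<in> SW - {ci, cj}"
      using WSW YSY by blast+
  qed
  have cjS: "cj \<in> nb S ci" and ciS: "ci \<in> nb S cj" using Eij Esym CS sC by (auto simp: nb_def)
  have UW: "SW \<union> SY = S" and IW: "SW \<inter> SY = {ci, cj}" using U I by auto
  have I': "SY \<inter> SW = {cj, ci}" and IW': "SW \<inter> SY = {cj, ci}" using I by auto
  have ne': "\<forall>p\<in>SY - {cj, ci}. \<forall>q\<in>SW - {cj, ci}. \<not> E p q" using ne by (simp add: insert_commute)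
  have ne2': "\<forall>p\<in>SW - {cj, ci}. \<forall>q\<in>SY - {cj, ci}. \<not> E p q" using ne2 by (simp add: insert_commute)
  obtain Pi Qi zi where Di: "cl ci (last W) = Pi @ cj # Qi @ zi" "Pi \<noteq> []" "Qi \<noteq> []"
    "set Pi \<subseteq> SW - {ci, cj}" "set Qi \<subseteq> SY - {ci, cj}" "last Qi = hd Y" "set (Pi @ cj # Qi) = nb S ci"
    using end_split[OF ivS[OF p1(1,2)] cjS UW IW ne2 lWin hYin] by blast
  obtain Pj Qj zj where Dj: "cl cj (last Y) = Pj @ ci # Qj @ zj" "Pj \<noteq> []" "Qj \<noteq> []"
    "set Pj \<subseteq> SY - {ci, cj}" "set Qj \<subseteq> SW - {ci, cj}" "last Qj = hd W" "set (Pj @ ci # Qj) = nb S cj"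
    using end_split[OF ivS[OF p1(3,4)] ciS U I' ne'] lYin hWin by (auto simp: insert_commute)
  have ivi: "ival SW ci (last W) cj" "ival SY ci cj (hd Y)"
    using end_ivals[OF Di(1-3) _ _ Di(6,7) UW IW] Di(4,5) by auto
  have ivj: "ival SY cj (last Y) ci" "ival SW cj ci (hd W)"
    using end_ivals[OF Dj(1-3) _ _ Dj(6,7) U I'] Dj(4,5) by (auto simp: insert_commute)
  have cY1: "(cj, ci) \<in> cp CY" "(ci, hd Y) \<in> cp CY" "(last Y, cj) \<in> cp CY"
    unfolding cpY using lY1 hY1 by blast+
  have cW1: "(ci, cj) \<in> cp CW" "(cj, hd W) \<in> cp CW" "(last W, ci) \<in> cp CW"
    unfolding cpW using lW1 hW1 by blast+
  have ppY: "(p, q) \<in> pp (ci # Y @ [cj]) \<Longrightarrow> p \<in> {ci, cj} \<union> set Y \<and> q \<in> {ci, cj} \<union> set Y" for p q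
    using pp_mem[of p q "ci # Y @ [cj]"] by auto
  have ppW: "(p, q) \<in> pp (cj # W @ [ci]) \<Longrightarrow> p \<in> {ci, cj} \<union> set W \<and> q \<in> {ci, cj} \<union> set W" for p q
    using pp_mem[of p q "cj # W @ [ci]"] by auto
  show cpYeq: "\<And>x a. x \<notin> {ci, cj} \<Longrightarrow> x \<in> SY \<Longrightarrow> ((a, x) \<in> cp C \<longleftrightarrow> (a, x) \<in> cp CY) \<and> ((x, a) \<in> cp C \<longleftrightarrow> (x, a) \<in> cp CY)"
  proof -
    fix x a assume x: "x \<notin> {ci, cj}" "x \<in> SY"
    have "x \<notin> set W" using x WSW I by auto
    hence "(a, x) \<notin> pp (cj # W @ [ci])" "(x, a) \<notin> pp (cj # W @ [ci])" using ppW x by blast+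
    thus "((a, x) \<in> cp C \<longleftrightarrow> (a, x) \<in> cp CY) \<and> ((x, a) \<in> cp C \<longleftrightarrow> (x, a) \<in> cp CY)"
      using cpC cpY x by auto
  qed
  show cpWeq: "\<And>x a. x \<notin> {ci, cj} \<Longrightarrow> x \<in> SW \<Longrightarrow> ((a, x) \<in> cp C \<longleftrightarrow> (a, x) \<in> cp CW) \<and> ((x, a) \<in> cp C \<longleftrightarrow> (x, a) \<in> cp CW)"
  proof -
    fix x a assume x: "x \<notin> {ci, cj}" "x \<in> SW"
    have "x \<notin> set Y" using x YSY I by auto
    hence "(a, x) \<notin> pp (ci # Y @ [cj])" "(x, a) \<notin> pp (ci # Y @ [cj])" using ppY x by blast+
    thus "((a, x) \<in> cp C \<longleftrightarrow> (a, x) \<in> cp CW) \<and> ((x, a) \<in> cp C \<longleftrightarrow> (x, a) \<in> cp CW)"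
      using cpC cpW x by auto
  qed
  show "\<And>a s. (a, ci) \<in> cp C \<Longrightarrow> (ci, s) \<in> cp C \<Longrightarrow> \<exists>P Q zs. cl ci a = P @ cj # Q @ zs \<and> P \<noteq> [] \<and> Q \<noteq> [] \<and>
        set P \<subseteq> SW - {ci, cj} \<and> set Q \<subseteq> SY - {ci, cj} \<and> last Q = s \<and> set (P @ cj # Q) = nb S ci \<and>
        (a, ci) \<in> cp CW \<and> (ci, cj) \<in> cp CW \<and> (cj, ci) \<in> cp CY \<and> (ci, s) \<in> cp CY"
  proof -
    fix a s assume "(a, ci) \<in> cp C" "(ci, s) \<in> cp C"
    hence "a = last W" "s = hd Y" using cp_fun1[OF dC _ p1(1)] cp_fun2[OF dC _ p1(2)] by auto
    thus "?thesis a s" using Di cY1 cW1 by blast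
  qed
  show "\<And>a s. (a, cj) \<in> cp C \<Longrightarrow> (cj, s) \<in> cp C \<Longrightarrow> \<exists>P Q zs. cl cj a = P @ ci # Q @ zs \<and> P \<noteq> [] \<and> Q \<noteq> [] \<and>
        set P \<subseteq> SY - {ci, cj} \<and> set Q \<subseteq> SW - {ci, cj} \<and> last Q = s \<and> set (P @ ci # Q) = nb S cj \<and>
        (a, cj) \<in> cp CY \<and> (cj, ci) \<in> cp CY \<and> (ci, cj) \<in> cp CW \<and> (cj, s) \<in> cp CW"
  proof -
    fix a s assume "(a, cj) \<in> cp C" "(cj, s) \<in> cp C"
    hence "a = last Y" "s = hd W" using cp_fun1[OF dC _ p1(3)] cp_fun2[OF dC _ p1(4)] by auto
    thus "?thesis a s" using Dj cY1 cW1 by blast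
  qed
  have nbeq: "nb S' x = nb S x" if "x \<in> S' - {ci, cj}" "S' \<subseteq> S" "\<forall>y \<in> S - S'. y \<notin> {ci, cj} \<longrightarrow> \<not> E x y"
    "{ci, cj} \<subseteq> S'" for x S'
    using that by (auto simp: nb_def)
  show "NT SY CY"
    unfolding NT_def
  proof (intro conjI allI impI ballI)
    show "SY \<subseteq> V" using U SV by auto
    show "distinct CY" "2 \<le> length CY" "set CY \<subseteq> SY" using dY lY CYS by auto
  next
    fix x y assume x: "x \<in> SY - set CY" and xy: "E x y"
    have xe: "x \<notin> {ci, cj}" using x sY by auto
    have "x \<notin> set C"
    proof
      assume "x \<in> set C"
      hence "x \<in> set W" using x sC sY by auto
      thus False using WSW x I by auto
    qed
    hence yS: "y \<in> S" using intS x xy U by auto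
    show "y \<in> SY"
    proof (rule ccontr)
      assume "y \<notin> SY"
      hence "y \<in> SW - {ci, cj}" using yS U I by auto
      thus False using ne x xe xy by auto
    qed
  next
    fix a x s assume ax: "(a, x) \<in> cp CY" and xs: "(x, s) \<in> cp CY"
    consider "x = ci" | "x = cj" | "x \<notin> {ci, cj}" by blast
    thus "ival SY x a s"
    proof cases
      case 1
      have "a = cj" "s = hd Y" using cp_fun1[OF dY _ cY1(1)] cp_fun2[OF dY _ cY1(2)] ax xs 1 by auto
      thus ?thesis using ivi 1 by simp
    next
      case 2
      have "a = last Y" "s = ci" using cp_fun1[OF dY _ cY1(3)] cp_fun2[OF dY _ cY1(1)] ax xs 2 by auto
      thus ?thesis using ivj 2 by simp
    next
      case 3
      have xSY: "x \<in> SY" using cp_mem[OF ax] CYS by auto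
      have "(a, x) \<in> cp C" "(x, s) \<in> cp C" using cpYeq[OF 3 xSY] ax xs by auto
      hence iv: "ival S x a s" using ivS by blast
      have "nb SY x = nb S x"
      proof -
        have "\<forall>y \<in> S - SY. y \<notin> {ci, cj} \<longrightarrow> \<not> E x y" using ne 3 xSY U by auto
        thus ?thesis using nbeq[of x SY] 3 xSY U I by auto
      qed
      thus ?thesis using iv by (simp add: ival_def)
    qed
  qed
  show "NT SW CW"
    unfolding NT_def
  proof (intro conjI allI impI ballI)
    show "SW \<subseteq> V" using U SV by auto
    show "distinct CW" "2 \<le> length CW" "set CW \<subseteq> SW" using dW lW CWS by auto
  next
    fix x y assume x: "x \<in> SW - set CW" and xy: "E x y"
    have xe: "x \<notin> {ci, cj}" using x sW by auto
    have "x \<notin> set C"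
    proof
      assume "x \<in> set C"
      hence "x \<in> set Y" using x sC sW by auto
      thus False using YSY x I by auto
    qed
    hence yS: "y \<in> S" using intS x xy U by auto
    show "y \<in> SW"
    proof (rule ccontr)
      assume "y \<notin> SW"
      hence "y \<in> SY - {ci, cj}" using yS U I by auto
      thus False using ne2 x xe xy by auto
    qed
  next
    fix a x s assume ax: "(a, x) \<in> cp CW" and xs: "(x, s) \<in> cp CW"
    consider "x = ci" | "x = cj" | "x \<notin> {ci, cj}" by blast
    thus "ival SW x a s"
    proof cases
      case 1
      have "a = last W" "s = cj" using cp_fun1[OF dW _ cW1(3)] cp_fun2[OF dW _ cW1(1)] ax xs 1 by auto
      thus ?thesis using ivi 1 by simp
    next
      case 2
      have "a = ci" "s = hd W" using cp_fun1[OF dW _ cW1(1)] cp_fun2[OF dW _ cW1(2)] ax xs 2 by auto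
      thus ?thesis using ivj 2 by simp
    next
      case 3
      have xSW: "x \<in> SW" using cp_mem[OF ax] CWS by auto
      have "(a, x) \<in> cp C" "(x, s) \<in> cp C" using cpWeq[OF 3 xSW] ax xs by auto
      hence iv: "ival S x a s" using ivS by blast
      have "nb SW x = nb S x"
      proof -
        have "\<forall>y \<in> S - SW. y \<notin> {ci, cj} \<longrightarrow> \<not> E x y" using ne2 3 xSW U by auto
        thus ?thesis using nbeq[of x SW] 3 xSW U I by auto
      qed
      thus ?thesis using iv by (simp add: ival_def)
    qed
  qed
qed

lemma cl_hd': "cl x a \<noteq> [] \<Longrightarrow> hd (cl x a) = a"
proof -
  assume "cl x a \<noteq> []"
  hence "deg E x > 0" by (metis cl_length length_greater_0_conv)
  thus ?thesis using \<open>cl x a \<noteq> []\<close> by (simp add: hd_conv_nth cl_nth)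
qed

lemma part_E: "part S R col x a s \<Longrightarrow> E x a"
proof -
  assume "part S R col x a s"
  then obtain B g Rs b A zs where M: "cl x a = (B @ g # Rs @ b # A) @ zs" "set (B @ g # Rs @ b # A) = nb S x"
    unfolding part_def by blast
  have "hd (cl x a) = a" using cl_hd'[of x a] M(1) by simp
  hence "hd (B @ g # Rs @ b # A) = a" using M(1) by (metis hd_append2 list.simps(3) Nil_is_append_conv)
  hence "a \<in> set (B @ g # Rs @ b # A)" by (metis list.set_sel(1) list.simps(3) Nil_is_append_conv)
  hence "a \<in> nb S x" unfolding M(2)[symmetric] .
  thus ?thesis by (simp add: nb_def)
qed

lemma part_extA:
  assumes pt: "part S1 R col x a c" and cl: "cl x a = P @ c # Q @ zs" and st: "set (P @ c # Q) = nb S x"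
    and Qne: "Q \<noteq> []" and lQ: "last Q = s" and QA: "\<forall>y\<in>set Q. (x, y, 1) \<in> R \<and> col x y"
  shows "part S R col x a s"
proof -
  have Exa: "E x a" using part_E[OF pt] .
  obtain B g Rs b A zs1 where M: "cl x a = (B @ g # Rs @ b # A) @ zs1" "last (B @ g # Rs @ b # A) = c"
    "lab R col x B g Rs b A" using pt by (auto simp: part_def)
  have "B @ g # Rs @ b # A = P @ [c]"
    using prefix_last_unique[of "B @ g # Rs @ b # A" zs1 "P @ [c]" "Q @ zs"] M cl cl_distinct[OF Exa] by auto
  hence "cl x a = (B @ g # Rs @ b # (A @ Q)) @ zs" using cl by simp
  moreover have "last (B @ g # Rs @ b # (A @ Q)) = s" using lQ Qne by simp
  moreover have "set (B @ g # Rs @ b # (A @ Q)) = nb S x" using st \<open>B @ g # Rs @ b # A = P @ [c]\<close>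
    by (metis append.assoc append_Cons append_Nil set_append)
  moreover have "lab R col x B g Rs b (A @ Q)" using lab_appA[OF M(3) QA] .
  ultimately show ?thesis unfolding part_def by blast
qed

lemma part_extB:
  assumes pt: "part S1 R col x c s" and cl: "cl x a = P @ c # Q @ zs" and st: "set (P @ c # Q) = nb S x"
    and lQ: "last (c # Q) = s" and PB: "\<forall>y\<in>set P. (x, y, 1) \<in> R \<and> \<not> col x y" and Exa: "E x a"
  shows "part S R col x a s"
proof -
  have Exc: "E x c" using part_E[OF pt] .
  have clc: "cl x c = (c # Q) @ (zs @ P)" using cl_rot_split[OF Exa cl] by simp
  obtain B g Rs b A zs1 where M: "cl x c = (B @ g # Rs @ b # A) @ zs1" "last (B @ g # Rs @ b # A) = s"
    "lab R col x B g Rs b A" using pt by (auto simp: part_def)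
  have eq: "B @ g # Rs @ b # A = c # Q"
    using prefix_last_unique[of "B @ g # Rs @ b # A" zs1 "c # Q" "zs @ P"] M clc cl_distinct[OF Exc] lQ by auto
  hence "cl x a = ((P @ B) @ g # Rs @ b # A) @ zs" using cl by simp
  moreover have "last ((P @ B) @ g # Rs @ b # A) = s" using M(2) by simp
  moreover have "set ((P @ B) @ g # Rs @ b # A) = nb S x" using st eq by (metis append.assoc set_append)
  moreover have "lab R col x (P @ B) g Rs b A" using lab_appB[OF M(3) PB] .
  ultimately show ?thesis unfolding part_def by blast
qed

lemma part_mono:
  assumes "part S' R col x a s" "R \<subseteq> R'" "nb S' x = nb S x"
    and "\<forall>y \<in> nb S' x. col' x y = col x y \<and> col' y x = col y x"
  shows "part S R' col' x a s"
proof -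
  obtain B g Rs b A zs where M: "cl x a = (B @ g # Rs @ b # A) @ zs" "last (B @ g # Rs @ b # A) = s"
    "set (B @ g # Rs @ b # A) = nb S' x" "lab R col x B g Rs b A" using assms(1) by (auto simp: part_def)
  have ag: "\<forall>y\<in>set (B @ g # Rs @ b # A). col' x y = col x y \<and> col' y x = col y x"
    unfolding M(3) using assms(4) .
  have "lab R' col' x B g Rs b A" using lab_mono[OF M(4) assms(2) ag] .
  moreover have "set (B @ g # Rs @ b # A) = nb S x" using M(3) assms(3) by simp
  ultimately show ?thesis using M(1,2) unfolding part_def by blast
qed

lemma full_mono:
  assumes "full R col x" "R \<subseteq> R'" "\<forall>y. E x y \<longrightarrow> col' x y = col x y \<and> col' y x = col y x"
    and RE: "\<forall>u w k. (u, w, k) \<in> R \<longrightarrow> E u w"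
  shows "full R' col' x"
proof -
  obtain p B g Rs b A where F: "cl x p = p # B @ g # Rs @ b # A" "(p, x, 2) \<in> R" "lab R col x B g Rs b A"
    using assms(1) by (auto simp: full_def)
  have Exp: "E x p" using RE F(2) Esym by blast
  have "\<forall>y \<in> set (B @ g # Rs @ b # A). E x y" using cl_mem[OF Exp] F(1) by auto
  hence "lab R' col' x B g Rs b A" using lab_mono[OF F(3) assms(2)] assms(3) by auto
  thus ?thesis using F assms(2) unfolding full_def by blast
qed

lemma LAB_D:
  assumes "LAB S C R col t"
  shows "\<And>u w k. (u, w, k) \<in> R \<Longrightarrow> E u w \<and> u \<in> S \<and> w \<in> S \<and> {u, w} \<noteq> {C ! 0, C ! 1} \<and> (k = 1 \<or> k = 2)"
    and "\<And>u w. E u w \<Longrightarrow> u \<in> S \<Longrightarrow> w \<in> S \<Longrightarrow> {u, w} \<noteq> {C ! 0, C ! 1} \<Longrightarrow> (\<exists>k. (u, w, k) \<in> R \<or> (w, u, k) \<in> R)"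
    and "\<And>u w k u' w' k'. (u, w, k) \<in> R \<Longrightarrow> (u', w', k') \<in> R \<Longrightarrow> {u, w} = {u', w'} \<Longrightarrow> u = u' \<and> w = w' \<and> k = k'"
    and "\<And>w. w \<in> S \<Longrightarrow> E (C ! 0) w \<Longrightarrow> w \<noteq> C ! 1 \<Longrightarrow> (C ! 0, w, 1) \<in> R \<and> \<not> col (C ! 0) w"
    and "\<And>w. w \<in> S \<Longrightarrow> E (C ! 1) w \<Longrightarrow> w \<noteq> C ! 0 \<Longrightarrow> (C ! 1, w, 1) \<in> R \<and> col (C ! 1) w"
    and "\<And>u w. (u, w, 2) \<in> R \<Longrightarrow> t u < t w"
    and "\<And>x. x \<in> S - {C ! 0, C ! 1} \<Longrightarrow> x \<notin> set C \<Longrightarrow> full R col x"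
    and "\<And>x a s. x \<in> S - {C ! 0, C ! 1} \<Longrightarrow> (a, x) \<in> cp C \<Longrightarrow> (x, s) \<in> cp C \<Longrightarrow> part S R col x a s"
proof -
  note L = assms[unfolded LAB_def]
  show "\<And>u w k. (u, w, k) \<in> R \<Longrightarrow> E u w \<and> u \<in> S \<and> w \<in> S \<and> {u, w} \<noteq> {C ! 0, C ! 1} \<and> (k = 1 \<or> k = 2)"
    using L[THEN conjunct1] by blast
  show "\<And>u w. E u w \<Longrightarrow> u \<in> S \<Longrightarrow> w \<in> S \<Longrightarrow> {u, w} \<noteq> {C ! 0, C ! 1} \<Longrightarrow> (\<exists>k. (u, w, k) \<in> R \<or> (w, u, k) \<in> R)"
    using L[THEN conjunct2, THEN conjunct1] by blast
  show "\<And>u w k u' w' k'. (u, w, k) \<in> R \<Longrightarrow> (u', w', k') \<in> R \<Longrightarrow> {u, w} = {u', w'} \<Longrightarrow> u = u' \<and> w = w' \<and> k = k'"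
    using L[THEN conjunct2, THEN conjunct2, THEN conjunct1] by blast
  show "\<And>w. w \<in> S \<Longrightarrow> E (C ! 0) w \<Longrightarrow> w \<noteq> C ! 1 \<Longrightarrow> (C ! 0, w, 1) \<in> R \<and> \<not> col (C ! 0) w"
    using L[THEN conjunct2, THEN conjunct2, THEN conjunct2, THEN conjunct1] by blast
  show "\<And>w. w \<in> S \<Longrightarrow> E (C ! 1) w \<Longrightarrow> w \<noteq> C ! 0 \<Longrightarrow> (C ! 1, w, 1) \<in> R \<and> col (C ! 1) w"
    using L[THEN conjunct2, THEN conjunct2, THEN conjunct2, THEN conjunct2, THEN conjunct1] by blast
  show "\<And>u w. (u, w, 2) \<in> R \<Longrightarrow> t u < t w"
    using L[THEN conjunct2, THEN conjunct2, THEN conjunct2, THEN conjunct2, THEN conjunct2, THEN conjunct1] by blast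
  show "\<And>x. x \<in> S - {C ! 0, C ! 1} \<Longrightarrow> x \<notin> set C \<Longrightarrow> full R col x"
    using L[THEN conjunct2, THEN conjunct2, THEN conjunct2, THEN conjunct2, THEN conjunct2, THEN conjunct2] by blast
  show "\<And>x a s. x \<in> S - {C ! 0, C ! 1} \<Longrightarrow> (a, x) \<in> cp C \<Longrightarrow> (x, s) \<in> cp C \<Longrightarrow> part S R col x a s"
    using L[THEN conjunct2, THEN conjunct2, THEN conjunct2, THEN conjunct2, THEN conjunct2, THEN conjunct2] by blast
qed

lemma split_LAB:
  assumes NT1: "NT S1 C1" and NT2: "NT S2 C2"
    and LAB1: "LAB S1 C1 R1 col1 t1" and LAB2: "LAB S2 C2 R2 col2 t2"
    and U: "S1 \<union> S2 = S" and I: "S1 \<inter> S2 = {C2 ! 0, C2 ! 1}"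
    and ne: "\<forall>p\<in>S1 - {C2 ! 0, C2 ! 1}. \<forall>q\<in>S2 - {C2 ! 0, C2 ! 1}. \<not> E p q"
    and C10: "C1 ! 0 = C ! 0" and C11: "C1 ! 1 = C ! 1"
    and sC: "set C = set C1 \<union> set C2"
    and z0: "C ! 0 \<notin> S2 \<or> C ! 0 = C2 ! 0" and z1: "C ! 1 \<notin> S2 \<or> C ! 1 = C2 ! 1"
    and cp1: "\<And>x a. x \<in> S1 - {C2 ! 0, C2 ! 1} \<Longrightarrow> ((a, x) \<in> cp C \<longleftrightarrow> (a, x) \<in> cp C1) \<and> ((x, a) \<in> cp C \<longleftrightarrow> (x, a) \<in> cp C1)"
    and cp2: "\<And>x a. x \<in> S2 - {C2 ! 0, C2 ! 1} \<Longrightarrow> ((a, x) \<in> cp C \<longleftrightarrow> (a, x) \<in> cp C2) \<and> ((x, a) \<in> cp C \<longleftrightarrow> (x, a) \<in> cp C2)"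
    and endG: "\<And>x a s. x \<in> {C2 ! 0, C2 ! 1} - {C ! 0, C ! 1} \<Longrightarrow> (a, x) \<in> cp C \<Longrightarrow> (x, s) \<in> cp C \<Longrightarrow>
       \<exists>P c Q zs. cl x a = P @ c # Q @ zs \<and> P \<noteq> [] \<and> Q \<noteq> [] \<and> last Q = s \<and> set (P @ c # Q) = nb S x \<and>
         ((x = C2 ! 1 \<and> (a, x) \<in> cp C1 \<and> (x, c) \<in> cp C1 \<and> set Q \<subseteq> S2 - {C2 ! 0, C2 ! 1}) \<or>
          (x = C2 ! 0 \<and> (c, x) \<in> cp C1 \<and> (x, s) \<in> cp C1 \<and> set P \<subseteq> S2 - {C2 ! 0, C2 ! 1}))"
  shows "\<exists>col t. LAB S C (R1 \<union> R2) col t"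
proof -
  define e0 e1 c0 c1 where "e0 = C2 ! 0" and "e1 = C2 ! 1" and "c0 = C ! 0" and "c1 = C ! 1"
  define col where "col u w = (if u \<in> S1 \<and> w \<in> S1 then col1 u w else col2 u w)" for u w
  define t where "t x = (if x \<in> S1 then t1 x else t2 x)" for x
  define R where "R = R1 \<union> R2"
  note L1 = LAB_D[OF LAB1, unfolded C10 C11 c0_def[symmetric] c1_def[symmetric]]
  note L2 = LAB_D[OF LAB2, unfolded e0_def[symmetric] e1_def[symmetric]]
  have I': "S1 \<inter> S2 = {e0, e1}" using I by (simp add: e0_def e1_def)
  have ne': "\<forall>p\<in>S1 - {e0, e1}. \<forall>q\<in>S2 - {e0, e1}. \<not> E p q" using ne by (simp add: e0_def e1_def)
  have ne2: "\<And>p q. p \<in> S1 - {e0, e1} \<Longrightarrow> q \<in> S2 - {e0, e1} \<Longrightarrow> \<not> E q p" using ne' Esym by blast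
  have l2: "2 \<le> length C2" and dC2: "distinct C2" using NT2 by (auto simp: NT_def)
  have "C2 \<noteq> []" using l2 by auto
  hence e01: "e0 \<noteq> e1" using nth_eq_iff_index_eq[OF dC2, of 0 1] l2 by (simp add: e0_def e1_def)
  have l2': "0 < length C2" "1 < length C2" using l2 by auto
  have eC2: "e0 \<in> set C2" "e1 \<in> set C2" unfolding e0_def e1_def by (rule nth_mem, fact l2')+
  have C1S1: "set C1 \<subseteq> S1" and C2S2: "set C2 \<subseteq> S2" using NT1 NT2 by (auto simp: NT_def)
  have eS: "e0 \<in> S1" "e1 \<in> S1" "e0 \<in> S2" "e1 \<in> S2" using I' by auto
  have l1: "2 \<le> length C1" using NT1 by (auto simp: NT_def)
  have l1': "0 < length C1" "1 < length C1" using l1 by auto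
  have "C1 ! 0 \<in> set C1" "C1 ! 1 \<in> set C1" by (rule nth_mem, fact l1')+
  hence cS1: "c0 \<in> S1" "c1 \<in> S1" using C1S1 C10 C11 by (auto simp: c0_def c1_def)
  have z0': "c0 \<notin> S2 \<or> c0 = e0" and z1': "c1 \<notin> S2 \<or> c1 = e1" using z0 z1 by (auto simp: c0_def c1_def e0_def e1_def)
  have R2ends: "u \<notin> {e0, e1} \<and> w \<notin> {e0, e1}" if "(u, w, 2) \<in> R2" for u w
  proof -
    have a: "E u w" "u \<in> S2" "w \<in> S2" "{u, w} \<noteq> {e0, e1}" using L2(1)[OF that] by auto
    have "u \<noteq> e0"
    proof
      assume "u = e0"
      hence "w \<noteq> e1" using a(4) by auto
      hence "(e0, w, 1) \<in> R2" using L2(4)[OF a(3)] a(1) \<open>u = e0\<close> by auto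
      thus False using L2(3)[OF that] \<open>u = e0\<close> by fastforce
    qed
    moreover have "u \<noteq> e1"
    proof
      assume "u = e1"
      hence "w \<noteq> e0" using a(4) by auto
      hence "(e1, w, 1) \<in> R2" using L2(5)[OF a(3)] a(1) \<open>u = e1\<close> by auto
      thus False using L2(3)[OF that] \<open>u = e1\<close> by fastforce
    qed
    moreover have "w \<noteq> e0"
    proof
      assume "w = e0"
      hence "u \<noteq> e1" using a(4) by auto
      hence "(e0, u, 1) \<in> R2" using L2(4)[OF a(2)] a(1) Esym \<open>w = e0\<close> by auto
      thus False using L2(3)[OF that, of e0 u 1] \<open>w = e0\<close> by auto
    qed
    moreover have "w \<noteq> e1"
    proof
      assume "w = e1"
      hence "u \<noteq> e0" using a(4) by auto
      hence "(e1, u, 1) \<in> R2" using L2(5)[OF a(2)] a(1) Esym \<open>w = e1\<close> by auto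
      thus False using L2(3)[OF that, of e1 u 1] \<open>w = e1\<close> by auto
    qed
    ultimately show ?thesis by auto
  qed
  have G0: "E u w \<and> u \<in> S \<and> w \<in> S \<and> {u, w} \<noteq> {c0, c1} \<and> (k = 1 \<or> k = 2)" if "(u, w, k) \<in> R" for u w k
  proof (cases "(u, w, k) \<in> R1")
    case True thus ?thesis using L1(1)[OF True] U by auto
  next
    case False
    hence r2: "(u, w, k) \<in> R2" using that by (auto simp: R_def)
    have a: "E u w" "u \<in> S2" "w \<in> S2" "{u, w} \<noteq> {e0, e1}" "k = 1 \<or> k = 2" using L2(1)[OF r2] by auto
    have "{u, w} \<noteq> {c0, c1}"
    proof
      assume h: "{u, w} = {c0, c1}"
      have "c0 \<in> {u, w}" "c1 \<in> {u, w}" by (simp_all add: h)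
      hence "c0 \<in> S2" "c1 \<in> S2" using a(2,3) by blast+
      hence "c0 = e0" "c1 = e1" using z0' z1' by blast+
      thus False using h a(4) by simp
    qed
    thus ?thesis using a U by auto
  qed
  have G1a: "\<exists>k. (u, w, k) \<in> R \<or> (w, u, k) \<in> R" if "E u w" "u \<in> S" "w \<in> S" "{u, w} \<noteq> {c0, c1}" for u w
  proof (cases "u \<in> S1 \<and> w \<in> S1")
    case True thus ?thesis using L1(2)[OF that(1) _ _ that(4)] by (auto simp: R_def)
  next
    case False
    have "u \<in> S2 \<and> w \<in> S2 \<and> (u \<notin> {e0, e1} \<or> w \<notin> {e0, e1})"
    proof -
      { assume u: "u \<notin> S1"
        hence u2: "u \<in> S2 - {e0, e1}" using that(2) U eS by auto
        have "w \<in> S2" using ne2[of w u] u2 that(1,3) U Esym eS by auto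
        hence ?thesis using u2 by auto }
      moreover
      { assume w: "w \<notin> S1"
        hence w2: "w \<in> S2 - {e0, e1}" using that(3) U eS by auto
        have "u \<in> S2" using ne2[of u w] w2 that(1,2) U eS Esym by blast
        hence ?thesis using w2 by auto }
      ultimately show ?thesis using False by blast
    qed
    hence "{u, w} \<noteq> {e0, e1}" by auto
    thus ?thesis using L2(2)[OF that(1)] \<open>u \<in> S2 \<and> w \<in> S2 \<and> _\<close> by (auto simp: R_def)
  qed
  have G1b: "u = u' \<and> w = w' \<and> k = k'" if "(u, w, k) \<in> R" "(u', w', k') \<in> R" "{u, w} = {u', w'}" for u w k u' w' k'
  proof -
    have mix: False if "(p, q, j) \<in> R1" "(p', q', j') \<in> R2" "{p, q} = {p', q'}" for p q j p' q' j'
    proof -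
      have "p \<in> S1" "q \<in> S1" using L1(1)[OF that(1)] by auto
      moreover have b: "p' \<in> S2" "q' \<in> S2" "{p', q'} \<noteq> {e0, e1}" "E p' q'" using L2(1)[OF that(2)] by auto
      ultimately have "p' \<in> {e0, e1}" "q' \<in> {e0, e1}" using that(3) I' by (auto simp: doubleton_eq_iff)
      moreover have "p' \<noteq> q'" using b(4) Eirr by auto
      ultimately show False using b(3) by auto
    qed
    show ?thesis
    proof (cases "(u, w, k) \<in> R1")
      case True
      show ?thesis
      proof (cases "(u', w', k') \<in> R1")
        case True thus ?thesis using L1(3) \<open>(u, w, k) \<in> R1\<close> that(3) by blast
      next
        case False
        hence "(u', w', k') \<in> R2" using that(2) by (auto simp: R_def)
        thus ?thesis using mix True that(3) by blast
      qed
    next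
      case False
      hence r2: "(u, w, k) \<in> R2" using that(1) by (auto simp: R_def)
      show ?thesis
      proof (cases "(u', w', k') \<in> R1")
        case True thus ?thesis using mix r2 that(3) by (metis insert_commute doubleton_eq_iff)
      next
        case False
        hence "(u', w', k') \<in> R2" using that(2) by (auto simp: R_def)
        thus ?thesis using L2(3) r2 that(3) by blast
      qed
    qed
  qed
  have G2a: "(c0, w, 1) \<in> R \<and> \<not> col c0 w" if "w \<in> S" "E c0 w" "w \<noteq> c1" for w
  proof (cases "w \<in> S1")
    case True thus ?thesis using L1(4)[OF True that(2,3)] cS1 by (auto simp: R_def col_def)
  next
    case False
    hence w2: "w \<in> S2 - {e0, e1}" using that(1) U eS by auto
    have "c0 \<in> S2" using ne'[rule_format, of c0 w] w2 that(2) cS1 eS by blast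
    hence "c0 = e0" using z0' by auto
    moreover have "w \<noteq> e1" using w2 by auto
    ultimately show ?thesis using L2(4)[of w] w2 that(2) False by (auto simp: R_def col_def)
  qed
  have G2b: "(c1, w, 1) \<in> R \<and> col c1 w" if "w \<in> S" "E c1 w" "w \<noteq> c0" for w
  proof (cases "w \<in> S1")
    case True thus ?thesis using L1(5)[OF True that(2,3)] cS1 by (auto simp: R_def col_def)
  next
    case False
    hence w2: "w \<in> S2 - {e0, e1}" using that(1) U eS by auto
    have "c1 \<in> S2" using ne'[rule_format, of c1 w] w2 that(2) cS1 eS by blast
    hence "c1 = e1" using z1' by auto
    moreover have "w \<noteq> e0" using w2 by auto
    ultimately show ?thesis using L2(5)[of w] w2 that(2) False by (auto simp: R_def col_def)
  qed
  have G4: "t u < t w" if "(u, w, 2) \<in> R" for u w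
  proof (cases "(u, w, 2) \<in> R1")
    case True thus ?thesis using L1(1)[OF True] L1(6)[OF True] by (auto simp: t_def)
  next
    case False
    hence r2: "(u, w, 2) \<in> R2" using that by (auto simp: R_def)
    hence "u \<notin> S1" "w \<notin> S1" using R2ends[OF r2] L2(1)[OF r2] I' by auto
    thus ?thesis using L2(6)[OF r2] by (auto simp: t_def)
  qed
  have RE1: "\<forall>u w k. (u, w, k) \<in> R1 \<longrightarrow> E u w" using L1(1) by blast
  have RE2: "\<forall>u w k. (u, w, k) \<in> R2 \<longrightarrow> E u w" using L2(1) by blast
  have nbS1: "nb S1 x = nb S x" if "x \<in> S1 - {e0, e1}" for x
    using that ne' U eS by (auto simp: nb_def)
  have nbS2: "nb S2 x = nb S x" if "x \<in> S2 - {e0, e1}" for x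
    using that ne2 U eS by (auto simp: nb_def)
  have G3f: "full R col x" if x: "x \<in> S - {c0, c1}" "x \<notin> set C" for x
  proof -
    have xe: "x \<notin> {e0, e1}" using x eC2 sC by auto
    show ?thesis
    proof (cases "x \<in> S1")
      case True
      have "x \<notin> set C1" using x sC by auto
      hence "full R1 col1 x" using L1(7) x True by auto
      moreover have "\<forall>y. E x y \<longrightarrow> col x y = col1 x y \<and> col y x = col1 y x"
        using NT1 True \<open>x \<notin> set C1\<close> by (auto simp: NT_def col_def)
      ultimately show ?thesis using full_mono[OF _ _ _ RE1] by (auto simp: R_def)
    next
      case False
      hence x2: "x \<in> S2" using x U by auto
      have "x \<notin> set C2" using x sC by auto
      hence "full R2 col2 x" using L2(7) x2 xe by auto
      moreover have "\<forall>y. E x y \<longrightarrow> col x y = col2 x y \<and> col y x = col2 y x"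
        using False by (auto simp: col_def)
      ultimately show ?thesis using full_mono[OF _ _ _ RE2] by (auto simp: R_def)
    qed
  qed
  have G3p: "part S R col x a s" if x: "x \<in> S - {c0, c1}" and ax: "(a, x) \<in> cp C" and xs: "(x, s) \<in> cp C" for x a s
  proof -
    consider "x \<in> S1 - {e0, e1}" | "x \<in> S2 - {e0, e1}" | "x \<in> {e0, e1}" using x U by blast
    thus ?thesis
    proof cases
      case 1
      have "(a, x) \<in> cp C1" "(x, s) \<in> cp C1" using cp1[of x] 1 ax xs by (auto simp: e0_def e1_def)
      hence "part S1 R1 col1 x a s" using L1(8) 1 x by auto
      moreover have "\<forall>y \<in> nb S1 x. col x y = col1 x y \<and> col y x = col1 y x" using 1 by (auto simp: nb_def col_def)
      ultimately show ?thesis using part_mono[of S1 R1 col1 x a s R S col] nbS1[OF 1] by (auto simp: R_def)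
    next
      case 2
      have "(a, x) \<in> cp C2" "(x, s) \<in> cp C2" using cp2[of x] 2 ax xs by (auto simp: e0_def e1_def)
      hence "part S2 R2 col2 x a s" using L2(8) 2 by auto
      moreover have "\<forall>y \<in> nb S2 x. col x y = col2 x y \<and> col y x = col2 y x" using 2 I' by (auto simp: nb_def col_def)
      ultimately show ?thesis using part_mono[of S2 R2 col2 x a s R S col] nbS2[OF 2] by (auto simp: R_def)
    next
      case 3
      hence "x \<in> {C2 ! 0, C2 ! 1} - {C ! 0, C ! 1}" using x by (auto simp: e0_def e1_def c0_def c1_def)
      then obtain P c Q zs where D: "cl x a = P @ c # Q @ zs" "P \<noteq> []" "Q \<noteq> []" "last Q = s" "set (P @ c # Q) = nb S x"
        "(x = e1 \<and> (a, x) \<in> cp C1 \<and> (x, c) \<in> cp C1 \<and> set Q \<subseteq> S2 - {e0, e1}) \<or>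
         (x = e0 \<and> (c, x) \<in> cp C1 \<and> (x, s) \<in> cp C1 \<and> set P \<subseteq> S2 - {e0, e1})"
        using endG[OF _ ax xs] by (auto simp: e0_def e1_def)
      have xS1: "x \<in> S1 - {c0, c1}" using 3 eS x by auto
      have colS1: "\<forall>y \<in> nb S1 x. col x y = col1 x y \<and> col y x = col1 y x" using xS1 by (auto simp: nb_def col_def)
      have nbx: "y \<in> set (P @ c # Q) \<Longrightarrow> E x y" for y using D(5) by (auto simp: nb_def)
      from D(6) show ?thesis
      proof
        assume h: "x = e1 \<and> (a, x) \<in> cp C1 \<and> (x, c) \<in> cp C1 \<and> set Q \<subseteq> S2 - {e0, e1}"
        have "part S1 R1 col1 x a c" using L1(8)[OF xS1] h by auto
        hence pt: "part S1 R col x a c" using part_mono[of S1 R1 col1 x a c R S1 col] colS1 by (auto simp: R_def)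
        have "\<forall>y\<in>set Q. (x, y, 1) \<in> R \<and> col x y"
        proof
          fix y assume y: "y \<in> set Q"
          hence "y \<in> S2 - {e0, e1}" "E x y" using h nbx by auto
          thus "(x, y, 1) \<in> R \<and> col x y" using L2(5)[of y] h I' by (auto simp: R_def col_def)
        qed
        thus ?thesis using part_extA[OF pt D(1) D(5) D(3) D(4)] by blast
      next
        assume h: "x = e0 \<and> (c, x) \<in> cp C1 \<and> (x, s) \<in> cp C1 \<and> set P \<subseteq> S2 - {e0, e1}"
        have "part S1 R1 col1 x c s" using L1(8)[OF xS1] h by auto
        hence pt: "part S1 R col x c s" using part_mono[of S1 R1 col1 x c s R S1 col] colS1 by (auto simp: R_def)
        have PB: "\<forall>y\<in>set P. (x, y, 1) \<in> R \<and> \<not> col x y"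
        proof
          fix y assume y: "y \<in> set P"
          hence "y \<in> S2 - {e0, e1}" "E x y" using h nbx by auto
          thus "(x, y, 1) \<in> R \<and> \<not> col x y" using L2(4)[of y] h I' e01 by (auto simp: R_def col_def)
        qed
        have Exa: "E x a"
        proof -
          have "hd (cl x a) = a" using cl_hd'[of x a] D(1) by simp
          hence "hd P = a" using D(1,2) by simp
          hence "a \<in> set P" using D(2) hd_in_set by blast
          hence "a \<in> set (P @ c # Q)" by simp
          thus ?thesis using nbx by blast
        qed
        have "last (c # Q) = s" using D(3,4) by simp
        thus ?thesis using part_extB[OF pt D(1) D(5) _ PB Exa] by blast
      qed
    qed
  qed
  have "LAB S C R col t"
    unfolding LAB_def c0_def[symmetric] c1_def[symmetric]
    apply (intro conjI)
    subgoal using G0 by blast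
    subgoal using G1a by blast
    subgoal using G1b by blast
    subgoal using G2a by blast
    subgoal using G2b by blast
    subgoal using G4 by blast
    subgoal using G3f G3p by blast
    done
  thus ?thesis unfolding R_def by blast
qed

end


lemma take_gen: "take (Suc (Suc (length T))) (c # T @ d # Z) = c # T @ [d]"
  by simp

lemma chord_decomp:
  assumes "Suc i < j" "j < length C"
  shows "C = take i C @ C!i # take (j - Suc i) (drop (Suc i) C) @ C!j # drop (Suc j) C"
    and "take (Suc i) C = take i C @ [C!i]"
    and "take (Suc j) C = take i C @ C!i # take (j - Suc i) (drop (Suc i) C) @ [C!j]"
    and "drop j C = C!j # drop (Suc j) C"
    and "take (j - i) (drop i C) = C!i # take (j - Suc i) (drop (Suc i) C)"
    and "length (take (j - Suc i) (drop (Suc i) C)) = j - Suc i"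
    and "length (take i C) = i"
proof -
  have ilt: "i < length C" using assms by simp
  have dj: "drop j C = C!j # drop (Suc j) C" using assms(2) by (simp add: Cons_nth_drop_Suc)
  have di: "drop i C = C!i # drop (Suc i) C" using ilt by (simp add: Cons_nth_drop_Suc)
  have dd: "drop (j - Suc i) (drop (Suc i) C) = drop j C" using assms by simp
  have "drop (Suc i) C = take (j - Suc i) (drop (Suc i) C) @ drop (j - Suc i) (drop (Suc i) C)"
    by (rule append_take_drop_id[symmetric])
  hence ds: "drop (Suc i) C = take (j - Suc i) (drop (Suc i) C) @ C!j # drop (Suc j) C" using dd dj by simp
  show C: "C = take i C @ C!i # take (j - Suc i) (drop (Suc i) C) @ C!j # drop (Suc j) C"
    using id_take_nth_drop[OF ilt] ds by simp
  show "take (Suc i) C = take i C @ [C!i]" using ilt by (simp add: take_Suc_conv_app_nth)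
  show "drop j C = C!j # drop (Suc j) C" by (fact dj)
  show "take (j - i) (drop i C) = C!i # take (j - Suc i) (drop (Suc i) C)"
    using di assms by (simp add: Suc_diff_Suc[symmetric])
  show "length (take (j - Suc i) (drop (Suc i) C)) = j - Suc i" using assms by simp
  show "length (take i C) = i" using ilt by simp
  have "take (Suc j) C = take (Suc j) (take i C @ C!i # take (j - Suc i) (drop (Suc i) C) @ C!j # drop (Suc j) C)"
    using C by simp
  also have "\<dots> = take i C @ C!i # take (j - Suc i) (drop (Suc i) C) @ [C!j]"
  proof -
    let ?T = "take (j - Suc i) (drop (Suc i) C)"
    have lT: "length ?T = j - Suc i" using assms by simp
    have lX: "length (take i C) = i" using ilt by simp
    have n: "Suc j - i = Suc (Suc (length ?T))" using lT assms by simp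
    have "take (Suc j - i) (C!i # ?T @ C!j # drop (Suc j) C) = C!i # ?T @ [C!j]"
      unfolding n by (rule take_gen)
    moreover have "min (Suc j) i = i" using assms by simp
    ultimately show ?thesis using lX by (simp add: take_append)
  qed
  finally show "take (Suc j) C = take i C @ C!i # take (j - Suc i) (drop (Suc i) C) @ [C!j]" .
qed

context tg begin

lemma dC_nth: "NT S C \<Longrightarrow> p < length C \<Longrightarrow> q < length C \<Longrightarrow> p \<noteq> q \<Longrightarrow> C ! p \<noteq> C ! q"
  by (simp add: NT_def nth_eq_iff_index_eq)

lemma split_common:
  assumes NT: "NT S C" and ij: "Suc i < j" "j < length C"
  shows "distinct (take i C @ C!i # take (j - Suc i) (drop (Suc i) C) @ C!j # drop (Suc j) C)"
    and "take (j - Suc i) (drop (Suc i) C) \<noteq> []"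
proof -
  note D = chord_decomp[OF ij]
  have dC: "distinct C" using NT by (simp add: NT_def)
  thus "distinct (take i C @ C!i # take (j - Suc i) (drop (Suc i) C) @ C!j # drop (Suc j) C)"
    using D(1) by metis
  show "take (j - Suc i) (drop (Suc i) C) \<noteq> []" using D(6) ij by (metis list.size(3) zero_less_diff Suc_lessD less_not_refl2 zero_less_Suc diff_is_0_eq not_less)
qed

lemma split_step_pos:
  assumes NT: "NT S C"
    and ij: "Suc i < j" "j < length C" "E (C ! i) (C ! j)" and i0: "i \<noteq> 0"
    and C1d: "C1 = take (Suc i) C @ drop j C"
    and C2d: "C2 = C ! j # take (j - i) (drop i C)"
    and U: "S1 \<union> S2 = S" and I: "S1 \<inter> S2 = {C ! i, C ! j}" and C1S: "set C1 \<subseteq> S1" and C2S: "set C2 \<subseteq> S2"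
    and ne: "\<forall>x\<in>S1 - {C ! i, C ! j}. \<forall>y\<in>S2 - {C ! i, C ! j}. \<not> E x y"
  shows "NT S1 C1 \<and> NT S2 C2 \<and>
    (\<forall>R1 col1 t1 R2 col2 t2. LAB S1 C1 R1 col1 t1 \<longrightarrow> LAB S2 C2 R2 col2 t2 \<longrightarrow> (\<exists>col t. LAB S C (R1 \<union> R2) col t))"
proof -
  define X Y Z ci cj where "X = take i C" and "Y = take (j - Suc i) (drop (Suc i) C)" and "Z = drop (Suc j) C"
    and "ci = C ! i" and "cj = C ! j"
  note D = chord_decomp[OF ij(1,2), folded X_def Y_def Z_def ci_def cj_def]
  have dall: "distinct (X @ ci # Y @ cj # Z)" using split_common(1)[OF NT ij(1,2)] by (simp add: X_def Y_def Z_def ci_def cj_def)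
  have Yne: "Y \<noteq> []" using split_common(2)[OF NT ij(1,2)] by (simp add: Y_def)
  have Xne: "X \<noteq> []" using D(7) i0 by auto
  define W where "W = Z @ X"
  have Wne: "W \<noteq> []" using Xne by (simp add: W_def)
  have C1e: "C1 = X @ ci # cj # Z" using C1d D(2,4) by simp
  have C2e: "C2 = cj # ci # Y" using C2d D(5) by (simp add: cj_def)
  have Ce: "C = X @ ci # Y @ cj # Z" using D(1) .
  have hC: "hd C = hd X" using Ce Xne by simp
  obtain h X' where hX: "X = h # X'" using Xne by (cases X) auto
  have e1: "pp (X @ ci # (Y @ cj # Z @ [h])) = pp (X @ [ci]) \<union> pp (ci # (Y @ cj # Z @ [h]))"
    by (rule pp_append)
  have e2: "pp ((ci # Y) @ cj # (Z @ [h])) = pp ((ci # Y) @ [cj]) \<union> pp (cj # (Z @ [h]))"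
    by (rule pp_append)
  have e3: "pp ((cj # Z) @ h # (X' @ [ci])) = pp ((cj # Z) @ [h]) \<union> pp (h # (X' @ [ci]))"
    by (rule pp_append)
  have e4: "pp (X @ ci # (cj # Z @ [h])) = pp (X @ [ci]) \<union> pp (ci # (cj # Z @ [h]))"
    by (rule pp_append)
  have ppW: "pp (cj # W @ [ci]) = pp (cj # Z @ [h]) \<union> pp (X @ [ci])"
    using e3 hX by (simp add: W_def)
  have cpC: "cp C = pp (ci # Y @ [cj]) \<union> pp (cj # W @ [ci])"
  proof -
    have "cp C = pp (X @ ci # (Y @ cj # Z @ [h]))" unfolding cp_def using Ce hX by simp
    also have "\<dots> = pp (X @ [ci]) \<union> (pp (ci # Y @ [cj]) \<union> pp (cj # Z @ [h]))" using e1 e2 by simp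
    finally show ?thesis using ppW by auto
  qed
  have cp1: "cp C1 = pp (cj # W @ [ci]) \<union> {(ci, cj)}"
  proof -
    have "cp C1 = pp (X @ ci # (cj # Z @ [h]))" unfolding cp_def using C1e hX by simp
    also have "\<dots> = pp (X @ [ci]) \<union> pp (ci # cj # Z @ [h])" using e4 by simp
    finally show ?thesis using ppW by auto
  qed
  have cp2: "cp C2 = pp (ci # Y @ [cj]) \<union> {(cj, ci)}" unfolding cp_def using C2e by auto
  have sC: "set C = {ci, cj} \<union> set Y \<union> set W" using Ce by (auto simp: W_def)
  have s1: "set C1 = {ci, cj} \<union> set W" using C1e by (auto simp: W_def)
  have s2: "set C2 = {ci, cj} \<union> set Y" using C2e by auto
  have dd: "distinct (ci # cj # Y @ W)" using dall by (auto simp: W_def)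
  have d1: "distinct C1" using dall C1e by auto
  have d2: "distinct C2" using dall C2e by auto
  have l1: "2 \<le> length C1" and l2: "2 \<le> length C2" using C1e C2e by auto
  have U': "S2 \<union> S1 = S" and I': "S2 \<inter> S1 = {ci, cj}" using U I by (auto simp: ci_def cj_def)
  have ne': "\<forall>p\<in>S2 - {ci, cj}. \<forall>q\<in>S1 - {ci, cj}. \<not> E p q" using ne Esym by (auto simp: ci_def cj_def)
  have Eij: "E ci cj" using ij(3) by (simp add: ci_def cj_def)
  note G = chord_geom[OF NT cpC cp2 cp1 sC s2 s1 dd d2 d1 Yne Wne l2 l1 U' I' C2S C1S ne' Eij]
  have NT1: "NT S1 C1" and NT2: "NT S2 C2" using G(1,2) by auto
  have C20: "C2 ! 0 = cj" and C21: "C2 ! 1 = ci" using C2e by auto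
  have C10: "C1 ! 0 = C ! 0" and C11: "C1 ! 1 = C ! 1" using C1d i0 ij(1,2) by (auto simp: nth_append)
  have sC12: "set C = set C1 \<union> set C2" using sC s1 s2 by auto
  have ie: "{C2 ! 0, C2 ! 1} = {ci, cj}" using C20 C21 by auto
  have C0n: "C ! 0 \<notin> {ci, cj}"
  proof -
    have "0 < length C" "i < length C" using ij by auto
    thus ?thesis using dC_nth[OF NT, of 0 i] dC_nth[OF NT, of 0 j] ij i0 by (auto simp: ci_def cj_def)
  qed
  have C0S1: "C ! 0 \<in> S1" using C1S C10 l1 by (metis nth_mem less_le_trans zero_less_numeral subsetD)
  have z0: "C ! 0 \<notin> S2 \<or> C ! 0 = C2 ! 0" using C0n C0S1 I by (auto simp: ci_def cj_def)
  have z1: "C ! 1 \<notin> S2 \<or> C ! 1 = C2 ! 1"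
  proof (cases "i = 1")
    case True thus ?thesis using C21 by (simp add: ci_def)
  next
    case False
    have "1 < length C" "i < length C" using ij by auto
    hence "C ! 1 \<notin> {ci, cj}"
      using dC_nth[OF NT, of 1 i] dC_nth[OF NT, of 1 j] ij False by (auto simp: ci_def cj_def)
    moreover have "C ! 1 \<in> S1" using C1S C11 l1 by (metis nth_mem One_nat_def Suc_1 Suc_le_lessD subsetD)
    ultimately show ?thesis using I by (auto simp: ci_def cj_def)
  qed
  have LABc: "\<exists>col t. LAB S C (R1 \<union> R2) col t" if L1: "LAB S1 C1 R1 col1 t1" and L2: "LAB S2 C2 R2 col2 t2"
    for R1 col1 t1 R2 col2 t2
  proof (rule split_LAB[OF NT1 NT2 L1 L2 U])
    show "S1 \<inter> S2 = {C2 ! 0, C2 ! 1}" using I ie by (auto simp: ci_def cj_def)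
    show "\<forall>p\<in>S1 - {C2 ! 0, C2 ! 1}. \<forall>q\<in>S2 - {C2 ! 0, C2 ! 1}. \<not> E p q" using ne ie by (auto simp: ci_def cj_def)
    show "C1 ! 0 = C ! 0" "C1 ! 1 = C ! 1" "set C = set C1 \<union> set C2" by (fact C10 C11 sC12)+
    show "C ! 0 \<notin> S2 \<or> C ! 0 = C2 ! 0" "C ! 1 \<notin> S2 \<or> C ! 1 = C2 ! 1" by (fact z0 z1)+
    show "\<And>x a. x \<in> S1 - {C2 ! 0, C2 ! 1} \<Longrightarrow> ((a, x) \<in> cp C \<longleftrightarrow> (a, x) \<in> cp C1) \<and> ((x, a) \<in> cp C \<longleftrightarrow> (x, a) \<in> cp C1)"
      using G(6) ie by auto
    show "\<And>x a. x \<in> S2 - {C2 ! 0, C2 ! 1} \<Longrightarrow> ((a, x) \<in> cp C \<longleftrightarrow> (a, x) \<in> cp C2) \<and> ((x, a) \<in> cp C \<longleftrightarrow> (x, a) \<in> cp C2)"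
      using G(5) ie by auto
    fix x a s assume x: "x \<in> {C2 ! 0, C2 ! 1} - {C ! 0, C ! 1}" and ax: "(a, x) \<in> cp C" and xs: "(x, s) \<in> cp C"
    show "\<exists>P c Q zs. cl x a = P @ c # Q @ zs \<and> P \<noteq> [] \<and> Q \<noteq> [] \<and> last Q = s \<and> set (P @ c # Q) = nb S x \<and>
         ((x = C2 ! 1 \<and> (a, x) \<in> cp C1 \<and> (x, c) \<in> cp C1 \<and> set Q \<subseteq> S2 - {C2 ! 0, C2 ! 1}) \<or>
          (x = C2 ! 0 \<and> (c, x) \<in> cp C1 \<and> (x, s) \<in> cp C1 \<and> set P \<subseteq> S2 - {C2 ! 0, C2 ! 1}))"
    proof (cases "x = ci")
      case True
      obtain P Q zs where H: "cl ci a = P @ cj # Q @ zs" "P \<noteq> []" "Q \<noteq> []" "set Q \<subseteq> S2 - {ci, cj}"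
        "last Q = s" "set (P @ cj # Q) = nb S ci" "(a, ci) \<in> cp C1" "(ci, cj) \<in> cp C1"
        using G(3)[of a s] ax xs True by blast
      show ?thesis using H True C20 C21 ie by (intro exI[of _ P] exI[of _ cj] exI[of _ Q] exI[of _ zs]) auto
    next
      case False
      hence xj: "x = cj" using x ie by auto
      obtain P Q zs where H: "cl cj a = P @ ci # Q @ zs" "P \<noteq> []" "Q \<noteq> []" "set P \<subseteq> S2 - {ci, cj}"
        "last Q = s" "set (P @ ci # Q) = nb S cj" "(ci, cj) \<in> cp C1" "(cj, s) \<in> cp C1"
        using G(4)[of a s] ax xs xj by blast
      show ?thesis using H xj C20 C21 ie by (intro exI[of _ P] exI[of _ ci] exI[of _ Q] exI[of _ zs]) auto
    qed
  qed
  show ?thesis using NT1 NT2 LABc by blast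
qed

lemma split_step_0:
  assumes NT: "NT S C"
    and ij: "Suc 0 < j" "j < length C" "E (C ! 0) (C ! j)" and jn: "j \<noteq> length C - 1"
    and C1d: "C1 = take (Suc j) C"
    and C2d: "C2 = C ! 0 # drop j C"
    and U: "S1 \<union> S2 = S" and I: "S1 \<inter> S2 = {C ! 0, C ! j}" and C1S: "set C1 \<subseteq> S1" and C2S: "set C2 \<subseteq> S2"
    and ne: "\<forall>x\<in>S1 - {C ! 0, C ! j}. \<forall>y\<in>S2 - {C ! 0, C ! j}. \<not> E x y"
  shows "NT S1 C1 \<and> NT S2 C2 \<and>
    (\<forall>R1 col1 t1 R2 col2 t2. LAB S1 C1 R1 col1 t1 \<longrightarrow> LAB S2 C2 R2 col2 t2 \<longrightarrow> (\<exists>col t. LAB S C (R1 \<union> R2) col t))"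
proof -
  define Y Z ci cj where "Y = take (j - Suc 0) (drop (Suc 0) C)" and "Z = drop (Suc j) C"
    and "ci = C ! 0" and "cj = C ! j"
  note D = chord_decomp[OF ij(1,2), folded Y_def Z_def ci_def cj_def]
  have dall: "distinct (ci # Y @ cj # Z)" using split_common(1)[OF NT ij(1,2)] by (simp add: Y_def Z_def ci_def cj_def)
  have Yne: "Y \<noteq> []" using split_common(2)[OF NT ij(1,2)] by (simp add: Y_def)
  have Zne: "Z \<noteq> []" using ij jn by (simp add: Z_def)
  have C1e: "C1 = ci # Y @ [cj]" using C1d D(3) by simp
  have C2e: "C2 = ci # cj # Z" using C2d D(4) by (simp add: ci_def)
  have Ce: "C = ci # Y @ cj # Z" using D(1) by simp
  have e1: "pp ((ci # Y) @ cj # (Z @ [ci])) = pp ((ci # Y) @ [cj]) \<union> pp (cj # (Z @ [ci]))"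
    by (rule pp_append)
  have e2: "pp ((ci # Y) @ cj # [ci]) = pp ((ci # Y) @ [cj]) \<union> pp (cj # [ci])"
    by (rule pp_append)
  have cpC: "cp C = pp (ci # Y @ [cj]) \<union> pp (cj # Z @ [ci])"
    unfolding cp_def using Ce e1 by simp
  have cp1: "cp C1 = pp (ci # Y @ [cj]) \<union> {(cj, ci)}"
    unfolding cp_def using C1e e2 by simp
  have cp2: "cp C2 = pp (cj # Z @ [ci]) \<union> {(ci, cj)}" unfolding cp_def using C2e by auto
  have sC: "set C = {ci, cj} \<union> set Y \<union> set Z" using Ce by auto
  have s1: "set C1 = {ci, cj} \<union> set Y" using C1e by auto
  have s2: "set C2 = {ci, cj} \<union> set Z" using C2e by auto
  have dd: "distinct (ci # cj # Y @ Z)" using dall by auto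
  have d1: "distinct C1" using dall C1e by auto
  have d2: "distinct C2" using dall C2e by auto
  have l1: "2 \<le> length C1" and l2: "2 \<le> length C2" using C1e C2e by auto
  have I': "S1 \<inter> S2 = {ci, cj}" using I by (auto simp: ci_def cj_def)
  have ne': "\<forall>p\<in>S1 - {ci, cj}. \<forall>q\<in>S2 - {ci, cj}. \<not> E p q" using ne by (auto simp: ci_def cj_def)
  have Eij: "E ci cj" using ij(3) by (simp add: ci_def cj_def)
  note G = chord_geom[OF NT cpC cp1 cp2 sC s1 s2 dd d1 d2 Yne Zne l1 l2 U I' C1S C2S ne' Eij]
  have NT1: "NT S1 C1" and NT2: "NT S2 C2" using G(1,2) by auto
  have C20: "C2 ! 0 = ci" and C21: "C2 ! 1 = cj" using C2e by auto
  have C10: "C1 ! 0 = C ! 0" and C11: "C1 ! 1 = C ! 1" using C1d ij by auto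
  have sC12: "set C = set C1 \<union> set C2" using sC s1 s2 by auto
  have ie: "{C2 ! 0, C2 ! 1} = {ci, cj}" using C20 C21 by auto
  have z0: "C ! 0 \<notin> S2 \<or> C ! 0 = C2 ! 0" using C20 by (simp add: ci_def)
  have z1: "C ! 1 \<notin> S2 \<or> C ! 1 = C2 ! 1"
  proof -
    have "1 < length C" "0 < length C" using ij by auto
    hence "C ! 1 \<notin> {ci, cj}"
      using dC_nth[OF NT, of 1 0] dC_nth[OF NT, of 1 j] ij by (auto simp: ci_def cj_def)
    moreover have "C ! 1 \<in> set C1" using C11 l1 by (metis nth_mem One_nat_def Suc_1 Suc_le_lessD)
    ultimately show ?thesis using I C1S by (auto simp: ci_def cj_def)
  qed
  have LABc: "\<exists>col t. LAB S C (R1 \<union> R2) col t" if L1: "LAB S1 C1 R1 col1 t1" and L2: "LAB S2 C2 R2 col2 t2"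
    for R1 col1 t1 R2 col2 t2
  proof (rule split_LAB[OF NT1 NT2 L1 L2 U])
    show "S1 \<inter> S2 = {C2 ! 0, C2 ! 1}" using I' ie by auto
    show "\<forall>p\<in>S1 - {C2 ! 0, C2 ! 1}. \<forall>q\<in>S2 - {C2 ! 0, C2 ! 1}. \<not> E p q" using ne' ie by auto
    show "C1 ! 0 = C ! 0" "C1 ! 1 = C ! 1" "set C = set C1 \<union> set C2" by (fact C10 C11 sC12)+
    show "C ! 0 \<notin> S2 \<or> C ! 0 = C2 ! 0" "C ! 1 \<notin> S2 \<or> C ! 1 = C2 ! 1" by (fact z0 z1)+
    show "\<And>x a. x \<in> S1 - {C2 ! 0, C2 ! 1} \<Longrightarrow> ((a, x) \<in> cp C \<longleftrightarrow> (a, x) \<in> cp C1) \<and> ((x, a) \<in> cp C \<longleftrightarrow> (x, a) \<in> cp C1)"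
      using G(5) ie by auto
    show "\<And>x a. x \<in> S2 - {C2 ! 0, C2 ! 1} \<Longrightarrow> ((a, x) \<in> cp C \<longleftrightarrow> (a, x) \<in> cp C2) \<and> ((x, a) \<in> cp C \<longleftrightarrow> (x, a) \<in> cp C2)"
      using G(6) ie by auto
    fix x a s assume x: "x \<in> {C2 ! 0, C2 ! 1} - {C ! 0, C ! 1}" and ax: "(a, x) \<in> cp C" and xs: "(x, s) \<in> cp C"
    have xj: "x = cj" using x C20 C21 by (auto simp: ci_def)
    obtain P Q zs where H: "cl cj a = P @ ci # Q @ zs" "P \<noteq> []" "Q \<noteq> []" "set Q \<subseteq> S2 - {ci, cj}"
      "last Q = s" "set (P @ ci # Q) = nb S cj" "(a, cj) \<in> cp C1" "(cj, ci) \<in> cp C1"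
      using G(4)[of a s] ax xs xj by blast
    show "\<exists>P c Q zs. cl x a = P @ c # Q @ zs \<and> P \<noteq> [] \<and> Q \<noteq> [] \<and> last Q = s \<and> set (P @ c # Q) = nb S x \<and>
         ((x = C2 ! 1 \<and> (a, x) \<in> cp C1 \<and> (x, c) \<in> cp C1 \<and> set Q \<subseteq> S2 - {C2 ! 0, C2 ! 1}) \<or>
          (x = C2 ! 0 \<and> (c, x) \<in> cp C1 \<and> (x, s) \<in> cp C1 \<and> set P \<subseteq> S2 - {C2 ! 0, C2 ! 1}))"
      using H xj C20 C21 ie by (intro exI[of _ P] exI[of _ ci] exI[of _ Q] exI[of _ zs]) auto
  qed
  show ?thesis using NT1 NT2 LABc by blast
qed

lemma split_step:
  assumes NT: "NT S C"
    and ij: "Suc i < j" "j < length C" "\<not> (i = 0 \<and> j = length C - 1)" "E (C ! i) (C ! j)"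
    and C1d: "C1 = (if i = 0 then take (Suc j) C else take (Suc i) C @ drop j C)"
    and C2d: "C2 = (if i = 0 then C ! 0 # drop j C else C ! j # take (j - i) (drop i C))"
    and U: "S1 \<union> S2 = S" and I: "S1 \<inter> S2 = {C ! i, C ! j}" and C1S: "set C1 \<subseteq> S1" and C2S: "set C2 \<subseteq> S2"
    and ne: "\<forall>x\<in>S1 - {C ! i, C ! j}. \<forall>y\<in>S2 - {C ! i, C ! j}. \<not> E x y"
  shows "NT S1 C1 \<and> NT S2 C2 \<and>
    (\<forall>R1 col1 t1 R2 col2 t2. LAB S1 C1 R1 col1 t1 \<longrightarrow> LAB S2 C2 R2 col2 t2 \<longrightarrow> (\<exists>col t. LAB S C (R1 \<union> R2) col t))"
proof (cases "i = 0")
  case True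
  show ?thesis
    by (rule split_step_0[OF NT _ ij(2) _ _ _ _ U _ C1S C2S]) (use ij C1d C2d I ne True in auto)
next
  case False
  show ?thesis
    by (rule split_step_pos[OF NT ij(1,2,4) False _ _ U I C1S C2S ne]) (use C1d C2d False in auto)
qed

end


context tg begin

lemma LAB_empty:
  assumes "S = {C ! 0, C ! 1}"
  shows "LAB S C {} col t"
  unfolding LAB_def using assms Eirr by auto

lemma proc_LAB:
  assumes "proc E rot S C R" "NT S C"
  shows "\<exists>col t. LAB S C R col t"
  using assms
proof (induction rule: proc.induct)
  case (split i j C C1 C2 S1 S2 S R1 R2)
  have st: "NT S1 C1 \<and> NT S2 C2 \<and>
    (\<forall>R1 col1 t1 R2 col2 t2. LAB S1 C1 R1 col1 t1 \<longrightarrow> LAB S2 C2 R2 col2 t2 \<longrightarrow> (\<exists>col t. LAB S C (R1 \<union> R2) col t))"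
    by (rule split_step) (use split in auto)
  then obtain col1 t1 col2 t2 where "LAB S1 C1 R1 col1 t1" "LAB S2 C2 R2 col2 t2"
    using split.IH by blast
  thus ?case using st by blast
next
  case (orient_stop C S)
  have NT': "NT (S - {C ! 2}) (cycle_after_delete E rot C)" using orient_step(1)[OF orient_stop.prems orient_stop.hyps(1,2)] .
  have "cycle_after_delete E rot C ! 0 = C ! 0" "cycle_after_delete E rot C ! 1 = C ! 1"
    by (simp_all add: cycle_after_delete_def)
  hence "LAB (S - {C ! 2}) (cycle_after_delete E rot C) {} (\<lambda>_ _. False) (\<lambda>_. 0)"
    using LAB_empty orient_stop.hyps(3) by metis
  then obtain col t where "LAB S C (orient_labels E S C \<union> {}) col t"
    using orient_step(2)[OF orient_stop.prems orient_stop.hyps(1,2)] by blast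
  thus ?case by auto
next
  case (orient_rec C S R')
  have NT': "NT (S - {C ! 2}) (cycle_after_delete E rot C)" using orient_step(1)[OF orient_rec.prems orient_rec.hyps(1,2)] .
  then obtain col' t' where "LAB (S - {C ! 2}) (cycle_after_delete E rot C) R' col' t'" using orient_rec.IH by blast
  thus ?case using orient_step(2)[OF orient_rec.prems orient_rec.hyps(1,2)] by blast
qed

definition fullw where
  "fullw R col x p B g Rs b A \<longleftrightarrow> cl x p = p # B @ g # Rs @ b # A \<and> (p, x, 2) \<in> R \<and> lab R col x B g Rs b A"

lemma full_fullw: "full R col x \<Longrightarrow> \<exists>p B g Rs b A. fullw R col x p B g Rs b A"
  by (auto simp: full_def fullw_def)

lemma ival_outer:
  assumes "E x a" "E x s" "rot x s = a" "S \<subseteq> V" "\<forall>y. E x y \<longrightarrow> y \<in> S"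
  shows "ival S x a s"
proof -
  have d: "deg E x > 0" using deg_pos[OF assms(1)] .
  have ne: "cl x a \<noteq> []" using d by (metis cl_length length_0_conv less_not_refl)
  have "last (cl x a) \<in> set (cl x a)" using ne by simp
  hence El: "E x (last (cl x a))" using cl_mem[OF assms(1)] by simp
  have "rot x (last (cl x a)) = a" using cl_last[OF assms(1)] .
  hence "last (cl x a) = s" using rot_inj[OF El assms(2)] assms(3) by simp
  moreover have "set (cl x a) = nb S x" using cl_set[OF assms(1)] assms(5) by (auto simp: nb_def nbrs_def)
  ultimately show ?thesis unfolding ival_def using ne by (intro exI[of _ "cl x a"] exI[of _ "[]"]) auto
qed

lemma NT_init:
  assumes "outer_face_cw E rot v1 v2 v3"
  shows "NT V [v1, v2, v3]"
proof -
  have o: "E v1 v2" "E v2 v3" "E v3 v1" "rot v3 v1 = v2" "rot v2 v3 = v1" "rot v1 v2 = v3"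
    using assms by (auto simp: outer_face_cw_def)
  have cpC: "cp [v1, v2, v3] = {(v1, v2), (v2, v3), (v3, v1)}" by (simp add: cp_def)
  have d: "distinct [v1, v2, v3]" using o Eirr by auto
  have VV: "\<forall>y. E x y \<longrightarrow> y \<in> V" for x using EV by blast
  have iv1: "ival V v1 v3 v2" using ival_outer[OF Esym[OF o(3)] o(1) o(6)] VV by blast
  have iv2: "ival V v2 v1 v3" using ival_outer[OF Esym[OF o(1)] o(2) o(5)] VV by blast
  have iv3: "ival V v3 v2 v1" using ival_outer[OF Esym[OF o(2)] o(3) o(4)] VV by blast
  have "set [v1, v2, v3] \<subseteq> V" using EV o by auto
  moreover have "\<forall>a x s. (a, x) \<in> cp [v1, v2, v3] \<longrightarrow> (x, s) \<in> cp [v1, v2, v3] \<longrightarrow> ival V x a s"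
    using iv1 iv2 iv3 d unfolding cpC by auto
  ultimately show ?thesis using d VV unfolding NT_def by auto
qed

end

lemma split_first:
  assumes "xs1 @ y1 # ys1 = xs2 @ y2 # ys2" "\<forall>z\<in>set xs1. \<not> P z" "\<forall>z\<in>set xs2. \<not> P z" "P y1" "P y2"
  shows "xs1 = xs2 \<and> y1 = y2 \<and> ys1 = ys2"
  using assms
proof (induction xs1 arbitrary: xs2)
  case Nil thus ?case by (cases xs2) auto
next
  case (Cons a xs1) thus ?case by (cases xs2) auto
qed

lemma filter6: "length (filter id [a, b, c, d, e, f]) = 1 \<Longrightarrow>
  \<not> (a \<and> b) \<and> \<not> (a \<and> c) \<and> \<not> (a \<and> e) \<and> \<not> (c \<and> e) \<and> \<not> (b \<and> d) \<and> \<not> (b \<and> f) \<and> \<not> (d \<and> f)"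
  by (cases a; cases b; cases c; cases d; cases e; cases f) auto

locale fin = tg +
  fixes v1 v2 v3 and R and col and t :: "_ \<Rightarrow> nat"
  assumes ofc: "outer_face_cw E rot v1 v2 v3"
    and LR: "LAB V [v1, v2, v3] R col t"
begin

definition Inn where "Inn = V - {v1, v2, v3}"
definition L where "L = {(u, v). (\<exists>k. (u, v, k) \<in> R) \<and> interior_edge E v1 v2 v3 u v}"

lemma ofc_facts: "E v1 v2" "E v2 v3" "E v3 v1" "rot v3 v1 = v2" "rot v2 v3 = v1" "rot v1 v2 = v3"
  using ofc by (auto simp: outer_face_cw_def)

lemma vdist: "v1 \<noteq> v2" "v2 \<noteq> v3" "v1 \<noteq> v3" using ofc_facts Eirr by auto

lemma vV: "v1 \<in> V" "v2 \<in> V" "v3 \<in> V" using ofc_facts EV by auto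

lemma R0: "(u, w, k) \<in> R \<Longrightarrow> E u w \<and> u \<in> V \<and> w \<in> V \<and> {u, w} \<noteq> {v1, v2} \<and> (k = 1 \<or> k = 2)"
  using LAB_D(1)[OF LR] by simp
lemma R1a: "E u w \<Longrightarrow> u \<in> V \<Longrightarrow> w \<in> V \<Longrightarrow> {u, w} \<noteq> {v1, v2} \<Longrightarrow> \<exists>k. (u, w, k) \<in> R \<or> (w, u, k) \<in> R"
  using LAB_D(2)[OF LR] by simp
lemma R1b: "(u, w, k) \<in> R \<Longrightarrow> (u', w', k') \<in> R \<Longrightarrow> {u, w} = {u', w'} \<Longrightarrow> u = u' \<and> w = w' \<and> k = k'"
  by (rule LAB_D(3)[OF LR])
lemma R2a: "w \<in> V \<Longrightarrow> E v1 w \<Longrightarrow> w \<noteq> v2 \<Longrightarrow> (v1, w, 1) \<in> R"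
  using LAB_D(4)[OF LR] by simp
lemma R2b: "w \<in> V \<Longrightarrow> E v2 w \<Longrightarrow> w \<noteq> v1 \<Longrightarrow> (v2, w, 1) \<in> R"
  using LAB_D(5)[OF LR] by simp
lemma R4: "(u, w, 2) \<in> R \<Longrightarrow> t u < t w"
  by (rule LAB_D(6)[OF LR])
lemma R3f: "x \<in> Inn \<Longrightarrow> full R col x"
  using LAB_D(7)[OF LR] by (auto simp: Inn_def)
lemma R3v: "part V R col v3 v2 v1"
proof -
  have "(v2, v3) \<in> cp [v1, v2, v3]" "(v3, v1) \<in> cp [v1, v2, v3]" by (auto simp: cp_def)
  moreover have "v3 \<in> V - {[v1, v2, v3] ! 0, [v1, v2, v3] ! 1}" using vdist vV by auto
  ultimately show ?thesis using LAB_D(8)[OF LR] by blast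
qed

lemma U1: "(u, w, k) \<in> R \<Longrightarrow> (w, u, k') \<in> R \<Longrightarrow> False"
proof -
  assume a: "(u, w, k) \<in> R" "(w, u, k') \<in> R"
  have "u = w \<and> w = u \<and> k = k'" by (rule R1b[OF a(1) a(2)]) (rule insert_commute)
  hence "u = w" by (elim conjE)
  thus False using R0[OF a(1)] Eirr by auto
qed

lemma U2: "(u, w, k) \<in> R \<Longrightarrow> (u, w, k') \<in> R \<Longrightarrow> k = k'"
  using R1b[of u w k u w k'] by simp

lemma IE_iff: "interior_edge E v1 v2 v3 u w \<longleftrightarrow> E u w \<and> \<not> {u, w} \<subseteq> {v1, v2, v3}"
  by (simp add: interior_edge_def)

lemma Inn_IE: "x \<in> Inn \<Longrightarrow> E x y \<Longrightarrow> interior_edge E v1 v2 v3 x y \<and> interior_edge E v1 v2 v3 y x"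
  using Esym by (auto simp: IE_iff Inn_def)

lemma fw_E: "fullw R col x p B g Rs b A \<Longrightarrow> E x p"
  using R0 Esym by (auto simp: fullw_def)

lemma fw_mem: "fullw R col x p B g Rs b A \<Longrightarrow> E x u \<Longrightarrow> u \<in> set (p # B @ g # Rs @ b # A)"
  using cl_mem[OF fw_E] by (auto simp: fullw_def)

lemma in_full:
  assumes fw: "fullw R col x p B g Rs b A" and r: "(u, x, k) \<in> R"
  shows "(u = p \<and> k = 2) \<or> (u = g \<and> k = 1) \<or> (u = b \<and> k = 1)"
proof -
  have "u \<in> set (p # B @ g # Rs @ b # A)" using fw_mem[OF fw] R0[OF r] Esym by blast
  moreover have lb: "lab R col x B g Rs b A" "(p, x, 2) \<in> R" using fw by (auto simp: fullw_def)
  ultimately show ?thesis using r U1 U2 unfolding lab_def by (auto) (metis U1 U2)+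
qed

lemma out_full:
  assumes fw: "fullw R col x p B g Rs b A" and r: "(x, u, k) \<in> R"
  shows "(u \<in> set Rs \<and> k = 2) \<or> (u \<in> set B \<and> k = 1) \<or> (u \<in> set A \<and> k = 1)"
proof -
  have "u \<in> set (p # B @ g # Rs @ b # A)" using fw_mem[OF fw] R0[OF r] by blast
  moreover have lb: "lab R col x B g Rs b A" "(p, x, 2) \<in> R" using fw by (auto simp: fullw_def)
  ultimately show ?thesis using r U1 U2 unfolding lab_def by auto
qed

lemma fw_nbrs: "fullw R col x p B g Rs b A \<Longrightarrow> y \<in> set (p # B @ g # Rs @ b # A) \<Longrightarrow> E x y"
  using cl_mem[OF fw_E] by (auto simp: fullw_def)

lemma fw_lab: "fullw R col x p B g Rs b A \<Longrightarrow> lab R col x B g Rs b A \<and> (p, x, 2) \<in> R"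
  by (simp add: fullw_def)

lemma IE_V: "interior_edge E v1 v2 v3 u w \<Longrightarrow> E u w \<and> u \<in> V \<and> w \<in> V \<and> {u, w} \<noteq> {v1, v2}"
  using EV by (auto simp: IE_iff)

theorem exist: "\<exists>Tr Tg Tb. realizer V E rot v1 v2 v3 Tr Tg Tb \<and> Tr \<union> Tg \<union> Tb = L"
proof -
  define Tr where "Tr = {(u, w). (u, w, 2) \<in> R \<and> interior_edge E v1 v2 v3 u w}"
  define Tg where "Tg = {(u, w). (u, w, 1) \<in> R \<and> col u w \<and> interior_edge E v1 v2 v3 u w}"
  define Tb where "Tb = {(u, w). (u, w, 1) \<in> R \<and> \<not> col u w \<and> interior_edge E v1 v2 v3 u w}"
  have un: "Tr \<union> Tg \<union> Tb = L"
  proof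
    show "Tr \<union> Tg \<union> Tb \<subseteq> L" by (auto simp: Tr_def Tg_def Tb_def L_def)
    show "L \<subseteq> Tr \<union> Tg \<union> Tb"
    proof
      fix e assume "e \<in> L"
      then obtain u w k where e: "e = (u, w)" "(u, w, k) \<in> R" "interior_edge E v1 v2 v3 u w" by (auto simp: L_def)
      have "k = 1 \<or> k = 2" using R0[OF e(2)] by blast
      thus "e \<in> Tr \<union> Tg \<union> Tb" using e by (cases "col u w") (auto simp: Tr_def Tg_def Tb_def)
    qed
  qed
  have A: "\<forall>(u, v) \<in> Tr \<union> Tg \<union> Tb. interior_edge E v1 v2 v3 u v" by (auto simp: Tr_def Tg_def Tb_def)
  have onedir: "length (filter id [(u,v) \<in> Tr, (v,u) \<in> Tr, (u,v) \<in> Tg, (v,u) \<in> Tg, (u,v) \<in> Tb, (v,u) \<in> Tb]) = 1"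
    if ie: "interior_edge E v1 v2 v3 u v" and r: "(u, v, k) \<in> R" for u v k
  proof -
    have k: "k = 1 \<or> k = 2" using R0[OF r] by blast
    have n1: "(v, u, k') \<notin> R" for k' using U1[OF r] by blast
    have n2: "(u, v, k') \<in> R \<longleftrightarrow> k' = k" for k' using U2[OF r] r by blast
    have "[(u,v) \<in> Tr, (v,u) \<in> Tr, (u,v) \<in> Tg, (v,u) \<in> Tg, (u,v) \<in> Tb, (v,u) \<in> Tb] =
          [k = 2, False, k = 1 \<and> col u v, False, k = 1 \<and> \<not> col u v, False]"
      using n1 n2 ie by (auto simp: Tr_def Tg_def Tb_def)
    thus ?thesis using k by (cases "col u v") auto
  qed
  have B: "\<forall>u v. interior_edge E v1 v2 v3 u v \<longrightarrow>
        length (filter id [(u,v) \<in> Tr, (v,u) \<in> Tr, (u,v) \<in> Tg, (v,u) \<in> Tg, (u,v) \<in> Tb, (v,u) \<in> Tb]) = 1"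
  proof (intro allI impI)
    fix u v assume ie: "interior_edge E v1 v2 v3 u v"
    have "\<exists>k. (u, v, k) \<in> R \<or> (v, u, k) \<in> R" using R1a IE_V[OF ie] by blast
    then obtain k where "(u, v, k) \<in> R \<or> (v, u, k) \<in> R" by blast
    thus "length (filter id [(u,v) \<in> Tr, (v,u) \<in> Tr, (u,v) \<in> Tg, (v,u) \<in> Tg, (u,v) \<in> Tb, (v,u) \<in> Tb]) = 1"
    proof
      assume "(u, v, k) \<in> R" thus ?thesis using onedir ie by blast
    next
      assume r: "(v, u, k) \<in> R"
      have ie': "interior_edge E v1 v2 v3 v u" using ie Esym by (auto simp: IE_iff insert_commute)
      have "length (filter id [(v,u) \<in> Tr, (u,v) \<in> Tr, (v,u) \<in> Tg, (u,v) \<in> Tg, (v,u) \<in> Tb, (u,v) \<in> Tb]) = 1"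
        using onedir[OF ie' r] .
      thus ?thesis by (cases "(v,u) \<in> Tr"; cases "(u,v) \<in> Tr"; cases "(v,u) \<in> Tg"; cases "(u,v) \<in> Tg"; cases "(v,u) \<in> Tb"; cases "(u,v) \<in> Tb") auto
    qed
  qed
  have Cc: "card {u. (u, v) \<in> Tr} = 1 \<and> card {u. (u, v) \<in> Tg} = 1 \<and> card {u. (u, v) \<in> Tb} = 1 \<and>
        (\<exists>r g b Bs Rs Gs.
           (r, v) \<in> Tr \<and> (g, v) \<in> Tg \<and> (b, v) \<in> Tb \<and>
           (\<forall>x \<in> set Bs. (v, x) \<in> Tb) \<and> (\<forall>x \<in> set Rs. (v, x) \<in> Tr) \<and>
           (\<forall>x \<in> set Gs. (v, x) \<in> Tg) \<and>
           ccw_list E rot v r = r # Bs @ g # Rs @ b # Gs)" if v: "v \<in> V - {v1, v2, v3}" for v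
  proof -
    have vI: "v \<in> Inn" using v by (simp add: Inn_def)
    obtain p B g Rs b A where fw: "fullw R col v p B g Rs b A" using full_fullw[OF R3f[OF vI]] by blast
    have lb: "lab R col v B g Rs b A" "(p, v, 2) \<in> R" using fw_lab[OF fw] by auto
    have ie: "y \<in> set (p # B @ g # Rs @ b # A) \<Longrightarrow> interior_edge E v1 v2 v3 v y \<and> interior_edge E v1 v2 v3 y v" for y
      using Inn_IE[OF vI fw_nbrs[OF fw]] by blast
    have sTr: "{u. (u, v) \<in> Tr} = {p}"
    proof -
      have h0: "u = p" if "(u, v, 2) \<in> R" for u using in_full[OF fw that] by auto
      have h: "u = p" if "(u, v) \<in> Tr" for u using that h0 unfolding Tr_def by blast
      have "(p, v) \<in> Tr" using lb(2) ie[of p] unfolding Tr_def by simp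
      thus ?thesis using h by blast
    qed
    have sTg: "{u. (u, v) \<in> Tg} = {g}"
    proof -
      have h0: "u = g" if "(u, v, 1) \<in> R" "col u v" for u using in_full[OF fw that(1)] that(2) lb(1) by (auto simp: lab_def)
      have h: "u = g" if "(u, v) \<in> Tg" for u using that h0 unfolding Tg_def by blast
      have "(g, v) \<in> Tg" using lb(1) ie[of g] unfolding Tg_def lab_def by simp
      thus ?thesis using h by blast
    qed
    have sTb: "{u. (u, v) \<in> Tb} = {b}"
    proof -
      have h0: "u = b" if "(u, v, 1) \<in> R" "\<not> col u v" for u using in_full[OF fw that(1)] that(2) lb(1) by (auto simp: lab_def)
      have h: "u = b" if "(u, v) \<in> Tb" for u using that h0 unfolding Tb_def by blast
      have "(b, v) \<in> Tb" using lb(1) ie[of b] unfolding Tb_def lab_def by simp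
      thus ?thesis using h by blast
    qed
    have "(p, v) \<in> Tr \<and> (g, v) \<in> Tg \<and> (b, v) \<in> Tb \<and>
           (\<forall>x \<in> set B. (v, x) \<in> Tb) \<and> (\<forall>x \<in> set Rs. (v, x) \<in> Tr) \<and>
           (\<forall>x \<in> set A. (v, x) \<in> Tg) \<and> ccw_list E rot v p = p # B @ g # Rs @ b # A"
      using sTr sTg sTb lb ie fw by (auto simp: Tr_def Tg_def Tb_def lab_def fullw_def)
    hence "\<exists>r g b Bs Rs Gs.
           (r, v) \<in> Tr \<and> (g, v) \<in> Tg \<and> (b, v) \<in> Tb \<and>
           (\<forall>x \<in> set Bs. (v, x) \<in> Tb) \<and> (\<forall>x \<in> set Rs. (v, x) \<in> Tr) \<and>
           (\<forall>x \<in> set Gs. (v, x) \<in> Tg) \<and>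
           ccw_list E rot v r = r # Bs @ g # Rs @ b # Gs" by blast
    thus ?thesis using sTr sTg sTb by simp
  qed
  have "realizer V E rot v1 v2 v3 Tr Tg Tb"
    unfolding realizer_def using A B Cc by blast
  thus ?thesis using un by blast
qed

end



locale uq = fin +
  fixes Tr' Tg' Tb'
  assumes rz: "realizer V E rot v1 v2 v3 Tr' Tg' Tb'" and un: "Tr' \<union> Tg' \<union> Tb' = L"
begin

definition T :: "nat \<Rightarrow> _" where "T c = [Tr', Tg', Tb'] ! (c mod 3)"

lemma T012: "T 0 = Tr'" "T 1 = Tg'" "T 2 = Tb'" "T 3 = Tr'" "T 4 = Tg'"
  "T (Suc 0) = Tg'" "T (Suc (Suc 0)) = Tb'" "T (Suc (Suc (Suc 0))) = Tr'" "T (Suc (Suc (Suc (Suc 0)))) = Tg'"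
  by (simp_all add: T_def)

lemma T_cases: "T c = Tr' \<and> c mod 3 = 0 \<or> T c = Tg' \<and> c mod 3 = 1 \<or> T c = Tb' \<and> c mod 3 = 2"
proof -
  have "c mod 3 < 3" by simp
  hence "c mod 3 = 0 \<or> c mod 3 = 1 \<or> c mod 3 = 2" by linarith
  thus ?thesis by (auto simp: T_def)
qed

lemma TL: "(u, w) \<in> T c \<Longrightarrow> (u, w) \<in> L"
  using T_cases[of c] un by auto

lemma LR: "(u, w) \<in> L \<Longrightarrow> \<exists>k. (u, w, k) \<in> R \<and> interior_edge E v1 v2 v3 u w"
  by (auto simp: L_def)

lemma Tuniq:
  assumes "(u, w) \<in> T c" "(u, w) \<in> T c'"
  shows "c mod 3 = c' mod 3"
proof -
  have ie: "interior_edge E v1 v2 v3 u w" using LR[OF TL[OF assms(1)]] by blast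
  have "length (filter id [(u,w) \<in> Tr', (w,u) \<in> Tr', (u,w) \<in> Tg', (w,u) \<in> Tg', (u,w) \<in> Tb', (w,u) \<in> Tb']) = 1"
    using rz ie unfolding realizer_def by blast
  hence f: "\<not> ((u,w) \<in> Tr' \<and> (u,w) \<in> Tg')" "\<not> ((u,w) \<in> Tr' \<and> (u,w) \<in> Tb')" "\<not> ((u,w) \<in> Tg' \<and> (u,w) \<in> Tb')"
    using filter6 by blast+
  show ?thesis using T_cases[of c] T_cases[of c'] assms f by auto
qed

lemma Lnot: "(u, w) \<in> L \<Longrightarrow> (w, u) \<in> L \<Longrightarrow> False"
  using U1 by (auto simp: L_def)

lemma loc:
  assumes x: "x \<in> Inn" and fw: "fullw R col x p B g Rs b A"
  shows "\<exists>c. (p, x) \<in> T c \<and> (\<forall>y\<in>set Rs. (x, y) \<in> T c) \<and> (g, x) \<in> T (c + 1) \<and> (b, x) \<in> T (c + 2) \<and>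
             (\<forall>y\<in>set B. (x, y) \<in> T (c + 2)) \<and> (\<forall>y\<in>set A. (x, y) \<in> T (c + 1))"
proof -
  have xV: "x \<in> V - {v1, v2, v3}" using x by (simp add: Inn_def)
  obtain r g' b' Bs Rs' Gs where Z: "(r, x) \<in> Tr'" "(g', x) \<in> Tg'" "(b', x) \<in> Tb'"
    "\<forall>y \<in> set Bs. (x, y) \<in> Tb'" "\<forall>y \<in> set Rs'. (x, y) \<in> Tr'" "\<forall>y \<in> set Gs. (x, y) \<in> Tg'"
    "cl x r = r # Bs @ g' # Rs' @ b' # Gs"
    using rz xV unfolding realizer_def by blast
  define Pin where "Pin y \<longleftrightarrow> (y, x) \<in> L" for y
  have lb: "lab R col x B g Rs b A" "(p, x, 2) \<in> R" using fw_lab[OF fw] by auto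
  have ie: "y \<in> set (p # B @ g # Rs @ b # A) \<Longrightarrow> interior_edge E v1 v2 v3 y x" for y
    using Inn_IE[OF x fw_nbrs[OF fw]] by blast
  have Pp: "Pin p" "Pin g" "Pin b" using lb ie unfolding Pin_def L_def lab_def by auto
  have nP: "\<not> Pin y" if "(x, y, k) \<in> R" for y k
    using that U1 unfolding Pin_def L_def by blast
  have nPB: "\<forall>z\<in>set B. \<not> Pin z" "\<forall>z\<in>set Rs. \<not> Pin z" "\<forall>z\<in>set A. \<not> Pin z"
    using lb(1) nP unfolding lab_def by blast+
  have nPZ: "\<forall>z\<in>set Bs. \<not> Pin z" "\<forall>z\<in>set Rs'. \<not> Pin z" "\<forall>z\<in>set Gs. \<not> Pin z"
    using Z(4,5,6) un Lnot unfolding Pin_def by blast+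
  have PZ: "Pin r" "Pin g'" "Pin b'" using Z(1,2,3) un unfolding Pin_def by blast+
  have Er: "E x r" using PZ(1) R0 Esym unfolding Pin_def L_def by blast
  have "r \<in> set (cl x p)" using cl_mem[OF fw_E[OF fw]] Er by simp
  hence "r \<in> set (p # B @ g # Rs @ b # A)" using fw by (simp add: fullw_def)
  hence "r = p \<or> r = g \<or> r = b" using PZ(1) nPB by auto
  moreover have clp: "cl x p = p # B @ g # Rs @ b # A" using fw by (simp add: fullw_def)
  ultimately consider "r = p" | "r = g" | "r = b" by blast
  thus ?thesis
  proof cases
    case 1
    hence "B @ g # (Rs @ b # A) = Bs @ g' # (Rs' @ b' # Gs)" using Z(7) clp by simp
    hence e1: "B = Bs" "g = g'" "Rs @ b # A = Rs' @ b' # Gs"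
      using split_first[where P = Pin] nPB nPZ Pp PZ by blast+
    hence e2: "Rs = Rs'" "b = b'" "A = Gs" using split_first[where P = Pin, OF e1(3)] nPB nPZ Pp PZ by blast+
    show ?thesis using Z 1 e1 e2 T012 by (intro exI[of _ 0]) auto
  next
    case 2
    have "cl x p = (p # B) @ g # (Rs @ b # A)" using clp by simp
    hence "cl x g = g # (Rs @ b # A) @ (p # B)" using cl_rot_split[OF fw_E[OF fw]] by blast
    hence "Rs @ b # (A @ p # B) = Bs @ g' # (Rs' @ b' # Gs)" using Z(7) 2 by simp
    hence e1: "Rs = Bs" "b = g'" "A @ p # B = Rs' @ b' # Gs"
      using split_first[where P = Pin] nPB nPZ Pp PZ by blast+
    hence e2: "A = Rs'" "p = b'" "B = Gs" using split_first[where P = Pin, OF e1(3)] nPB nPZ Pp PZ by blast+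
    show ?thesis using Z 2 e1 e2 T012 by (intro exI[of _ 2]) auto
  next
    case 3
    have "cl x p = (p # B @ g # Rs) @ b # A" using clp by simp
    hence "cl x b = b # A @ (p # B @ g # Rs)" using cl_rot_split[OF fw_E[OF fw]] by blast
    hence "A @ p # (B @ g # Rs) = Bs @ g' # (Rs' @ b' # Gs)" using Z(7) 3 by simp
    hence e1: "A = Bs" "p = g'" "B @ g # Rs = Rs' @ b' # Gs"
      using split_first[where P = Pin] nPB nPZ Pp PZ by blast+
    hence e2: "B = Rs'" "g = b'" "Rs = Gs" using split_first[where P = Pin, OF e1(3)] nPB nPZ Pp PZ by blast+
    show ?thesis using Z 3 e1 e2 T012 by (intro exI[of _ 1]) auto
  qed
qed

lemma Tmodeq: "c mod 3 = c' mod 3 \<Longrightarrow> T c = T c'"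
  by (simp add: T_def)

lemma Lcover: "(u, w) \<in> L \<Longrightarrow> \<exists>c. (u, w) \<in> T c"
  using un T012 by (metis Un_iff)

lemma sh: "(u, w, 2) \<in> R \<Longrightarrow> w \<in> Inn"
proof -
  assume r: "(u, w, 2) \<in> R"
  have a: "E u w" "u \<in> V" "w \<in> V" "{u, w} \<noteq> {v1, v2}" using R0[OF r] by auto
  have "w \<noteq> v1"
  proof
    assume "w = v1"
    hence "u \<noteq> v2" using a(4) by (auto simp: insert_commute)
    hence "(v1, u, 1) \<in> R" using R2a[OF a(2)] a(1) Esym \<open>w = v1\<close> by blast
    thus False using U1 r \<open>w = v1\<close> by blast
  qed
  moreover have "w \<noteq> v2"
  proof
    assume "w = v2"
    hence "u \<noteq> v1" using a(4) by (auto simp: insert_commute)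
    hence "(v2, u, 1) \<in> R" using R2b[OF a(2)] a(1) Esym \<open>w = v2\<close> by blast
    thus False using U1 r \<open>w = v2\<close> by blast
  qed
  moreover have "w \<noteq> v3"
  proof
    assume w3: "w = v3"
    obtain B g Rs b A zs where P: "cl v3 v2 = (B @ g # Rs @ b # A) @ zs"
      "set (B @ g # Rs @ b # A) = nb V v3" "lab R col v3 B g Rs b A"
      using R3v unfolding part_def by blast
    have "u \<in> nb V v3" using a w3 Esym by (auto simp: nb_def)
    hence "u \<in> set (B @ g # Rs @ b # A)" using P(2) by simp
    hence cs: "u \<in> set B \<or> u = g \<or> u \<in> set Rs \<or> u = b \<or> u \<in> set A" by auto
    have r3: "(u, v3, 2) \<in> R" using r w3 by simp
    have l: "(g, v3, 1) \<in> R" "(b, v3, 1) \<in> R" "\<forall>y\<in>set Rs. (v3, y, 2) \<in> R"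
      "\<forall>y\<in>set B. (v3, y, 1) \<in> R" "\<forall>y\<in>set A. (v3, y, 1) \<in> R" using P(3) by (auto simp: lab_def)
    from cs show False
    proof (elim disjE)
      assume "u \<in> set B" thus False using l(4) U1[OF r3] by blast
    next
      assume "u = g" thus False using U2[OF r3, of 1] l(1) by simp
    next
      assume "u \<in> set Rs" thus False using l(3) U1[OF r3] by blast
    next
      assume "u = b" thus False using U2[OF r3, of 1] l(2) by simp
    next
      assume "u \<in> set A" thus False using l(5) U1[OF r3] by blast
    qed
  qed
  ultimately show "w \<in> Inn" using a by (auto simp: Inn_def)
qed

lemma st: "(u, w, 2) \<in> R \<Longrightarrow> u = v3 \<or> u \<in> Inn"
proof -
  assume r: "(u, w, 2) \<in> R"
  have a: "E u w" "u \<in> V" "w \<in> V" "{u, w} \<noteq> {v1, v2}" using R0[OF r] by auto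
  have "u \<noteq> v1"
  proof
    assume "u = v1"
    hence "w \<noteq> v2" using a(4) by auto
    hence "(v1, w, 1) \<in> R" using R2a[OF a(3)] a(1) \<open>u = v1\<close> by blast
    thus False using U2 r \<open>u = v1\<close> by fastforce
  qed
  moreover have "u \<noteq> v2"
  proof
    assume "u = v2"
    hence "w \<noteq> v1" using a(4) by (auto simp: insert_commute)
    hence "(v2, w, 1) \<in> R" using R2b[OF a(3)] a(1) \<open>u = v2\<close> by blast
    thus False using U2 r \<open>u = v2\<close> by fastforce
  qed
  ultimately show ?thesis using a by (auto simp: Inn_def)
qed

lemma face:
  assumes r: "(v3, x, 2) \<in> R" and r': "(v3, x', 2) \<in> R" and xx: "x' = rot v3 x" and c: "(v3, x) \<in> T c"
  shows "(v3, x') \<in> T c"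
proof -
  have xI: "x \<in> Inn" and xI': "x' \<in> Inn" using sh r r' by auto
  obtain p B g Rs b A where fw: "fullw R col x p B g Rs b A" using full_fullw[OF R3f[OF xI]] by blast
  obtain p' B' g' Rs' b' A' where fw': "fullw R col x' p' B' g' Rs' b' A'" using full_fullw[OF R3f[OF xI']] by blast
  have pv: "p = v3" using in_full[OF fw r] by auto
  have pv': "p' = v3" using in_full[OF fw' r'] by auto
  obtain cx where cx: "(p, x) \<in> T cx" "(g, x) \<in> T (cx + 1)" "(b, x) \<in> T (cx + 2)"
    "\<forall>y\<in>set B. (x, y) \<in> T (cx + 2)" "\<forall>y\<in>set A. (x, y) \<in> T (cx + 1)" using loc[OF xI fw] by blast
  obtain cx' where cx': "(p', x') \<in> T cx'" "(g', x') \<in> T (cx' + 1)" "(b', x') \<in> T (cx' + 2)"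
    "\<forall>y\<in>set B'. (x', y) \<in> T (cx' + 2)" "\<forall>y\<in>set A'. (x', y) \<in> T (cx' + 1)" using loc[OF xI' fw'] by blast
  have ccx: "c mod 3 = cx mod 3" using Tuniq[OF c] cx(1) pv by simp
  have Exv: "E x v3" using R0[OF r] Esym by blast
  have Evx: "E v3 x" using R0[OF r] by blast
  have tr: "rot x' v3 = x" "rot x x' = v3" using tri[OF Exv] xx by auto
  have Exx': "E x x'" using tri_edge[OF Evx] xx by simp
  have clx: "cl x v3 = v3 # B @ g # Rs @ b # A" using fw pv by (simp add: fullw_def)
  have clx': "cl x' v3 = v3 # B' @ g' # Rs' @ b' # A'" using fw' pv' by (simp add: fullw_def)
  have lastx: "last (cl x v3) = x'"
  proof -
    have "last (cl x v3) \<in> set (cl x v3)" using clx by simp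
    hence "E x (last (cl x v3))" using cl_mem[OF Exv] by simp
    moreover have "rot x (last (cl x v3)) = v3" using cl_last[OF Exv] .
    ultimately show ?thesis using rot_inj[OF _ Exx'] tr(2) by metis
  qed
  have Ex'v: "E x' v3" using R0[OF r'] Esym by blast
  have second: "cl x' v3 ! 1 = x"
  proof -
    have "1 < deg E x'" using clx' by (metis cl_length length_Cons length_append less_add_Suc1 Suc_less_eq add_Suc_right zero_less_Suc less_trans_Suc One_nat_def)
    thus ?thesis using tr(1) by (simp add: cl_nth)
  qed
  have sec: "x = hd (B' @ g' # Rs' @ b' # A')" using second clx' by (simp add: hd_conv_nth)
  have lst: "x' = last (b # A)" using lastx clx by simp
  have eqc: "cx mod 3 = cx' mod 3"
  proof (cases "A = []")
    case True
    hence xb: "x' = b" using lst by simp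
    have "(x', x, 1) \<in> R" using fw_lab[OF fw] xb by (simp add: lab_def)
    have "B' \<noteq> []"
    proof
      assume "B' = []"
      hence "x = g'" using sec by simp
      hence "(x, x', 1) \<in> R" using fw_lab[OF fw'] by (simp add: lab_def)
      thus False using U1 \<open>(x', x, 1) \<in> R\<close> by blast
    qed
    hence "x \<in> set B'" using sec by simp
    hence "(x', x) \<in> T (cx' + 2)" using cx'(4) by blast
    moreover have "(x', x) \<in> T (cx + 2)" using cx(3) xb by simp
    ultimately have "(cx + 2) mod 3 = (cx' + 2) mod 3" using Tuniq by blast
    thus ?thesis by presburger
  next
    case False
    hence xA: "x' \<in> set A" using lst by simp
    have "(x, x', 1) \<in> R" using fw_lab[OF fw] xA by (simp add: lab_def)
    have "B' = []"
    proof (rule ccontr)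
      assume "B' \<noteq> []"
      hence "x \<in> set B'" using sec by simp
      hence "(x', x, 1) \<in> R" using fw_lab[OF fw'] by (simp add: lab_def)
      thus False using U1 \<open>(x, x', 1) \<in> R\<close> by blast
    qed
    hence "x = g'" using sec by simp
    hence "(x, x') \<in> T (cx' + 1)" using cx'(2) by simp
    moreover have "(x, x') \<in> T (cx + 1)" using cx(5) xA by blast
    ultimately have "(cx + 1) mod 3 = (cx' + 1) mod 3" using Tuniq by blast
    thus ?thesis by presburger
  qed
  have "T cx' = T c" using Tmodeq eqc ccx by metis
  thus ?thesis using cx'(1) pv' by simp
qed

lemma children: "\<exists>c0. \<forall>w. (v3, w, 2) \<in> R \<longrightarrow> (v3, w) \<in> T c0"
proof -
  obtain B g Rs b A zs where P: "cl v3 v2 = (B @ g # Rs @ b # A) @ zs"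
    "set (B @ g # Rs @ b # A) = nb V v3" "lab R col v3 B g Rs b A"
    using R3v unfolding part_def by blast
  have l: "(g, v3, 1) \<in> R" "(b, v3, 1) \<in> R" "\<forall>y\<in>set Rs. (v3, y, 2) \<in> R"
    "\<forall>y\<in>set B. (v3, y, 1) \<in> R" "\<forall>y\<in>set A. (v3, y, 1) \<in> R" using P(3) by (auto simp: lab_def)
  have sc3: "w \<in> set Rs" if r: "(v3, w, 2) \<in> R" for w
  proof -
    have "w \<in> nb V v3" using R0[OF r] by (auto simp: nb_def)
    hence "w \<in> set (B @ g # Rs @ b # A)" using P(2) by simp
    hence cs: "w \<in> set B \<or> w = g \<or> w \<in> set Rs \<or> w = b \<or> w \<in> set A" by auto
    from cs show ?thesis
    proof (elim disjE)
      assume "w \<in> set B" thus ?thesis using l(4) U2[OF r, of 1] by auto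
    next
      assume "w = g" thus ?thesis using U1[OF r] l(1) by blast
    next
      assume "w \<in> set Rs" thus ?thesis .
    next
      assume "w = b" thus ?thesis using U1[OF r] l(2) by blast
    next
      assume "w \<in> set A" thus ?thesis using l(5) U2[OF r, of 1] by auto
    qed
  qed
  show ?thesis
  proof (cases "Rs = []")
    case True thus ?thesis using sc3 by auto
  next
    case False
    define h where "h = Rs ! 0"
    have hR: "(v3, h, 2) \<in> R" using l(3) False by (simp add: h_def)
    have hI: "h \<in> Inn" using sh[OF hR] .
    have "(v3, h) \<in> L" using hR Inn_IE[OF hI] R0[OF hR] Esym unfolding L_def by blast
    then obtain c where c: "(v3, h) \<in> T c" using Lcover by blast
    have Ev3: "E v3 v2" using ofc_facts Esym by blast
    have all: "(v3, Rs ! k) \<in> T c" if "k < length Rs" for k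
      using that
    proof (induction k)
      case 0 thus ?case using c by (simp add: h_def)
    next
      case (Suc k)
      have kk: "k < length Rs" using Suc.prems by simp
      have "Rs = take k Rs @ Rs ! k # Rs ! Suc k # drop (Suc (Suc k)) Rs"
        using Suc.prems by (metis Cons_nth_drop_Suc Suc_lessD append_take_drop_id)
      hence "cl v3 v2 = (B @ g # take k Rs) @ Rs ! k # Rs ! Suc k # (drop (Suc (Suc k)) Rs @ b # A @ zs)"
        using P(1) by (metis append.assoc append_Cons)
      hence rr: "Rs ! Suc k = rot v3 (Rs ! k)" using cl_consec[OF Ev3] by blast
      have "(v3, Rs ! k, 2) \<in> R" "(v3, Rs ! Suc k, 2) \<in> R" using l(3) Suc.prems kk by auto
      thus ?case using face rr Suc.IH[OF kk] by blast
    qed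
    show ?thesis
    proof (intro exI[of _ c] allI impI)
      fix w assume "(v3, w, 2) \<in> R"
      hence "w \<in> set Rs" using sc3 by blast
      then obtain k where "k < length Rs" "w = Rs ! k" by (metis in_set_conv_nth)
      thus "(v3, w) \<in> T c" using all by blast
    qed
  qed
qed

lemma claim: "\<exists>c0. \<forall>u w. (u, w, 2) \<in> R \<longrightarrow> (u, w) \<in> T c0"
proof -
  obtain c0 where c0: "\<forall>w. (v3, w, 2) \<in> R \<longrightarrow> (v3, w) \<in> T c0" using children by blast
  have main: "(u, w) \<in> T c0" if "(u, w, 2) \<in> R" for u w
    using that
  proof (induction "t w" arbitrary: u w rule: less_induct)
    case less
    from st[OF less.prems] show ?case
    proof
      assume "u = v3" thus ?thesis using c0 less.prems by blast
    next
      assume uI: "u \<in> Inn"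
      obtain p B g Rs b A where fw: "fullw R col u p B g Rs b A" using full_fullw[OF R3f[OF uI]] by blast
      have pu: "(p, u, 2) \<in> R" using fw_lab[OF fw] by blast
      have "t u < t w" using R4[OF less.prems] .
      hence IH: "(p, u) \<in> T c0" using less.hyps pu by blast
      obtain cu where cu: "(p, u) \<in> T cu" "\<forall>y\<in>set Rs. (u, y) \<in> T cu" using loc[OF uI fw] by blast
      have "T cu = T c0" using Tmodeq Tuniq[OF cu(1) IH] by blast
      moreover have "w \<in> set Rs" using out_full[OF fw less.prems] by auto
      ultimately show ?thesis using cu(2) by auto
    qed
  qed
  thus ?thesis by blast
qed

theorem final:
  "{{u, v} | u v. (u, v, 2) \<in> R} = {{u, v} | u v. (u, v) \<in> Tr'} \<or>
   {{u, v} | u v. (u, v, 2) \<in> R} = {{u, v} | u v. (u, v) \<in> Tg'} \<or>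
   {{u, v} | u v. (u, v, 2) \<in> R} = {{u, v} | u v. (u, v) \<in> Tb'}"
proof -
  obtain c0 where c0: "\<forall>u w. (u, w, 2) \<in> R \<longrightarrow> (u, w) \<in> T c0" using claim by blast
  have conv: "(u, v, 2) \<in> R" if uv: "(u, v) \<in> T c0" for u v
  proof -
    obtain k where k: "(u, v, k) \<in> R" "interior_edge E v1 v2 v3 u v" using LR[OF TL[OF uv]] by blast
    have kk: "k = 1 \<or> k = 2" using R0[OF k(1)] by blast
    show ?thesis
    proof (cases "k = 2")
      case True thus ?thesis using k by simp
    next
      case False
      hence k1: "(u, v, 1) \<in> R" using k kk by simp
      show ?thesis
      proof (cases "v \<in> Inn")
        case True
        obtain p B g Rs b A where fw: "fullw R col v p B g Rs b A" using full_fullw[OF R3f[OF True]] by blast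
        obtain cv where cv: "(p, v) \<in> T cv" "(g, v) \<in> T (cv + 1)" "(b, v) \<in> T (cv + 2)" using loc[OF True fw] by blast
        have "(p, v) \<in> T c0" using c0 fw_lab[OF fw] by blast
        hence e: "cv mod 3 = c0 mod 3" using Tuniq cv(1) by blast
        have "u = g \<or> u = b" using in_full[OF fw k1] by auto
        thus ?thesis
        proof
          assume "u = g"
          hence "(cv + 1) mod 3 = c0 mod 3" using Tuniq cv(2) uv by blast
          thus ?thesis using e by presburger
        next
          assume "u = b"
          hence "(cv + 2) mod 3 = c0 mod 3" using Tuniq cv(3) uv by blast
          thus ?thesis using e by presburger
        qed
      next
        case False
        have "v \<in> V" using R0[OF k1] by blast
        hence "v \<in> {v1, v2, v3}" using False by (auto simp: Inn_def)
        hence uI: "u \<in> Inn" using k(2) R0[OF k1] by (auto simp: IE_iff Inn_def)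
        obtain p B g Rs b A where fw: "fullw R col u p B g Rs b A" using full_fullw[OF R3f[OF uI]] by blast
        obtain cu where cu: "(p, u) \<in> T cu" "\<forall>y\<in>set B. (u, y) \<in> T (cu + 2)" "\<forall>y\<in>set A. (u, y) \<in> T (cu + 1)"
          using loc[OF uI fw] by blast
        have "(p, u) \<in> T c0" using c0 fw_lab[OF fw] by blast
        hence e: "cu mod 3 = c0 mod 3" using Tuniq cu(1) by blast
        have "v \<in> set B \<or> v \<in> set A" using out_full[OF fw k1] by auto
        thus ?thesis
        proof
          assume "v \<in> set B"
          hence "(cu + 2) mod 3 = c0 mod 3" using Tuniq cu(2) uv by blast
          thus ?thesis using e by presburger
        next
          assume "v \<in> set A"
          hence "(cu + 1) mod 3 = c0 mod 3" using Tuniq cu(3) uv by blast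
          thus ?thesis using e by presburger
        qed
      qed
    qed
  qed
  have eq: "{{u, v} | u v. (u, v, 2) \<in> R} = {{u, v} | u v. (u, v) \<in> T c0}"
    using c0 conv by blast
  show ?thesis using T_cases[of c0] eq by auto
qed

end


lemma ofc_rot:
  assumes "outer_face_cw E rot o1 o2 o3" "(v1, v2, v3) \<in> {(o1, o2, o3), (o2, o3, o1), (o3, o1, o2)}"
  shows "outer_face_cw E rot v1 v2 v3" "{o1, o2, o3} = {v1, v2, v3}"
  using assms by (auto simp: outer_face_cw_def)

lemma ie_eq: "{o1, o2, o3} = {v1, v2, v3} \<Longrightarrow> interior_edge E o1 o2 o3 = interior_edge E v1 v2 v3"
  by (intro ext) (simp add: interior_edge_def)

lemma rz_eq:
  assumes h: "{o1, o2, o3} = {v1, v2, v3}"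
  shows "realizer V E rot o1 o2 o3 = realizer V E rot v1 v2 v3"
  unfolding realizer_def[abs_def] ie_eq[OF h] h ..

theorem proposition4p3:
  fixes V :: "'v set" and E :: "'v \<Rightarrow> 'v \<Rightarrow> bool" and rot :: "'v \<Rightarrow> 'v \<Rightarrow> 'v"
    and o1 o2 o3 v1 v2 v3 :: 'v and R :: "('v \<times> 'v \<times> nat) set"
  assumes "triangular_graph V E rot"
    and "outer_face_cw E rot o1 o2 o3"
    and "(v1, v2, v3) \<in> {(o1, o2, o3), (o2, o3, o1), (o3, o1, o2)}"
    and "proc E rot V [v1, v2, v3] R"
  shows "let L = {(u, v). (\<exists>k. (u, v, k) \<in> R) \<and> interior_edge E o1 o2 o3 u v};
             Strong = {{u, v} | u v. (u, v, 2) \<in> R};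
             und = (\<lambda>T. {{u, v} | u v. (u, v) \<in> T})
         in (\<exists>Tr Tg Tb. realizer V E rot o1 o2 o3 Tr Tg Tb \<and> Tr \<union> Tg \<union> Tb = L) \<and>
            (\<forall>Tr Tg Tb. realizer V E rot o1 o2 o3 Tr Tg Tb \<and> Tr \<union> Tg \<union> Tb = L \<longrightarrow>
               Strong = und Tr \<or> Strong = und Tg \<or> Strong = und Tb)"
proof -
  interpret tg V E rot by unfold_locales (rule assms(1))
  have ofc: "outer_face_cw E rot v1 v2 v3" and oo: "{o1, o2, o3} = {v1, v2, v3}"
    using ofc_rot[OF assms(2,3)] by auto
  obtain col t where LR: "LAB V [v1, v2, v3] R col t" using proc_LAB[OF assms(4) NT_init[OF ofc]] by blast
  interpret fin V E rot v1 v2 v3 R col t by unfold_locales (fact ofc, fact LR)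
  have Leq: "{(u, v). (\<exists>k. (u, v, k) \<in> R) \<and> interior_edge E o1 o2 o3 u v} = L"
    unfolding L_def ie_eq[OF oo] ..
  have ex: "\<exists>Tr Tg Tb. realizer V E rot o1 o2 o3 Tr Tg Tb \<and> Tr \<union> Tg \<union> Tb = L"
    using exist rz_eq[OF oo] by simp
  have un: "{{u, v} | u v. (u, v, 2) \<in> R} = {{u, v} | u v. (u, v) \<in> Tr} \<or>
            {{u, v} | u v. (u, v, 2) \<in> R} = {{u, v} | u v. (u, v) \<in> Tg} \<or>
            {{u, v} | u v. (u, v, 2) \<in> R} = {{u, v} | u v. (u, v) \<in> Tb}"
    if "realizer V E rot o1 o2 o3 Tr Tg Tb \<and> Tr \<union> Tg \<union> Tb = L" for Tr Tg Tb
  proof -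
    have "realizer V E rot v1 v2 v3 Tr Tg Tb" "Tr \<union> Tg \<union> Tb = L" using that rz_eq[OF oo] by auto
    then interpret uq V E rot v1 v2 v3 R col t Tr Tg Tb by unfold_locales
    show ?thesis using final .
  qed
  show ?thesis unfolding Let_def Leq using ex un by blast
qed



end
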